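(* Let $\Theta=\bigcup_{n\in\mathbb N}\mathbb Z^n$, $d,M,\mathfrak d\in\mathbb N$, $T\in(0,\infty)$, $a\in C(\mathbb R,\mathbb R)$, and $\mathfrak J,\mathbf F,\mathbf G\in\mathbf N$ with $\mathcal D(\mathfrak J)=(1,\mathfrak d,1)$, $\mathcal R_a(\mathfrak J)=\mathrm{id}_{\mathbb R}$, $\mathcal R_a(\mathbf F)\in C(\mathbb R,\mathbb R)$, $\mathcal R_a(\mathbf G)\in C(\mathbb R^d,\mathbb R)$. For every $\theta\in\Theta$ let $\mathcal U^\theta\colon[0,T]\to[0,T]$ and $W^\theta\colon[-T,T]\to\mathbb R^d$ be functions (write $\mathcal U^\theta_t=\mathcal U^\theta(t)$, $W^\theta_s=W^\theta(s)$; for $\theta\in\Theta$ and integers $i,k$, $(\theta,i,k)\in\Theta$ denotes the concatenated tuple). For $\theta\in\Theta$, $n\in\mathbb N_0$ let $U^\theta_n\colon[0,T]\times\mathbb R^d\to\mathbb R$ satisfy for all $t\in[0,T]$, $x\in\mathbb R^d$ $$U^\theta_n(t,x)=\frac{\mathbb 1_{\mathbb N}(n)}{M^n}\sum_{k=1}^{M^n}(\mathcal R_a(\mathbf G))\bigl(x+W^{(\theta,0,-k)}_{T-t}\bigr)+\sum_{i=0}^{n-1}\frac{T-t}{M^{n-i}}\sum_{k=1}^{M^{n-i}}\Bigl[(\mathcal R_a(\mathbf F)\circ U^{(\theta,i,k)}_i)-\mathbb 1_{\mathbb N}(i)(\mathcal R_a(\mathbf F)\circ U^{(\theta,-i,k)}_{\max\{i-1,0\}})\Bigr]\bigl(\mathcal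 U^{(\theta,i,k)}_t,x+W^{(\theta,i,k)}_{\mathcal U^{(\theta,i,k)}_t-t}\bigr),$$ and let $\mathbf U^\theta_{n,t}\in\mathbf N$, $n\in\mathbb N_0$, $t\in[0,T]$, $\theta\in\Theta$, satisfy $\mathbf U^\theta_{0,t}=((0\ 0\ \cdots\ 0),0)\in\mathbb R^{1\times d}\times\mathbb R^1$ and, for $n\in\mathbb N$, $$\mathbf U^\theta_{n,t}=\Bigl[\bigoplus_{k=1}^{M^n}\bigl(\tfrac1{M^n}\circledast(\mathbf G\bullet\mathbf A_{\operatorname I_d,W^{(\theta,0,-k)}_{T-t}})\bigr)\Bigr]\boxplus_{\mathfrak J}\Bigl[\mathop{\boxplus}_{i=0,\mathfrak J}^{n-1}\Bigl(\tfrac{T-t}{M^{n-i}}\circledast\Bigl(\mathop{\boxplus}_{k=1,\mathfrak J}^{M^{n-i}}\bigl((\mathbf F\bullet\mathbf U^{(\theta,i,k)}_{i,\mathcal U^{(\theta,i,k)}_t})\bullet\mathbf A_{\operatorname I_d,W^{(\theta,i,k)}_{\mathcal U^{(\theta,i,k)}_t-t}}\bigr)\Bigr)\Bigr)\Bigr]\boxplus_{\mathfrak J}\Bigl[\mathop{\boxplus}_{i=0,\mathfrak J}^{n-1}\Bigl(\tfrac{(t-T)\mathbb 1_{\mathbb N}(i)}{M^{n-i}}\circledast\Bigl(\mathop{\boxplus}_{k=1,\mathfrak J}^{M^{n-i}}\bigl((\mathbf F\bullet\mathbf U^{(\theta,-i,k)}_{\max\{i-1,0\},\mathcal U^{(\theta,i,k)}_t})\bullet\mathbf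 A_{\operatorname I_d,W^{(\theta,i,k)}_{\mathcal U^{(\theta,i,k)}_t-t}}\bigr)\Bigr)\Bigr)\Bigr].$$ Then for all $\theta,\theta_1,\theta_2\in\Theta$, $n\in\mathbb N_0$, $t,t_1,t_2\in[0,T]$, $x\in\mathbb R^d$: (i) $\mathcal D(\mathbf U^{\theta_1}_{n,t_1})=\mathcal D(\mathbf U^{\theta_2}_{n,t_2})$; (ii) $\mathcal R_a(\mathbf U^\theta_{n,t})\in C(\mathbb R^d,\mathbb R)$; (iii) $\mathcal L(\mathbf U^\theta_{n,t})\le\max\{\mathfrak d,\mathcal L(\mathbf G)\}+n\mathcal H(\mathbf F)$; (iv) $|||\mathcal D(\mathbf U^\theta_{n,t})|||\le\max\{\mathfrak d,|||\mathcal D(\mathbf F)|||,|||\mathcal D(\mathbf G)|||\}(3M)^n$; (v) $U^\theta_n(t,x)=(\mathcal R_a(\mathbf U^\theta_{n,t}))(x)$; (vi) $\mathcal P(\mathbf U^\theta_{n,t})\le2(\max\{\mathfrak d,\mathcal L(\mathbf G)\}+n\mathcal H(\mathbf F))\bigl(\max\{\mathfrak d,|||\mathcal D(\mathbf F)|||,|||\mathcal D(\mathbf G)|||\}\bigr)^2(3M)^{2n}$.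
   Context: Artificial neural networks (ANNs). Let $\mathbb N=\{1,2,\dots\}$, $\mathbb N_0=\mathbb N\cup\{0\}$, and $\mathbf N=\bigcup_{L\in\mathbb N}\bigcup_{l_0,\dots,l_L\in\mathbb N}\prod_{k=1}^L(\mathbb R^{l_k\times l_{k-1}}\times\mathbb R^{l_k})$. For $\Phi=((W_1,B_1),\dots,(W_L,B_L))\in\prod_{k=1}^L(\mathbb R^{l_k\times l_{k-1}}\times\mathbb R^{l_k})$ set $\mathcal P(\Phi)=\sum_{k=1}^Ll_k(l_{k-1}+1)$, $\mathcal L(\Phi)=L$, $\mathcal I(\Phi)=l_0$, $\mathcal O(\Phi)=l_L$, $\mathcal H(\Phi)=L-1$, $\mathcal D(\Phi)=(l_0,\dots,l_L)$, and for $n\in\mathbb N_0$ let $\mathbb D_n(\Phi)=l_n$ if $n\le L$ and $0$ otherwise. For $x\in\mathbb R^m$, $|||x|||=\max_i|x_i|$. For $a\in C(\mathbb R,\mathbb R)$ the realization $\mathcal R_a(\Phi)\in C(\mathbb R^{l_0},\mathbb R^{l_L})$ is $(\mathcal R_a(\Phi))(x_0)=W_Lx_{L-1}+B_L$ with $x_k=\mathfrak M_{a,l_k}(W_kx_{k-1}+B_k)$, $k=1,\dots,L-1$, where $\mathfrak M_{a,m}(y_1,\dots,y_m)=(a(y_1),\dots,a(y_m))$. Operations on ANNs. $\operatorname I_n$ is the $n\times n$ identity matrix. For $W\in\mathbb R^{m\times n}$, $B\in\mathbb R^m$ let $\mathbf A_{W,B}=((W,B))\in\mathbf N$ (one layer;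 for reals $w,b$, $\mathbf A_{w,b}$ has $1\times1$ weight $w$ and bias $b$). Composition: for $\Phi_1=((W_1,B_1),\dots,(W_L,B_L))$ and $\Phi_2=((\mathscr W_1,\mathscr B_1),\dots,(\mathscr W_{\mathfrak L},\mathscr B_{\mathfrak L}))$ with $\mathcal I(\Phi_1)=\mathcal O(\Phi_2)$, $\Phi_1\bullet\Phi_2=((\mathscr W_1,\mathscr B_1),\dots,(\mathscr W_{\mathfrak L-1},\mathscr B_{\mathfrak L-1}),(W_1\mathscr W_{\mathfrak L},W_1\mathscr B_{\mathfrak L}+B_1),(W_2,B_2),\dots,(W_L,B_L))$ (an ANN of length $L+\mathfrak L-1$). Scalar multiplication: $\lambda\circledast\Phi=\mathbf A_{\lambda\operatorname I_{\mathcal O(\Phi)},0}\bullet\Phi$. Parallelization: for $\Phi_j=((W_{j,1},B_{j,1}),\dots,(W_{j,L},B_{j,L}))$, $j=1,\dots,n$, of equal length $L$, $\mathbf P_n(\Phi_1,\dots,\Phi_n)$ is the ANN whose $k$-th layer is $(\operatorname{diag}(W_{1,k},\dots,W_{n,k}),(B_{1,k},\dots,B_{n,k}))$ (block-diagonal weight matrix, stacked bias). $\mathfrak S_{m,n}=\mathbf A_{(\operatorname I_m\,\cdots\,\operatorname I_m),0}\in\mathbb R^{m\times nm}\times\mathbb R^m$ and $\mathfrak T_{m,n}=\mathbf A_{(\operatorname I_m\,\cdots\,\operatorname I_m)^{\top},0}$ ($n$ identity blocks). Sum of ANNs of equal length: if $\Phi_u,\dots,\Phi_v$ all have the same $\mathcal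 L,\mathcal I,\mathcal O$, then $\bigoplus_{k=u}^v\Phi_k=\mathfrak S_{\mathcal O(\Phi_u),v-u+1}\bullet\bigl([\mathbf P_{v-u+1}(\Phi_u,\dots,\Phi_v)]\bullet\mathfrak T_{\mathcal I(\Phi_u),v-u+1}\bigr)$. Powers: for $\mathcal I(\Psi)=\mathcal O(\Psi)$, $\Psi^{\bullet0}=((\operatorname I_{\mathcal O(\Psi)},0))$ and $\Psi^{\bullet n}=\Psi\bullet\Psi^{\bullet(n-1)}$. Extension: for $\mathcal L(\Phi)\le L$ and $\mathcal O(\Phi)=\mathcal I(\Psi)=\mathcal O(\Psi)$, $\mathcal E_{L,\Psi}(\Phi)=\Psi^{\bullet(L-\mathcal L(\Phi))}\bullet\Phi$. Sum of ANNs of different lengths: if $\mathcal I(\Phi_k)=\mathcal I(\Phi_u)$, $\mathcal O(\Phi_k)=\mathcal I(\Psi)=\mathcal O(\Psi)$ for all $k$ and $\mathcal H(\Psi)=1$, then $\mathop{\boxplus}_{k=u,\Psi}^v\Phi_k=\bigoplus_{k=u}^v\mathcal E_{\max_{j\in\{u,\dots,v\}}\mathcal L(\Phi_j),\Psi}(\Phi_k)$, also written $\Phi_u\boxplus_\Psi\Phi_{u+1}\boxplus_\Psi\cdots\boxplus_\Psi\Phi_v$. *)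

theory Defs
  imports Complex_Main "Jordan_Normal_Form.Matrix"
begin

text \<open>An ANN is a list of layers (W_k, B_k), first layer first; W_k is an l_k x l_(k-1) matrix
  and B_k a vector of dimension l_k.  Membership in the set of all ANNs is the predicate is_ANN.\<close>

type_synonym ann = "(real mat \<times> real vec) list"

definition is_ANN :: "ann \<Rightarrow> bool" where
  "is_ANN \<Phi> \<longleftrightarrow> \<Phi> \<noteq> [] \<and>
     (\<forall>k < length \<Phi>. dim_row (fst (\<Phi> ! k)) = dim_vec (snd (\<Phi> ! k))
        \<and> 0 < dim_row (fst (\<Phi> ! k)) \<and> 0 < dim_col (fst (\<Phi> ! k))) \<and>
     (\<forall>k. Suc k < length \<Phi> \<longrightarrow> dim_col (fst (\<Phi> ! Suc k)) = dim_row (fst (\<Phi> ! k)))"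

definition ann_L :: "ann \<Rightarrow> nat" where "ann_L \<Phi> = length \<Phi>"
definition ann_H :: "ann \<Rightarrow> nat" where "ann_H \<Phi> = length \<Phi> - 1"
definition ann_I :: "ann \<Rightarrow> nat" where "ann_I \<Phi> = dim_col (fst (hd \<Phi>))"
definition ann_O :: "ann \<Rightarrow> nat" where "ann_O \<Phi> = dim_row (fst (last \<Phi>))"

definition ann_D :: "ann \<Rightarrow> nat list" where
  "ann_D \<Phi> = ann_I \<Phi> # map (\<lambda>l. dim_row (fst l)) \<Phi>"

definition ann_P :: "ann \<Rightarrow> nat" where
  "ann_P \<Phi> = (\<Sum>k<length \<Phi>. dim_row (fst (\<Phi> ! k)) * (dim_col (fst (\<Phi> ! k)) + 1))"

definition maxnorm :: "nat list \<Rightarrow> nat" where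
  "maxnorm xs = Max (set xs)"

fun realize_aux :: "(real \<Rightarrow> real) \<Rightarrow> ann \<Rightarrow> real vec \<Rightarrow> real vec" where
  "realize_aux a [] x = x"
| "realize_aux a [(W, B)] x = W *\<^sub>v x + B"
| "realize_aux a ((W, B) # l # ls) x = realize_aux a (l # ls) (map_vec a (W *\<^sub>v x + B))"

definition realize :: "(real \<Rightarrow> real) \<Rightarrow> ann \<Rightarrow> real vec \<Rightarrow> real vec" where
  "realize a \<Phi> = realize_aux a \<Phi>"

definition in_C :: "nat \<Rightarrow> nat \<Rightarrow> (real vec \<Rightarrow> real vec) \<Rightarrow> bool" where
  "in_C m n f \<longleftrightarrow> (\<forall>x \<in> carrier_vec m. f x \<in> carrier_vec n) \<and>
     (\<forall>x \<in> carrier_vec m. \<forall>\<epsilon>>0. \<exists>\<delta>>0. \<forall>y \<in> carrier_vec m.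
        (\<forall>i<m. \<bar>y $ i - x $ i\<bar> < \<delta>) \<longrightarrow> (\<forall>j<n. \<bar>f y $ j - f x $ j\<bar> < \<epsilon>))"

definition realization_in_C :: "(real \<Rightarrow> real) \<Rightarrow> ann \<Rightarrow> nat \<Rightarrow> nat \<Rightarrow> bool" where
  "realization_in_C a \<Phi> m n \<longleftrightarrow> ann_I \<Phi> = m \<and> ann_O \<Phi> = n \<and> in_C m n (realize a \<Phi>)"

definition ann_A :: "real mat \<Rightarrow> real vec \<Rightarrow> ann" where
  "ann_A W B = [(W, B)]"

text \<open>Composition Phi1 \<bullet> Phi2 (Phi2 is applied first).\<close>
definition ann_comp :: "ann \<Rightarrow> ann \<Rightarrow> ann" where
  "ann_comp \<Phi>1 \<Phi>2 =
     butlast \<Phi>2 @ [(fst (hd \<Phi>1) * fst (last \<Phi>2), fst (hd \<Phi>1) *\<^sub>v snd (last \<Phi>2) + snd (hd \<Phi>1))]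
     @ tl \<Phi>1"

definition ann_scalar :: "real \<Rightarrow> ann \<Rightarrow> ann" where
  "ann_scalar c \<Phi> = ann_comp (ann_A (c \<cdot>\<^sub>m 1\<^sub>m (ann_O \<Phi>)) (0\<^sub>v (ann_O \<Phi>))) \<Phi>"

fun block_diag :: "real mat list \<Rightarrow> real mat" where
  "block_diag [] = 0\<^sub>m 0 0"
| "block_diag (A # As) = four_block_mat A (0\<^sub>m (dim_row A) (dim_col (block_diag As)))
      (0\<^sub>m (dim_row (block_diag As)) (dim_col A)) (block_diag As)"

fun stack_vec :: "real vec list \<Rightarrow> real vec" where
  "stack_vec [] = 0\<^sub>v 0"
| "stack_vec (v # vs) = v @\<^sub>v stack_vec vs"

definition ann_par :: "ann list \<Rightarrow> ann" where
  "ann_par \<Phi>s = map (\<lambda>k. (block_diag (map (\<lambda>\<Phi>. fst (\<Phi> ! k)) \<Phi>s),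
                            stack_vec (map (\<lambda>\<Phi>. snd (\<Phi> ! k)) \<Phi>s)))
                   [0..<length (hd \<Phi>s)]"

text \<open>S_(m,n) = A_((I_m ... I_m), 0) and T_(m,n) = A_((I_m ... I_m)^T, 0), n identity blocks.\<close>
definition id_row_blocks :: "nat \<Rightarrow> nat \<Rightarrow> real mat" where
  "id_row_blocks m n = mat m (n * m) (\<lambda>(i, j). if j mod m = i then 1 else 0)"

definition ann_S :: "nat \<Rightarrow> nat \<Rightarrow> ann" where
  "ann_S m n = ann_A (id_row_blocks m n) (0\<^sub>v m)"

definition ann_T :: "nat \<Rightarrow> nat \<Rightarrow> ann" where
  "ann_T m n = ann_A (transpose_mat (id_row_blocks m n)) (0\<^sub>v (n * m))"

definition ann_sum :: "ann list \<Rightarrow> ann" where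
  "ann_sum \<Phi>s = ann_comp (ann_S (ann_O (hd \<Phi>s)) (length \<Phi>s))
                   (ann_comp (ann_par \<Phi>s) (ann_T (ann_I (hd \<Phi>s)) (length \<Phi>s)))"

fun ann_pow :: "ann \<Rightarrow> nat \<Rightarrow> ann" where
  "ann_pow \<Psi> 0 = [(1\<^sub>m (ann_O \<Psi>), 0\<^sub>v (ann_O \<Psi>))]"
| "ann_pow \<Psi> (Suc n) = ann_comp \<Psi> (ann_pow \<Psi> n)"

definition ann_ext :: "nat \<Rightarrow> ann \<Rightarrow> ann \<Rightarrow> ann" where
  "ann_ext L \<Psi> \<Phi> = ann_comp (ann_pow \<Psi> (L - ann_L \<Phi>)) \<Phi>"

text \<open>Sum of ANNs of different lengths, boxplus_(k=u,Psi)^v Phi_k, on the list [Phi_u, ..., Phi_v];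
  also Phi_u \<boxplus>_Psi ... \<boxplus>_Psi Phi_v.\<close>
definition ann_boxplus :: "ann \<Rightarrow> ann list \<Rightarrow> ann" where
  "ann_boxplus \<Psi> \<Phi>s = ann_sum (map (ann_ext (Max (set (map ann_L \<Phi>s))) \<Psi>) \<Phi>s)"

definition Theta :: "int list set" where
  "Theta = {\<theta>. length \<theta> \<ge> 1}"

definition indN :: "nat \<Rightarrow> real" where
  "indN n = (if 1 \<le> n then 1 else 0)"

end

theory Submission
  imports Defs
begin

lemma cont_eps:
  assumes "continuous_on UNIV (a::real\<Rightarrow>real)" "e > 0"
  shows "\<exists>d>0. \<forall>y. \<bar>y - x\<bar> < d \<longrightarrow> \<bar>a y - a x\<bar> < e"
proof -
  have "isCont a x" using assms(1) by (simp add: continuous_on_eq_continuous_at)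
  then have "a \<midarrow>x\<rightarrow> a x" by (simp add: isCont_def)
  then obtain s where s: "s > 0" "\<forall>y. y \<noteq> x \<and> norm (y - x) < s \<longrightarrow> norm (a y - a x) < e"
    using assms(2) unfolding LIM_eq by blast
  show ?thesis
  proof (intro exI[of _ s] conjI allI impI)
    fix y assume "\<bar>y - x\<bar> < s"
    then show "\<bar>a y - a x\<bar> < e" using s assms(2) by (cases "y = x") auto
  qed (use s in auto)
qed

lemma is_ANN_single:
  "is_ANN [(W,B)] \<longleftrightarrow> dim_row W = dim_vec B \<and> 0 < dim_row W \<and> 0 < dim_col W"
  unfolding is_ANN_def by auto

lemma is_ANN_cons:
  "is_ANN ((W,B) # \<Phi>) \<longleftrightarrow> dim_row W = dim_vec B \<and> 0 < dim_row W \<and> 0 < dim_col W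
     \<and> (\<Phi> \<noteq> [] \<longrightarrow> is_ANN \<Phi> \<and> ann_I \<Phi> = dim_row W)"
proof (cases \<Phi>)
  case Nil then show ?thesis by (simp add: is_ANN_single)
next
  case (Cons l ls)
  show ?thesis
  proof
    assume h: "is_ANN ((W,B) # \<Phi>)"
    have A: "\<forall>k < length ((W,B)#\<Phi>). dim_row (fst (((W,B)#\<Phi>) ! k)) = dim_vec (snd (((W,B)#\<Phi>) ! k))
        \<and> 0 < dim_row (fst (((W,B)#\<Phi>) ! k)) \<and> 0 < dim_col (fst (((W,B)#\<Phi>) ! k))"
      and Bq: "\<forall>k. Suc k < length ((W,B)#\<Phi>) \<longrightarrow> dim_col (fst (((W,B)#\<Phi>) ! Suc k)) = dim_row (fst (((W,B)#\<Phi>) ! k))"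
      using h unfolding is_ANN_def by auto
    have 1: "dim_row W = dim_vec B \<and> 0 < dim_row W \<and> 0 < dim_col W" using A[rule_format, of 0] by simp
    have 2: "\<forall>k < length \<Phi>. dim_row (fst (\<Phi> ! k)) = dim_vec (snd (\<Phi> ! k))
        \<and> 0 < dim_row (fst (\<Phi> ! k)) \<and> 0 < dim_col (fst (\<Phi> ! k))"
      using A by (metis Suc_less_eq length_Cons nth_Cons_Suc)
    have 3: "\<forall>k. Suc k < length \<Phi> \<longrightarrow> dim_col (fst (\<Phi> ! Suc k)) = dim_row (fst (\<Phi> ! k))"
      using Bq by (metis Suc_less_eq length_Cons nth_Cons_Suc)
    have 4: "ann_I \<Phi> = dim_row W" using Bq[rule_format, of 0] Cons by (simp add: ann_I_def)
    show "dim_row W = dim_vec B \<and> 0 < dim_row W \<and> 0 < dim_col W \<and> (\<Phi> \<noteq> [] \<longrightarrow> is_ANN \<Phi> \<and> ann_I \<Phi> = dim_row W)"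
      using 1 2 3 4 Cons unfolding is_ANN_def by auto
  next
    assume h: "dim_row W = dim_vec B \<and> 0 < dim_row W \<and> 0 < dim_col W \<and> (\<Phi> \<noteq> [] \<longrightarrow> is_ANN \<Phi> \<and> ann_I \<Phi> = dim_row W)"
    then have h1: "dim_row W = dim_vec B" "0 < dim_row W" "0 < dim_col W" and h2: "is_ANN \<Phi>" "ann_I \<Phi> = dim_row W"
      using Cons by auto
    have A: "\<forall>k < length \<Phi>. dim_row (fst (\<Phi> ! k)) = dim_vec (snd (\<Phi> ! k))
        \<and> 0 < dim_row (fst (\<Phi> ! k)) \<and> 0 < dim_col (fst (\<Phi> ! k))"
      and Bq: "\<forall>k. Suc k < length \<Phi> \<longrightarrow> dim_col (fst (\<Phi> ! Suc k)) = dim_row (fst (\<Phi> ! k))"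
      using h2 unfolding is_ANN_def by auto
    have X: "\<forall>k < length ((W,B)#\<Phi>). dim_row (fst (((W,B)#\<Phi>) ! k)) = dim_vec (snd (((W,B)#\<Phi>) ! k))
        \<and> 0 < dim_row (fst (((W,B)#\<Phi>) ! k)) \<and> 0 < dim_col (fst (((W,B)#\<Phi>) ! k))"
    proof (intro allI impI)
      fix k assume "k < length ((W,B)#\<Phi>)"
      then show "dim_row (fst (((W,B)#\<Phi>) ! k)) = dim_vec (snd (((W,B)#\<Phi>) ! k))
        \<and> 0 < dim_row (fst (((W,B)#\<Phi>) ! k)) \<and> 0 < dim_col (fst (((W,B)#\<Phi>) ! k))"
        using A h1 by (cases k) auto
    qed
    have Y: "\<forall>k. Suc k < length ((W,B)#\<Phi>) \<longrightarrow> dim_col (fst (((W,B)#\<Phi>) ! Suc k)) = dim_row (fst (((W,B)#\<Phi>) ! k))"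
    proof (intro allI impI)
      fix k assume "Suc k < length ((W,B)#\<Phi>)"
      then show "dim_col (fst (((W,B)#\<Phi>) ! Suc k)) = dim_row (fst (((W,B)#\<Phi>) ! k))"
        using Bq h2 Cons by (cases k) (auto simp: ann_I_def)
    qed
    show "is_ANN ((W,B) # \<Phi>)" unfolding is_ANN_def by (intro conjI, simp, rule X, rule Y)
  qed
qed

lemma realize_aux_cons:
  "realize_aux a ((W,B) # \<Phi>) x = (if \<Phi> = [] then W *\<^sub>v x + B else realize_aux a \<Phi> (map_vec a (W *\<^sub>v x + B)))"
  by (cases \<Phi>) auto

lemma is_ANN_nonempty: "is_ANN \<Phi> \<Longrightarrow> \<Phi> \<noteq> []" unfolding is_ANN_def by auto

lemma affine_carrier:
  "x \<in> carrier_vec (dim_col W) \<Longrightarrow> dim_vec B = dim_row W \<Longrightarrow> W *\<^sub>v x + B \<in> carrier_vec (dim_row W)"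
  by (rule add_carrier_vec[OF mult_mat_vec_carrier[OF carrier_mat_triv]]) (auto intro: carrier_vecI)

lemma realize_carrier:
  "is_ANN \<Phi> \<Longrightarrow> x \<in> carrier_vec (ann_I \<Phi>) \<Longrightarrow> realize_aux a \<Phi> x \<in> carrier_vec (ann_O \<Phi>)"
proof (induction \<Phi> arbitrary: x)
  case Nil then show ?case by (simp add: is_ANN_def)
next
  case (Cons l \<Phi>)
  obtain W B where l: "l = (W,B)" by fastforce
  have h0: "dim_row W = dim_vec B \<and> 0 < dim_row W \<and> 0 < dim_col W
     \<and> (\<Phi> \<noteq> [] \<longrightarrow> is_ANN \<Phi> \<and> ann_I \<Phi> = dim_row W)"
    using Cons.prems(1) is_ANN_cons[of W B \<Phi>] unfolding l by blast
  have x: "x \<in> carrier_vec (dim_col W)" using Cons.prems(2) unfolding l by (simp add: ann_I_def)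
  have af: "W *\<^sub>v x + B \<in> carrier_vec (dim_row W)" using affine_carrier[OF x] h0 by simp
  show ?case
  proof (cases "\<Phi> = []")
    case True
    then show ?thesis using af unfolding l by (simp add: ann_O_def)
  next
    case False
    then have h: "is_ANN \<Phi>" "ann_I \<Phi> = dim_row W" using h0 by auto
    have "map_vec a (W *\<^sub>v x + B) \<in> carrier_vec (ann_I \<Phi>)" using h(2) af by simp
    then have "realize_aux a \<Phi> (map_vec a (W *\<^sub>v x + B)) \<in> carrier_vec (ann_O \<Phi>)" by (rule Cons.IH[OF h(1)])
    moreover have "ann_O (l # \<Phi>) = ann_O \<Phi>" using False by (simp add: ann_O_def)
    ultimately show ?thesis using False unfolding l by (simp only: realize_aux_cons if_False)
  qed
qed

lemma comp_single: "ann_comp ((W1,B1)#\<Phi>1) [(W,B)] = (W1*W, W1 *\<^sub>v B + B1) # \<Phi>1"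
  unfolding ann_comp_def by simp

lemma comp_cons: "\<Phi>2 \<noteq> [] \<Longrightarrow> ann_comp \<Phi>1 ((W,B)#\<Phi>2) = (W,B) # ann_comp \<Phi>1 \<Phi>2"
  unfolding ann_comp_def by simp

lemma comp_props:
  assumes "is_ANN \<Phi>1" "is_ANN \<Phi>2" "ann_I \<Phi>1 = ann_O \<Phi>2"
  shows "is_ANN (ann_comp \<Phi>1 \<Phi>2) \<and> ann_I (ann_comp \<Phi>1 \<Phi>2) = ann_I \<Phi>2
    \<and> ann_O (ann_comp \<Phi>1 \<Phi>2) = ann_O \<Phi>1 \<and> length (ann_comp \<Phi>1 \<Phi>2) = length \<Phi>1 + length \<Phi>2 - 1
    \<and> (\<forall>x \<in> carrier_vec (ann_I \<Phi>2). realize_aux a (ann_comp \<Phi>1 \<Phi>2) x = realize_aux a \<Phi>1 (realize_aux a \<Phi>2 x))"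
  using assms
proof (induction \<Phi>2)
  case Nil then show ?case by (simp add: is_ANN_def)
next
  case (Cons l \<Phi>2)
  obtain W B where l: "l = (W,B)" by fastforce
  have h0: "dim_row W = dim_vec B \<and> 0 < dim_row W \<and> 0 < dim_col W
     \<and> (\<Phi>2 \<noteq> [] \<longrightarrow> is_ANN \<Phi>2 \<and> ann_I \<Phi>2 = dim_row W)"
    using Cons.prems(2) is_ANN_cons[of W B \<Phi>2] unfolding l by blast
  obtain W1 B1 \<Phi>1' where p1: "\<Phi>1 = (W1,B1) # \<Phi>1'"
    using is_ANN_nonempty[OF Cons.prems(1)] by (metis list.exhaust prod.exhaust)
  have h1: "dim_row W1 = dim_vec B1 \<and> 0 < dim_row W1 \<and> 0 < dim_col W1
     \<and> (\<Phi>1' \<noteq> [] \<longrightarrow> is_ANN \<Phi>1' \<and> ann_I \<Phi>1' = dim_row W1)"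
    using Cons.prems(1) is_ANN_cons[of W1 B1 \<Phi>1'] unfolding p1 by blast
  show ?case
  proof (cases "\<Phi>2 = []")
    case True
    have dimc: "dim_col W1 = dim_row W" using Cons.prems(3) True unfolding l p1 by (simp add: ann_I_def ann_O_def)
    have c: "ann_comp \<Phi>1 (l#\<Phi>2) = (W1*W, W1 *\<^sub>v B + B1) # \<Phi>1'" unfolding l p1 True by (rule comp_single)
    have isA: "is_ANN (ann_comp \<Phi>1 (l#\<Phi>2))" unfolding c is_ANN_cons using h0 h1 dimc by auto
    have I: "ann_I (ann_comp \<Phi>1 (l#\<Phi>2)) = ann_I (l#\<Phi>2)" unfolding c by (simp add: ann_I_def l)
    have O: "ann_O (ann_comp \<Phi>1 (l#\<Phi>2)) = ann_O \<Phi>1" unfolding c by (simp add: p1 ann_O_def)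
    have len: "length (ann_comp \<Phi>1 (l#\<Phi>2)) = length \<Phi>1 + length (l#\<Phi>2) - 1" unfolding c by (simp add: p1 True)
    have R: "realize_aux a (ann_comp \<Phi>1 (l#\<Phi>2)) x = realize_aux a \<Phi>1 (realize_aux a (l#\<Phi>2) x)"
      if x: "x \<in> carrier_vec (ann_I (l#\<Phi>2))" for x
    proof -
      have xc: "x \<in> carrier_vec (dim_col W)" using x unfolding l by (simp add: ann_I_def)
      have W1c: "W1 \<in> carrier_mat (dim_row W1) (dim_row W)" using dimc by (intro carrier_matI) auto
      have Wc: "W \<in> carrier_mat (dim_row W) (dim_col W)" by simp
      have Bc: "B \<in> carrier_vec (dim_row W)" using h0 by (intro carrier_vecI) auto
      have B1c: "B1 \<in> carrier_vec (dim_row W1)" using h1 by (intro carrier_vecI) auto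
      have Wx: "W *\<^sub>v x \<in> carrier_vec (dim_row W)" by (rule mult_mat_vec_carrier[OF Wc xc])
      have d1: "W1 *\<^sub>v (W *\<^sub>v x + B) = W1 *\<^sub>v (W *\<^sub>v x) + W1 *\<^sub>v B"
        by (rule mult_add_distrib_mat_vec[OF W1c Wx Bc])
      have d2: "(W1 *\<^sub>v (W *\<^sub>v x) + W1 *\<^sub>v B) + B1 = W1 *\<^sub>v (W *\<^sub>v x) + (W1 *\<^sub>v B + B1)"
        by (rule assoc_add_vec[OF mult_mat_vec_carrier[OF W1c Wx] mult_mat_vec_carrier[OF W1c Bc] B1c])
      have d3: "(W1 * W) *\<^sub>v x = W1 *\<^sub>v (W *\<^sub>v x)" by (rule assoc_mult_mat_vec[OF W1c Wc xc])
      have e: "(W1 * W) *\<^sub>v x + (W1 *\<^sub>v B + B1) = W1 *\<^sub>v (W *\<^sub>v x + B) + B1"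
        by (simp only: d1 d2 d3)
      have r1: "realize_aux a (l#\<Phi>2) x = W *\<^sub>v x + B" unfolding l True by simp
      show ?thesis unfolding c r1 unfolding p1 realize_aux_cons e by (rule refl)
    qed
    show ?thesis using isA I O len R by simp
  next
    case False
    have h: "is_ANN \<Phi>2" "ann_I \<Phi>2 = dim_row W" using h0 False by auto
    have O2: "ann_O (l#\<Phi>2) = ann_O \<Phi>2" using False by (simp add: ann_O_def)
    have IH: "is_ANN (ann_comp \<Phi>1 \<Phi>2) \<and> ann_I (ann_comp \<Phi>1 \<Phi>2) = ann_I \<Phi>2
    \<and> ann_O (ann_comp \<Phi>1 \<Phi>2) = ann_O \<Phi>1 \<and> length (ann_comp \<Phi>1 \<Phi>2) = length \<Phi>1 + length \<Phi>2 - 1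
    \<and> (\<forall>x \<in> carrier_vec (ann_I \<Phi>2). realize_aux a (ann_comp \<Phi>1 \<Phi>2) x = realize_aux a \<Phi>1 (realize_aux a \<Phi>2 x))"
      using Cons.IH[OF Cons.prems(1) h(1)] Cons.prems(3) O2 by simp
    have c: "ann_comp \<Phi>1 (l#\<Phi>2) = (W,B) # ann_comp \<Phi>1 \<Phi>2" unfolding l using False by (rule comp_cons)
    have ne: "ann_comp \<Phi>1 \<Phi>2 \<noteq> []" using IH is_ANN_nonempty by blast
    have isA: "is_ANN (ann_comp \<Phi>1 (l#\<Phi>2))" unfolding c is_ANN_cons using h0 IH h by simp
    have I: "ann_I (ann_comp \<Phi>1 (l#\<Phi>2)) = ann_I (l#\<Phi>2)" unfolding c by (simp add: ann_I_def l)
    have O: "ann_O (ann_comp \<Phi>1 (l#\<Phi>2)) = ann_O \<Phi>1" unfolding c using IH ne by (simp add: ann_O_def)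
    have len: "length (ann_comp \<Phi>1 (l#\<Phi>2)) = length \<Phi>1 + length (l#\<Phi>2) - 1" unfolding c using IH False
      by (cases \<Phi>2) auto
    have R: "realize_aux a (ann_comp \<Phi>1 (l#\<Phi>2)) x = realize_aux a \<Phi>1 (realize_aux a (l#\<Phi>2) x)"
      if x: "x \<in> carrier_vec (ann_I (l#\<Phi>2))" for x
    proof -
      have xc: "x \<in> carrier_vec (dim_col W)" using x unfolding l by (simp add: ann_I_def)
      have af: "W *\<^sub>v x + B \<in> carrier_vec (dim_row W)" using affine_carrier[OF xc] h0 by simp
      have m: "map_vec a (W *\<^sub>v x + B) \<in> carrier_vec (ann_I \<Phi>2)" using af h by simp
      have r: "realize_aux a ((W,B) # ann_comp \<Phi>1 \<Phi>2) x = realize_aux a (ann_comp \<Phi>1 \<Phi>2) (map_vec a (W *\<^sub>v x + B))"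
        using ne by (simp only: realize_aux_cons if_False)
      have r2: "realize_aux a ((W,B) # \<Phi>2) x = realize_aux a \<Phi>2 (map_vec a (W *\<^sub>v x + B))"
        using False by (simp only: realize_aux_cons if_False)
      show ?thesis unfolding c unfolding l r r2 using IH m by blast
    qed
    show ?thesis using isA I O len R by simp
  qed
qed

lemma comp_D:
  assumes "\<Phi>1 \<noteq> []" "\<Phi>2 \<noteq> []"
  shows "ann_D (ann_comp \<Phi>1 \<Phi>2) = butlast (ann_D \<Phi>2) @ tl (ann_D \<Phi>1)"
proof -
  define m where "m = (fst (hd \<Phi>1) * fst (last \<Phi>2), fst (hd \<Phi>1) *\<^sub>v snd (last \<Phi>2) + snd (hd \<Phi>1))"
  have c: "ann_comp \<Phi>1 \<Phi>2 = butlast \<Phi>2 @ [m] @ tl \<Phi>1" unfolding ann_comp_def m_def by simp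
  have I: "ann_I (ann_comp \<Phi>1 \<Phi>2) = ann_I \<Phi>2"
  proof (cases "butlast \<Phi>2 = []")
    case True
    then have "\<Phi>2 = [last \<Phi>2]" using assms(2) by (metis append_butlast_last_id append_Nil)
    then have e: "hd \<Phi>2 = last \<Phi>2" by (metis list.sel(1))
    have "hd (ann_comp \<Phi>1 \<Phi>2) = m" unfolding c True by simp
    then show ?thesis unfolding ann_I_def m_def e by simp
  next
    case False
    have "\<Phi>2 = butlast \<Phi>2 @ [last \<Phi>2]" using assms(2) by simp
    then have e: "hd \<Phi>2 = hd (butlast \<Phi>2)" using False by (metis hd_append2)
    have "hd (ann_comp \<Phi>1 \<Phi>2) = hd (butlast \<Phi>2)" unfolding c using False by (simp add: hd_append2)
    then show ?thesis unfolding ann_I_def e by simp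
  qed
  have b: "butlast (ann_D \<Phi>2) = ann_I \<Phi>2 # map (\<lambda>l. dim_row (fst l)) (butlast \<Phi>2)"
    unfolding ann_D_def using assms(2) by (simp add: map_butlast)
  have t: "tl (ann_D \<Phi>1) = dim_row (fst m) # map (\<lambda>l. dim_row (fst l)) (tl \<Phi>1)"
    unfolding ann_D_def m_def using assms(1) by (cases \<Phi>1) auto
  have "ann_D (ann_comp \<Phi>1 \<Phi>2) = ann_I \<Phi>2 # map (\<lambda>l. dim_row (fst l)) (butlast \<Phi>2 @ [m] @ tl \<Phi>1)"
    unfolding ann_D_def[of "ann_comp \<Phi>1 \<Phi>2"] I by (simp only: c)
  also have "\<dots> = butlast (ann_D \<Phi>2) @ tl (ann_D \<Phi>1)" unfolding b t by simp
  finally show ?thesis .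
qed

lemma set_butlast_tl: "set (butlast xs @ tl ys) \<subseteq> set xs \<union> set ys"
proof -
  have "set (tl ys) \<subseteq> set ys" by (cases ys) auto
  moreover have "set (butlast xs) \<subseteq> set xs" by (auto dest: in_set_butlastD)
  ultimately show ?thesis by auto
qed

lemma annA_props:
  assumes "dim_row W = dim_vec B" "0 < dim_row W" "0 < dim_col W"
  shows "is_ANN (ann_A W B) \<and> ann_I (ann_A W B) = dim_col W \<and> ann_O (ann_A W B) = dim_row W
   \<and> length (ann_A W B) = 1 \<and> ann_D (ann_A W B) = [dim_col W, dim_row W]
   \<and> (\<forall>x. realize_aux a (ann_A W B) x = W *\<^sub>v x + B)"
proof (intro conjI allI)
  show "is_ANN (ann_A W B)" unfolding ann_A_def is_ANN_single using assms by blast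
qed (simp_all add: ann_A_def ann_I_def ann_O_def ann_D_def)

lemma map_upt_cong: "(\<And>i. i < n \<Longrightarrow> f i = g i) \<Longrightarrow> map f [0..<n] = map g [0..<n]"
  by (induction n) auto

lemma dim_stack: "dim_vec (stack_vec vs) = sum_list (map dim_vec vs)"
  by (induction vs) auto

lemma dim_block_diag: "dim_row (block_diag Ms) = sum_list (map dim_row Ms)"
  "dim_col (block_diag Ms) = sum_list (map dim_col Ms)"
  by (induction Ms) auto

lemma zero_mat_mult_vec: "v \<in> carrier_vec c \<Longrightarrow> 0\<^sub>m r c *\<^sub>v v = 0\<^sub>v r"
  by (rule eq_vecI) (auto simp: row_def scalar_prod_def)

lemma sum_list_const_upt: "(\<forall>i<n. f i = m) \<Longrightarrow> sum_list (map f [0..<n]) = n * (m::nat)"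
  by (induction n) auto

lemma sum_list_upt_sum: "sum_list (map f [0..<n]) = (\<Sum>i<n. f i)"
  by (induction n) auto

lemma stack_index:
  assumes "\<forall>q<n. v q \<in> carrier_vec m" "j < n * m"
  shows "stack_vec (map v [0..<n]) $ j = v (j div m) $ (j mod m)"
  using assms
proof (induction n arbitrary: v j)
  case 0 then show ?case by simp
next
  case (Suc n)
  have m: "0 < m" using Suc.prems(2) by (cases m) auto
  have v0: "dim_vec (v 0) = m" using Suc.prems(1) by auto
  have ds: "dim_vec (stack_vec (map (\<lambda>i. v (Suc i)) [0..<n])) = n * m"
    using Suc.prems(1) unfolding dim_stack map_map o_def by (intro sum_list_const_upt) auto
  show ?case
  proof (cases "j < m")
    case True
    then show ?thesis unfolding map_upt_Suc using v0 ds by simp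
  next
    case False
    have j: "j - m < n * m" using Suc.prems(2) False by simp
    have IH: "stack_vec (map (\<lambda>i. v (Suc i)) [0..<n]) $ (j - m) = v (Suc ((j-m) div m)) $ ((j-m) mod m)"
      using Suc.IH[of "\<lambda>i. v (Suc i)" "j - m"] Suc.prems(1) j by simp
    have "j div m = Suc ((j-m) div m)" using False m by (simp add: le_div_geq)
    moreover have "j mod m = (j-m) mod m" using False m by (simp add: le_mod_geq)
    ultimately show ?thesis unfolding map_upt_Suc using v0 ds False IH Suc.prems(2) by simp
  qed
qed

lemma block_mult:
  assumes "\<forall>q<n. dim_col (M q) = dim_vec (v q)"
  shows "block_diag (map M [0..<n]) *\<^sub>v stack_vec (map v [0..<n]) = stack_vec (map (\<lambda>q. M q *\<^sub>v v q) [0..<n])"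
  using assms
proof (induction n arbitrary: M v)
  case 0 then show ?case by (auto intro!: eq_vecI)
next
  case (Suc n)
  let ?BD = "block_diag (map (\<lambda>i. M (Suc i)) [0..<n])"
  let ?SV = "stack_vec (map (\<lambda>i. v (Suc i)) [0..<n])"
  have IH: "?BD *\<^sub>v ?SV = stack_vec (map (\<lambda>q. M (Suc q) *\<^sub>v v (Suc q)) [0..<n])"
    using Suc.IH[of "\<lambda>i. M (Suc i)" "\<lambda>i. v (Suc i)"] Suc.prems by simp
  have dSV: "dim_col ?BD = dim_vec ?SV" unfolding dim_block_diag dim_stack map_map o_def
    using Suc.prems by (intro arg_cong[where f=sum_list] map_upt_cong) auto
  have c0: "dim_col (M 0) = dim_vec (v 0)" using Suc.prems by auto
  have "block_diag (map M [0..<Suc n]) *\<^sub>v stack_vec (map v [0..<Suc n])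
      = four_block_mat (M 0) (0\<^sub>m (dim_row (M 0)) (dim_col ?BD)) (0\<^sub>m (dim_row ?BD) (dim_col (M 0))) ?BD
         *\<^sub>v (v 0 @\<^sub>v ?SV)" unfolding map_upt_Suc by simp
  also have "\<dots> = (M 0 *\<^sub>v v 0 + 0\<^sub>m (dim_row (M 0)) (dim_col ?BD) *\<^sub>v ?SV) @\<^sub>v
        (0\<^sub>m (dim_row ?BD) (dim_col (M 0)) *\<^sub>v v 0 + ?BD *\<^sub>v ?SV)"
    by (rule four_block_mat_mult_vec[of _ "dim_row (M 0)" "dim_col (M 0)" _ "dim_col ?BD" _ "dim_row ?BD"])
      (use c0 dSV in \<open>auto intro: carrier_vecI\<close>)
  also have "\<dots> = (M 0 *\<^sub>v v 0) @\<^sub>v (?BD *\<^sub>v ?SV)"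
  proof -
    have a1: "0\<^sub>m (dim_row (M 0)) (dim_col ?BD) *\<^sub>v ?SV = 0\<^sub>v (dim_row (M 0))"
      by (rule zero_mat_mult_vec) (use dSV in \<open>auto intro: carrier_vecI\<close>)
    have a2: "0\<^sub>m (dim_row ?BD) (dim_col (M 0)) *\<^sub>v v 0 = 0\<^sub>v (dim_row ?BD)"
      by (rule zero_mat_mult_vec) (use c0 in \<open>auto intro: carrier_vecI\<close>)
    have b1: "M 0 *\<^sub>v v 0 + 0\<^sub>v (dim_row (M 0)) = M 0 *\<^sub>v v 0"
      by (rule right_zero_vec) (auto intro: carrier_vecI)
    have b2: "0\<^sub>v (dim_row ?BD) + ?BD *\<^sub>v ?SV = ?BD *\<^sub>v ?SV"
      by (rule left_zero_vec) (auto intro: carrier_vecI)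
    show ?thesis unfolding a1 a2 b1 b2 by (rule refl)
  qed
  also have "\<dots> = stack_vec (map (\<lambda>q. M q *\<^sub>v v q) [0..<Suc n])"
    unfolding map_upt_Suc IH by simp
  finally show ?case .
qed

lemma stack_add:
  assumes "\<forall>q<n. dim_vec (u q) = dim_vec (v q)"
  shows "stack_vec (map u [0..<n]) + stack_vec (map v [0..<n]) = stack_vec (map (\<lambda>q. u q + v q) [0..<n])"
  using assms
proof (induction n arbitrary: u v)
  case 0 then show ?case by (auto intro!: eq_vecI)
next
  case (Suc n)
  have IH: "stack_vec (map (\<lambda>i. u (Suc i)) [0..<n]) + stack_vec (map (\<lambda>i. v (Suc i)) [0..<n])
     = stack_vec (map (\<lambda>q. u (Suc q) + v (Suc q)) [0..<n])"
    using Suc.IH[of "\<lambda>i. u (Suc i)" "\<lambda>i. v (Suc i)"] Suc.prems by simp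
  have d: "dim_vec (stack_vec (map (\<lambda>i. u (Suc i)) [0..<n])) = dim_vec (stack_vec (map (\<lambda>i. v (Suc i)) [0..<n]))"
    unfolding dim_stack map_map o_def using Suc.prems
    by (intro arg_cong[where f=sum_list] map_upt_cong) auto
  have "stack_vec (map u [0..<Suc n]) + stack_vec (map v [0..<Suc n])
     = (u 0 + v 0) @\<^sub>v (stack_vec (map (\<lambda>i. u (Suc i)) [0..<n]) + stack_vec (map (\<lambda>i. v (Suc i)) [0..<n]))"
    unfolding map_upt_Suc stack_vec.simps
    by (rule append_vec_add[of _ "dim_vec (u 0)" _ _ "dim_vec (stack_vec (map (\<lambda>i. v (Suc i)) [0..<n]))"])
      (use Suc.prems d in \<open>auto intro: carrier_vecI\<close>)
  then show ?case unfolding IH map_upt_Suc by simp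
qed

lemma map_vec_append: "map_vec f (u @\<^sub>v w) = map_vec f u @\<^sub>v map_vec f w"
  by (rule eq_vecI) auto

lemma stack_map: "map_vec f (stack_vec vs) = stack_vec (map (map_vec f) vs)"
  by (induction vs) (auto simp: map_vec_append intro!: eq_vecI)

lemma S_sum_aux:
  fixes f :: "nat \<Rightarrow> real"
  assumes "i < m"
  shows "(\<Sum>j<n*m. (if j mod m = i then 1 else 0) * f j) = (\<Sum>q<n. f (q*m+i))"
proof -
  have "(\<Sum>j<n*m. (if j mod m = i then 1 else 0) * f j)
      = (\<Sum>q<n. \<Sum>j\<in>{q*m..<q*m+m}. (if j mod m = i then 1 else 0) * f j)"
    by (rule sum.nat_group[symmetric])
  also have "\<dots> = (\<Sum>q<n. f (q*m+i))"
  proof (rule sum.cong[OF refl])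
    fix q
    have "(\<Sum>j\<in>{q*m..<q*m+m}. (if j mod m = i then 1 else 0) * f j)
        = (\<Sum>j\<in>{q*m..<q*m+m}. if j = q*m+i then f j else 0)"
    proof (rule sum.cong[OF refl])
      fix j assume j: "j \<in> {q*m..<q*m+m}"
      define r where "r = j - q*m"
      have r: "j = q*m + r" "r < m" using j unfolding r_def by auto
      then have "j mod m = r" by simp
      then show "(if j mod m = i then 1 else 0) * f j = (if j = q*m+i then f j else 0)" using r by auto
    qed
    also have "\<dots> = f (q*m+i)" using assms by (simp add: sum.delta')
    finally show "(\<Sum>j\<in>{q*m..<q*m+m}. (if j mod m = i then 1 else 0) * f j) = f (q*m+i)" .
  qed
  finally show ?thesis .
qed

lemma S_apply:
  assumes "\<forall>q<n. v q \<in> carrier_vec m" "i < m"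
  shows "(id_row_blocks m n *\<^sub>v stack_vec (map v [0..<n])) $ i = (\<Sum>q<n. v q $ i)"
proof -
  let ?w = "stack_vec (map v [0..<n])"
  have dw: "dim_vec ?w = n * m" unfolding dim_stack map_map o_def
    using assms(1) by (intro sum_list_const_upt) auto
  have "(id_row_blocks m n *\<^sub>v ?w) $ i = (\<Sum>j<n*m. (if j mod m = i then 1 else 0) * ?w $ j)"
    using assms(2) dw unfolding id_row_blocks_def by (simp add: scalar_prod_def row_def lessThan_atLeast0)
  also have "\<dots> = (\<Sum>q<n. ?w $ (q*m+i))" by (rule S_sum_aux[OF assms(2)])
  also have "\<dots> = (\<Sum>q<n. v q $ i)"
  proof (rule sum.cong[OF refl])
    fix q assume q: "q \<in> {..<n}"
    have "Suc q \<le> n" using q by simp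
    then have "Suc q * m \<le> n * m" by (rule mult_le_mono1)
    then have lt: "q*m+i < n*m" using assms(2) by simp
    show "?w $ (q*m+i) = v q $ i" using stack_index[OF assms(1) lt] assms(2) by simp
  qed
  finally show ?thesis .
qed

lemma T_apply:
  assumes "x \<in> carrier_vec m" "0 < m"
  shows "transpose_mat (id_row_blocks m n) *\<^sub>v x = stack_vec (map (\<lambda>_. x) [0..<n])"
proof (rule eq_vecI)
  have ds: "dim_vec (stack_vec (map (\<lambda>_. x) [0..<n])) = n * m" unfolding dim_stack map_map o_def
    using assms(1) by (intro sum_list_const_upt) auto
  show "dim_vec (transpose_mat (id_row_blocks m n) *\<^sub>v x) = dim_vec (stack_vec (map (\<lambda>_. x) [0..<n]))"
    using ds by (simp add: id_row_blocks_def)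
  fix j assume "j < dim_vec (stack_vec (map (\<lambda>_. x) [0..<n]))"
  then have j: "j < n * m" using ds by simp
  have dx: "dim_vec x = m" using assms(1) by simp
  have "(transpose_mat (id_row_blocks m n) *\<^sub>v x) $ j = (\<Sum>i<m. (if j mod m = i then 1 else 0) * x $ i)"
    using j dx unfolding id_row_blocks_def by (simp add: scalar_prod_def row_def lessThan_atLeast0)
  also have "\<dots> = (\<Sum>i<m. if i = j mod m then x $ i else 0)" by (rule sum.cong) auto
  also have "\<dots> = x $ (j mod m)" using assms(2) by (simp add: sum.delta')
  also have "\<dots> = stack_vec (map (\<lambda>_. x) [0..<n]) $ j" using stack_index[of n "\<lambda>_. x" m j] assms(1) j by simp
  finally show "(transpose_mat (id_row_blocks m n) *\<^sub>v x) $ j = stack_vec (map (\<lambda>_. x) [0..<n]) $ j" .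
qed

lemma map_conv_idx: "map f xs = map (\<lambda>i. f (xs ! i)) [0..<length xs]"
proof -
  have "map f xs = map f (map ((!) xs) [0..<length xs])" by (simp only: map_nth)
  then show ?thesis by (simp only: map_map o_def)
qed

lemma list_split0: "\<Phi> \<noteq> [] \<Longrightarrow> \<Phi> = (fst (\<Phi>!0), snd (\<Phi>!0)) # tl \<Phi>"
  by (cases \<Phi>) auto

lemma par_cons:
  assumes "\<Phi>s \<noteq> []" "length (hd \<Phi>s) = Suc L" "\<forall>\<Phi>\<in>set \<Phi>s. \<Phi> \<noteq> []"
  shows "ann_par \<Phi>s = (block_diag (map (\<lambda>\<Phi>. fst (\<Phi>!0)) \<Phi>s), stack_vec (map (\<lambda>\<Phi>. snd (\<Phi>!0)) \<Phi>s))
           # ann_par (map tl \<Phi>s)"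
proof -
  have h: "length (hd (map tl \<Phi>s)) = L" using assms by (simp add: hd_map)
  have e: "\<And>k. map (\<lambda>\<Phi>. fst (\<Phi> ! k)) (map tl \<Phi>s) = map (\<lambda>\<Phi>. fst (\<Phi> ! Suc k)) \<Phi>s"
          "\<And>k. map (\<lambda>\<Phi>. snd (\<Phi> ! k)) (map tl \<Phi>s) = map (\<lambda>\<Phi>. snd (\<Phi> ! Suc k)) \<Phi>s"
    using assms(3) by (auto intro!: map_cong simp: neq_Nil_conv)
  show ?thesis unfolding ann_par_def assms(2) h map_upt_Suc e by simp
qed

locale parctx =
  fixes \<Phi>s :: "ann list" and L :: nat
  assumes ne: "\<Phi>s \<noteq> []"
    and wf: "\<And>q. q < length \<Phi>s \<Longrightarrow> is_ANN (\<Phi>s ! q)"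
    and len: "\<And>q. q < length \<Phi>s \<Longrightarrow> length (\<Phi>s ! q) = L"
begin

abbreviation "n \<equiv> length \<Phi>s"

lemma npos: "0 < n" using ne by simp

lemma Lpos: "0 < L" using wf[OF npos] len[OF npos] is_ANN_nonempty by fastforce

lemma hdlen: "length (hd \<Phi>s) = L" using len[OF npos] ne by (simp add: hd_conv_nth)

lemma par_len: "length (ann_par \<Phi>s) = L" unfolding ann_par_def hdlen by simp

lemma par_nth: "k < L \<Longrightarrow> ann_par \<Phi>s ! k =
   (block_diag (map (\<lambda>q. fst (\<Phi>s!q!k)) [0..<n]), stack_vec (map (\<lambda>q. snd (\<Phi>s!q!k)) [0..<n]))"
  unfolding ann_par_def hdlen by (simp add: map_conv_idx[of _ \<Phi>s])

lemma wf_layer: "q < n \<Longrightarrow> k < L \<Longrightarrow> dim_row (fst (\<Phi>s!q!k)) = dim_vec (snd (\<Phi>s!q!k))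
     \<and> 0 < dim_row (fst (\<Phi>s!q!k)) \<and> 0 < dim_col (fst (\<Phi>s!q!k))"
proof -
  assume q: "q < n" and k: "k < L"
  have "k < length (\<Phi>s!q)" using len[OF q] k by simp
  then show ?thesis using wf[OF q] unfolding is_ANN_def by blast
qed

lemma wf_link: "q < n \<Longrightarrow> Suc k < L \<Longrightarrow> dim_col (fst (\<Phi>s!q!Suc k)) = dim_row (fst (\<Phi>s!q!k))"
proof -
  assume q: "q < n" and k: "Suc k < L"
  have "Suc k < length (\<Phi>s!q)" using len[OF q] k by simp
  then show ?thesis using wf[OF q] unfolding is_ANN_def by blast
qed

lemma par_ne: "ann_par \<Phi>s \<noteq> []" using par_len Lpos by auto

lemma par_rows: "k < L \<Longrightarrow> dim_row (fst (ann_par \<Phi>s ! k)) = (\<Sum>q<n. dim_row (fst (\<Phi>s!q!k)))"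
  by (simp add: par_nth dim_block_diag map_map o_def sum_list_upt_sum)

lemma par_cols: "k < L \<Longrightarrow> dim_col (fst (ann_par \<Phi>s ! k)) = (\<Sum>q<n. dim_col (fst (\<Phi>s!q!k)))"
  by (simp add: par_nth dim_block_diag map_map o_def sum_list_upt_sum)

lemma par_bias: "k < L \<Longrightarrow> dim_vec (snd (ann_par \<Phi>s ! k)) = (\<Sum>q<n. dim_vec (snd (\<Phi>s!q!k)))"
  by (simp add: par_nth dim_stack map_map o_def sum_list_upt_sum)

lemma par_wf: "is_ANN (ann_par \<Phi>s)"
proof -
  have X: "\<forall>k < length (ann_par \<Phi>s). dim_row (fst (ann_par \<Phi>s ! k)) = dim_vec (snd (ann_par \<Phi>s ! k)) \<and>
          0 < dim_row (fst (ann_par \<Phi>s ! k)) \<and> 0 < dim_col (fst (ann_par \<Phi>s ! k))"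
  proof (intro allI impI)
    fix k assume "k < length (ann_par \<Phi>s)"
    then have k: "k < L" using par_len by simp
    have "(\<Sum>q<n. dim_row (fst (\<Phi>s!q!k))) = (\<Sum>q<n. dim_vec (snd (\<Phi>s!q!k)))"
      using wf_layer[OF _ k] by (intro sum.cong) auto
    moreover have pr: "\<And>q. q < n \<Longrightarrow> 0 < dim_row (fst (\<Phi>s!q!k))" using wf_layer[OF _ k] by blast
    moreover have pc: "\<And>q. q < n \<Longrightarrow> 0 < dim_col (fst (\<Phi>s!q!k))" using wf_layer[OF _ k] by blast
    moreover have "0 < (\<Sum>q<n. dim_row (fst (\<Phi>s!q!k)))"
      using pr npos by (intro sum_pos) auto
    moreover have "0 < (\<Sum>q<n. dim_col (fst (\<Phi>s!q!k)))"
      using pc npos by (intro sum_pos) auto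
    ultimately show "dim_row (fst (ann_par \<Phi>s ! k)) = dim_vec (snd (ann_par \<Phi>s ! k)) \<and>
          0 < dim_row (fst (ann_par \<Phi>s ! k)) \<and> 0 < dim_col (fst (ann_par \<Phi>s ! k))"
      using par_rows[OF k] par_cols[OF k] par_bias[OF k] by simp
  qed
  have Y: "\<forall>k. Suc k < length (ann_par \<Phi>s) \<longrightarrow> dim_col (fst (ann_par \<Phi>s ! Suc k)) = dim_row (fst (ann_par \<Phi>s ! k))"
  proof (intro allI impI)
    fix k assume "Suc k < length (ann_par \<Phi>s)"
    then have k: "Suc k < L" using par_len by simp
    have "(\<Sum>q<n. dim_col (fst (\<Phi>s!q!Suc k))) = (\<Sum>q<n. dim_row (fst (\<Phi>s!q!k)))"
      using wf_link[OF _ k] by (intro sum.cong) auto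
    then show "dim_col (fst (ann_par \<Phi>s ! Suc k)) = dim_row (fst (ann_par \<Phi>s ! k))"
      using par_rows[of k] par_cols[OF k] k by simp
  qed
  show ?thesis unfolding is_ANN_def by (intro conjI, rule par_ne, rule X, rule Y)
qed

lemma I_nth: "q < n \<Longrightarrow> ann_I (\<Phi>s!q) = dim_col (fst (\<Phi>s!q!0))"
  using wf is_ANN_nonempty unfolding ann_I_def by (simp add: hd_conv_nth)

lemma O_nth: "q < n \<Longrightarrow> ann_O (\<Phi>s!q) = dim_row (fst (\<Phi>s!q!(L-1)))"
  using wf is_ANN_nonempty len unfolding ann_O_def by (simp add: last_conv_nth)

lemma par_I: "ann_I (ann_par \<Phi>s) = (\<Sum>q<n. ann_I (\<Phi>s!q))"
proof -
  have "ann_I (ann_par \<Phi>s) = dim_col (fst (ann_par \<Phi>s ! 0))"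
    unfolding ann_I_def using par_ne by (simp add: hd_conv_nth)
  also have "\<dots> = (\<Sum>q<n. dim_col (fst (\<Phi>s!q!0)))" using par_cols Lpos by simp
  also have "\<dots> = (\<Sum>q<n. ann_I (\<Phi>s!q))" using I_nth by (intro sum.cong) auto
  finally show ?thesis .
qed

lemma par_O: "ann_O (ann_par \<Phi>s) = (\<Sum>q<n. ann_O (\<Phi>s!q))"
proof -
  have "ann_O (ann_par \<Phi>s) = dim_row (fst (ann_par \<Phi>s ! (L-1)))"
    unfolding ann_O_def using par_ne par_len by (simp add: last_conv_nth)
  also have "\<dots> = (\<Sum>q<n. dim_row (fst (\<Phi>s!q!(L-1))))" using par_rows Lpos by simp
  also have "\<dots> = (\<Sum>q<n. ann_O (\<Phi>s!q))" using O_nth by (intro sum.cong) auto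
  finally show ?thesis .
qed

lemma D_nth: "q < n \<Longrightarrow> j \<le> L \<Longrightarrow> ann_D (\<Phi>s!q) ! j = (if j = 0 then ann_I (\<Phi>s!q) else dim_row (fst (\<Phi>s!q!(j-1))))"
  unfolding ann_D_def using len by (cases j) auto

lemma par_D: "ann_D (ann_par \<Phi>s) = map (\<lambda>j. \<Sum>q<n. ann_D (\<Phi>s!q) ! j) [0..<Suc L]"
proof (rule nth_equalityI)
  show "length (ann_D (ann_par \<Phi>s)) = length (map (\<lambda>j. \<Sum>q<n. ann_D (\<Phi>s!q) ! j) [0..<Suc L])"
    unfolding ann_D_def using par_len by simp
next
  fix j assume "j < length (ann_D (ann_par \<Phi>s))"
  then have j: "j \<le> L" unfolding ann_D_def using par_len by simp
  show "ann_D (ann_par \<Phi>s) ! j = map (\<lambda>j. \<Sum>q<n. ann_D (\<Phi>s!q) ! j) [0..<Suc L] ! j"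
  proof (cases j)
    case 0
    then show ?thesis using D_nth[of _ 0] par_I unfolding ann_D_def by (simp del: upt_Suc)
  next
    case (Suc k)
    have k: "k < L" using j Suc by simp
    have "ann_D (ann_par \<Phi>s) ! j = dim_row (fst (ann_par \<Phi>s ! k))"
      unfolding ann_D_def Suc using k par_len by simp
    also have "\<dots> = (\<Sum>q<n. ann_D (\<Phi>s!q) ! j)" unfolding par_rows[OF k]
      using D_nth[OF _ j] Suc by (intro sum.cong) auto
    finally show ?thesis using j by (simp del: upt_Suc)
  qed
qed

end

lemma par_realize:
  assumes "\<Phi>s \<noteq> []" "\<forall>q<length \<Phi>s. is_ANN (\<Phi>s!q) \<and> length (\<Phi>s!q) = Suc L'"
    "\<forall>q<length \<Phi>s. xf q \<in> carrier_vec (ann_I (\<Phi>s!q))"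
  shows "realize_aux a (ann_par \<Phi>s) (stack_vec (map xf [0..<length \<Phi>s]))
       = stack_vec (map (\<lambda>q. realize_aux a (\<Phi>s!q) (xf q)) [0..<length \<Phi>s])"
  using assms
proof (induction L' arbitrary: \<Phi>s xf)
  case (0 \<Phi>s xf)
  define n where "n = length \<Phi>s"
  define W where "W q = fst (\<Phi>s!q!0)" for q
  define B where "B q = snd (\<Phi>s!q!0)" for q
  have ne: "\<forall>\<Phi>\<in>set \<Phi>s. \<Phi> \<noteq> []" using 0(2) by (metis in_set_conv_nth list.size(3) nat.distinct(1))
  have hl: "length (hd \<Phi>s) = Suc 0" using 0(1,2) by (simp add: hd_conv_nth)
  have pc: "ann_par \<Phi>s = (block_diag (map W [0..<n]), stack_vec (map B [0..<n])) # ann_par (map tl \<Phi>s)"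
    unfolding par_cons[OF 0(1) hl ne] W_def B_def n_def by (simp add: map_conv_idx[of _ \<Phi>s])
  have rest: "ann_par (map tl \<Phi>s) = []" unfolding ann_par_def using 0(1) hl by (simp add: hd_map)
  have lay: "\<And>q. q < n \<Longrightarrow> dim_row (W q) = dim_vec (B q)"
    using 0(2) unfolding n_def W_def B_def is_ANN_def by auto
  have nn: "\<And>q. q < n \<Longrightarrow> \<Phi>s!q \<noteq> []"
  proof -
    fix q assume "q < n"
    with 0(2) n_def have "length (\<Phi>s!q) = Suc 0" by blast
    then show "\<Phi>s!q \<noteq> []" by auto
  qed
  have Ic: "\<And>q. q < n \<Longrightarrow> ann_I (\<Phi>s!q) = dim_col (W q)"
    using nn unfolding W_def ann_I_def by (simp add: hd_conv_nth)
  have e1: "block_diag (map W [0..<n]) *\<^sub>v stack_vec (map xf [0..<n]) = stack_vec (map (\<lambda>q. W q *\<^sub>v xf q) [0..<n])"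
    by (rule block_mult) (use 0(3) Ic n_def in auto)
  have e2: "stack_vec (map (\<lambda>q. W q *\<^sub>v xf q) [0..<n]) + stack_vec (map B [0..<n])
       = stack_vec (map (\<lambda>q. W q *\<^sub>v xf q + B q) [0..<n])"
    by (rule stack_add) (use lay in auto)
  have sgl: "\<And>q. q < n \<Longrightarrow> \<Phi>s!q = [(W q, B q)]"
    using 0(2) unfolding n_def W_def B_def by (metis length_0_conv length_Suc_conv nth_Cons_0 prod.collapse)
  show ?case unfolding n_def[symmetric] pc rest
    by (simp add: e1 e2 sgl cong: map_upt_cong)
next
  case (Suc L' \<Phi>s xf)
  define n where "n = length \<Phi>s"
  define W where "W q = fst (\<Phi>s!q!0)" for q
  define B where "B q = snd (\<Phi>s!q!0)" for q
  have ne: "\<forall>\<Phi>\<in>set \<Phi>s. \<Phi> \<noteq> []" using Suc(3) by (metis in_set_conv_nth list.size(3) nat.distinct(1))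
  have hl: "length (hd \<Phi>s) = Suc (Suc L')" using Suc(2,3) by (simp add: hd_conv_nth)
  have pc: "ann_par \<Phi>s = (block_diag (map W [0..<n]), stack_vec (map B [0..<n])) # ann_par (map tl \<Phi>s)"
    unfolding par_cons[OF Suc(2) hl ne] W_def B_def n_def by (simp add: map_conv_idx[of _ \<Phi>s])
  have tlne: "map tl \<Phi>s \<noteq> []" using Suc(2) by simp
  have restne: "ann_par (map tl \<Phi>s) \<noteq> []" unfolding ann_par_def using Suc(2) hl by (simp add: hd_map)
  have lay: "\<And>q. q < n \<Longrightarrow> dim_row (W q) = dim_vec (B q)"
    using Suc(3) unfolding n_def W_def B_def is_ANN_def by auto
  have nn: "\<And>q. q < n \<Longrightarrow> \<Phi>s!q \<noteq> []"
  proof -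
    fix q assume "q < n"
    with Suc(3) n_def have "length (\<Phi>s!q) = Suc (Suc L')" by blast
    then show "\<Phi>s!q \<noteq> []" by auto
  qed
  have Ic: "\<And>q. q < n \<Longrightarrow> ann_I (\<Phi>s!q) = dim_col (W q)"
    using nn unfolding W_def ann_I_def by (simp add: hd_conv_nth)
  have split: "\<And>q. q < n \<Longrightarrow> \<Phi>s!q = (W q, B q) # tl (\<Phi>s!q)"
    unfolding W_def B_def using Suc(3) n_def by (intro list_split0) auto
  have tlwf: "\<And>q. q < n \<Longrightarrow> is_ANN (tl (\<Phi>s!q)) \<and> ann_I (tl (\<Phi>s!q)) = dim_row (W q)"
  proof -
    fix q assume q: "q < n"
    have "is_ANN ((W q, B q) # tl (\<Phi>s!q))" using split[OF q] Suc(3) q n_def by metis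
    moreover have "tl (\<Phi>s!q) \<noteq> []" using Suc(3) q n_def by (cases "\<Phi>s!q") auto
    ultimately show "is_ANN (tl (\<Phi>s!q)) \<and> ann_I (tl (\<Phi>s!q)) = dim_row (W q)"
      using is_ANN_cons[of "W q" "B q" "tl (\<Phi>s!q)"] by blast
  qed
  have e1: "block_diag (map W [0..<n]) *\<^sub>v stack_vec (map xf [0..<n]) = stack_vec (map (\<lambda>q. W q *\<^sub>v xf q) [0..<n])"
    by (rule block_mult) (use Suc(4) Ic n_def in auto)
  have e2: "stack_vec (map (\<lambda>q. W q *\<^sub>v xf q) [0..<n]) + stack_vec (map B [0..<n])
       = stack_vec (map (\<lambda>q. W q *\<^sub>v xf q + B q) [0..<n])"
    by (rule stack_add) (use lay in auto)
  define xf' where "xf' q = map_vec a (W q *\<^sub>v xf q + B q)" for q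
  have e3: "map_vec a (stack_vec (map (\<lambda>q. W q *\<^sub>v xf q + B q) [0..<n])) = stack_vec (map xf' [0..<n])"
    unfolding stack_map map_map o_def xf'_def by (rule refl)
  have IH: "realize_aux a (ann_par (map tl \<Phi>s)) (stack_vec (map xf' [0..<length (map tl \<Phi>s)]))
       = stack_vec (map (\<lambda>q. realize_aux a (map tl \<Phi>s!q) (xf' q)) [0..<length (map tl \<Phi>s)])"
  proof (rule Suc.IH[OF tlne])
    show "\<forall>q<length (map tl \<Phi>s). is_ANN (map tl \<Phi>s ! q) \<and> length (map tl \<Phi>s ! q) = Suc L'"
      using tlwf Suc(3) n_def by auto
    show "\<forall>q<length (map tl \<Phi>s). xf' q \<in> carrier_vec (ann_I (map tl \<Phi>s ! q))"
    proof (intro allI impI)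
      fix q assume "q < length (map tl \<Phi>s)"
      then have q: "q < n" using n_def by simp
      have "xf q \<in> carrier_vec (ann_I (\<Phi>s!q))" using Suc(4) q n_def by blast
      then have xq: "xf q \<in> carrier_vec (dim_col (W q))" using Ic[OF q] by simp
      have "xf' q \<in> carrier_vec (dim_row (W q))" unfolding xf'_def map_carrier_vec
        by (rule affine_carrier[OF xq]) (use lay[OF q] in simp)
      then show "xf' q \<in> carrier_vec (ann_I (map tl \<Phi>s ! q))" using tlwf[OF q] q n_def by simp
    qed
  qed
  have e4: "\<And>q. q < n \<Longrightarrow> realize_aux a (\<Phi>s!q) (xf q) = realize_aux a (tl (\<Phi>s!q)) (xf' q)"
  proof -
    fix q assume q: "q < n"
    have "tl (\<Phi>s!q) \<noteq> []" using Suc(3) q n_def by (cases "\<Phi>s!q") auto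
    then show "realize_aux a (\<Phi>s!q) (xf q) = realize_aux a (tl (\<Phi>s!q)) (xf' q)"
      unfolding xf'_def by (subst split[OF q]) (simp only: realize_aux_cons if_False)
  qed
  have "realize_aux a (ann_par \<Phi>s) (stack_vec (map xf [0..<n]))
      = realize_aux a (ann_par (map tl \<Phi>s)) (stack_vec (map xf' [0..<n]))"
    unfolding pc using restne by (simp only: realize_aux_cons if_False e1 e2 e3)
  also have "\<dots> = stack_vec (map (\<lambda>q. realize_aux a (tl (\<Phi>s!q)) (xf' q)) [0..<n])"
  proof -
    have ln: "length (map tl \<Phi>s) = n" using n_def by simp
    have me: "map (\<lambda>q. realize_aux a (map tl \<Phi>s ! q) (xf' q)) [0..<n] = map (\<lambda>q. realize_aux a (tl (\<Phi>s!q)) (xf' q)) [0..<n]"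
      by (rule map_upt_cong) (simp add: n_def)
    show ?thesis using IH unfolding ln me .
  qed
  also have "\<dots> = stack_vec (map (\<lambda>q. realize_aux a (\<Phi>s!q) (xf q)) [0..<n])"
    by (rule arg_cong[where f=stack_vec], rule map_upt_cong, rule e4[symmetric])
  finally show ?case unfolding n_def .
qed

lemma mn_ge: "x \<in> set xs \<Longrightarrow> x \<le> maxnorm xs"
  unfolding maxnorm_def by simp

lemma mn_le: "xs \<noteq> [] \<Longrightarrow> (\<And>x. x \<in> set xs \<Longrightarrow> x \<le> b) \<Longrightarrow> maxnorm xs \<le> b"
  unfolding maxnorm_def by simp

lemma D_I: "hd (ann_D \<Phi>) = ann_I \<Phi>" unfolding ann_D_def by simp
lemma D_O: "\<Phi> \<noteq> [] \<Longrightarrow> last (ann_D \<Phi>) = ann_O \<Phi>" unfolding ann_D_def ann_O_def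
  by (simp add: last_map)
lemma D_len: "length (ann_D \<Phi>) = Suc (length \<Phi>)" unfolding ann_D_def by simp
lemma D_ne: "ann_D \<Phi> \<noteq> []" unfolding ann_D_def by simp

lemma I_le_mn: "ann_I \<Phi> \<le> maxnorm (ann_D \<Phi>)"
  by (rule mn_ge) (simp add: ann_D_def)
lemma O_le_mn: "\<Phi> \<noteq> [] \<Longrightarrow> ann_O \<Phi> \<le> maxnorm (ann_D \<Phi>)"
  by (rule mn_ge) (metis D_O D_ne last_in_set)

lemma mn_pos: "is_ANN \<Phi> \<Longrightarrow> 1 \<le> maxnorm (ann_D \<Phi>)"
proof -
  assume "is_ANN \<Phi>"
  then have "0 < dim_col (fst (hd \<Phi>))" unfolding is_ANN_def by (auto simp: hd_conv_nth)
  then show ?thesis using I_le_mn[of \<Phi>] unfolding ann_I_def by linarith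
qed

locale sumctx = parctx +
  fixes m p :: nat
  assumes Im: "\<And>q. q < length \<Phi>s \<Longrightarrow> ann_I (\<Phi>s ! q) = m"
    and Oo: "\<And>q. q < length \<Phi>s \<Longrightarrow> ann_O (\<Phi>s ! q) = p"
begin

lemma mpos: "0 < m"
proof -
  have "is_ANN (\<Phi>s!0)" using wf npos by simp
  then have "0 < dim_col (fst (hd (\<Phi>s!0)))" unfolding is_ANN_def by (auto simp: hd_conv_nth)
  then show ?thesis using Im[OF npos] unfolding ann_I_def by simp
qed

lemma opos: "0 < p"
proof -
  have "L - 1 < L" using Lpos by simp
  with wf_layer[OF npos] have "0 < dim_row (fst (\<Phi>s!0!(L-1)))" by blast
  then show ?thesis using O_nth[OF npos] Oo[OF npos] by simp
qed

definition "Tn = ann_A (transpose_mat (id_row_blocks m n)) (0\<^sub>v (n * m))"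
definition "Sn = ann_A (id_row_blocks p n) (0\<^sub>v p)"

lemma hdI: "ann_I (hd \<Phi>s) = m" using Im[OF npos] ne by (simp add: hd_conv_nth)
lemma hdO: "ann_O (hd \<Phi>s) = p" using Oo[OF npos] ne by (simp add: hd_conv_nth)

lemma sum_eq: "ann_sum \<Phi>s = ann_comp Sn (ann_comp (ann_par \<Phi>s) Tn)"
  unfolding ann_sum_def Sn_def Tn_def ann_S_def ann_T_def hdI hdO by simp

lemma T_props: "is_ANN Tn \<and> ann_I Tn = m \<and> ann_O Tn = n * m \<and> length Tn = 1 \<and> ann_D Tn = [m, n*m]
   \<and> (\<forall>x. realize_aux a Tn x = transpose_mat (id_row_blocks m n) *\<^sub>v x + 0\<^sub>v (n * m))"
  unfolding Tn_def using annA_props[of "transpose_mat (id_row_blocks m n)" "0\<^sub>v (n * m)"] mpos npos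
  by (simp add: id_row_blocks_def)

lemma S_props: "is_ANN Sn \<and> ann_I Sn = n * p \<and> ann_O Sn = p \<and> length Sn = 1 \<and> ann_D Sn = [n*p, p]
   \<and> (\<forall>x. realize_aux a Sn x = id_row_blocks p n *\<^sub>v x + 0\<^sub>v p)"
  unfolding Sn_def using annA_props[of "id_row_blocks p n" "0\<^sub>v p"] opos npos
  by (simp add: id_row_blocks_def)

lemma parI: "ann_I (ann_par \<Phi>s) = n * m" unfolding par_I using Im by simp
lemma parO: "ann_O (ann_par \<Phi>s) = n * p" unfolding par_O using Oo by simp

lemma PT: "is_ANN (ann_comp (ann_par \<Phi>s) Tn) \<and> ann_I (ann_comp (ann_par \<Phi>s) Tn) = m
    \<and> ann_O (ann_comp (ann_par \<Phi>s) Tn) = n * p \<and> length (ann_comp (ann_par \<Phi>s) Tn) = L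
    \<and> (\<forall>x \<in> carrier_vec m. realize_aux a (ann_comp (ann_par \<Phi>s) Tn) x
          = stack_vec (map (\<lambda>q. realize_aux a (\<Phi>s!q) x) [0..<n]))"
proof -
  have c: "is_ANN (ann_comp (ann_par \<Phi>s) Tn) \<and> ann_I (ann_comp (ann_par \<Phi>s) Tn) = ann_I Tn
    \<and> ann_O (ann_comp (ann_par \<Phi>s) Tn) = ann_O (ann_par \<Phi>s)
    \<and> length (ann_comp (ann_par \<Phi>s) Tn) = length (ann_par \<Phi>s) + length Tn - 1
    \<and> (\<forall>x \<in> carrier_vec (ann_I Tn). realize_aux a (ann_comp (ann_par \<Phi>s) Tn) x
          = realize_aux a (ann_par \<Phi>s) (realize_aux a Tn x))"
    by (rule comp_props) (use par_wf T_props parI in auto)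
  have R: "realize_aux a (ann_comp (ann_par \<Phi>s) Tn) x = stack_vec (map (\<lambda>q. realize_aux a (\<Phi>s!q) x) [0..<n])"
    if x: "x \<in> carrier_vec m" for x
  proof -
    have "realize_aux a Tn x = stack_vec (map (\<lambda>_. x) [0..<n])"
      using T_props T_apply[OF x mpos, of n] right_zero_vec[of _ "n*m"] x
      by (metis add_carrier_vec carrier_mat_triv mult_mat_vec_carrier index_transpose_mat(2,3) id_row_blocks_def dim_row_mat(1) dim_col_mat(1))
    moreover have "realize_aux a (ann_par \<Phi>s) (stack_vec (map (\<lambda>_. x) [0..<n]))
        = stack_vec (map (\<lambda>q. realize_aux a (\<Phi>s!q) x) [0..<n])"
    proof (rule par_realize[of \<Phi>s "L - 1" "\<lambda>_. x" a])
      show "\<Phi>s \<noteq> []" by (rule ne)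
      show "\<forall>q<length \<Phi>s. is_ANN (\<Phi>s ! q) \<and> length (\<Phi>s ! q) = Suc (L - 1)" using wf len Lpos by simp
      show "\<forall>q<length \<Phi>s. x \<in> carrier_vec (ann_I (\<Phi>s ! q))" using Im x by simp
    qed
    ultimately show ?thesis using c T_props x by simp
  qed
  show ?thesis using c T_props parI parO par_len R Lpos by simp
qed

lemma sum_props: "is_ANN (ann_sum \<Phi>s) \<and> ann_I (ann_sum \<Phi>s) = m
    \<and> ann_O (ann_sum \<Phi>s) = p \<and> length (ann_sum \<Phi>s) = L
    \<and> (\<forall>x \<in> carrier_vec m. \<forall>i<p. realize_aux a (ann_sum \<Phi>s) x $ i = (\<Sum>q<n. realize_aux a (\<Phi>s!q) x $ i))"
proof -
  have c: "is_ANN (ann_comp Sn (ann_comp (ann_par \<Phi>s) Tn)) \<and> ann_I (ann_comp Sn (ann_comp (ann_par \<Phi>s) Tn)) = ann_I (ann_comp (ann_par \<Phi>s) Tn)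
    \<and> ann_O (ann_comp Sn (ann_comp (ann_par \<Phi>s) Tn)) = ann_O Sn
    \<and> length (ann_comp Sn (ann_comp (ann_par \<Phi>s) Tn)) = length Sn + length (ann_comp (ann_par \<Phi>s) Tn) - 1
    \<and> (\<forall>x \<in> carrier_vec (ann_I (ann_comp (ann_par \<Phi>s) Tn)). realize_aux a (ann_comp Sn (ann_comp (ann_par \<Phi>s) Tn)) x
          = realize_aux a Sn (realize_aux a (ann_comp (ann_par \<Phi>s) Tn) x))"
    by (rule comp_props) (use PT S_props in auto)
  have R: "realize_aux a (ann_sum \<Phi>s) x $ i = (\<Sum>q<n. realize_aux a (\<Phi>s!q) x $ i)"
    if x: "x \<in> carrier_vec m" and i: "i < p" for x i
  proof -
    have rc: "\<forall>q<n. realize_aux a (\<Phi>s!q) x \<in> carrier_vec p"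
      using realize_carrier[of _ x a] wf Im Oo x by metis
    have "realize_aux a (ann_sum \<Phi>s) x = id_row_blocks p n *\<^sub>v stack_vec (map (\<lambda>q. realize_aux a (\<Phi>s!q) x) [0..<n]) + 0\<^sub>v p"
      unfolding sum_eq using c PT S_props x by simp
    also have "\<dots> $ i = (id_row_blocks p n *\<^sub>v stack_vec (map (\<lambda>q. realize_aux a (\<Phi>s!q) x) [0..<n])) $ i"
      using i by (simp add: id_row_blocks_def)
    also have "\<dots> = (\<Sum>q<n. realize_aux a (\<Phi>s!q) x $ i)" by (rule S_apply[OF rc i])
    finally show ?thesis .
  qed
  show ?thesis unfolding sum_eq[symmetric] using c PT S_props R unfolding sum_eq by simp
qed

lemma sum_D: "ann_D (ann_sum \<Phi>s) = butlast (m # tl (map (\<lambda>j. \<Sum>q<n. ann_D (\<Phi>s!q) ! j) [0..<Suc L])) @ [p]"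
proof -
  have ne1: "ann_comp (ann_par \<Phi>s) Tn \<noteq> []" using PT is_ANN_nonempty by blast
  have "ann_D (ann_sum \<Phi>s) = butlast (ann_D (ann_comp (ann_par \<Phi>s) Tn)) @ tl (ann_D Sn)"
    unfolding sum_eq using S_props ne1 is_ANN_nonempty by (intro comp_D) auto
  also have "ann_D (ann_comp (ann_par \<Phi>s) Tn) = butlast (ann_D Tn) @ tl (ann_D (ann_par \<Phi>s))"
    using par_wf T_props is_ANN_nonempty by (intro comp_D) auto
  finally show ?thesis using T_props S_props unfolding par_D by simp
qed

lemma sum_mn: "maxnorm (ann_D (ann_sum \<Phi>s)) \<le> (\<Sum>q<n. maxnorm (ann_D (\<Phi>s!q)))"
proof (rule mn_le)
  show "ann_D (ann_sum \<Phi>s) \<noteq> []" by (rule D_ne)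
  let ?S = "\<Sum>q<n. maxnorm (ann_D (\<Phi>s!q))"
  have one: "maxnorm (ann_D (\<Phi>s!0)) \<le> ?S"
    using npos by (intro member_le_sum) auto
  have m_le: "m \<le> ?S" using I_le_mn[of "\<Phi>s!0"] Im[OF npos] one by simp
  have o_le: "p \<le> ?S" using O_le_mn[of "\<Phi>s!0"] Oo[OF npos] one wf[OF npos] is_ANN_nonempty by fastforce
  have j_le: "(\<Sum>q<n. ann_D (\<Phi>s!q) ! j) \<le> ?S" if j: "j \<le> L" for j
  proof (rule sum_mono)
    fix q assume "q \<in> {..<n}"
    then have "ann_D (\<Phi>s!q) ! j \<in> set (ann_D (\<Phi>s!q))" using len j by (simp add: D_len)
    then show "ann_D (\<Phi>s!q) ! j \<le> maxnorm (ann_D (\<Phi>s!q))" by (rule mn_ge)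
  qed
  fix y assume y: "y \<in> set (ann_D (ann_sum \<Phi>s))"
  have "set (ann_D (ann_sum \<Phi>s)) \<subseteq> {m, p} \<union> set (map (\<lambda>j. \<Sum>q<n. ann_D (\<Phi>s!q) ! j) [0..<Suc L])"
    unfolding sum_D by (auto dest!: in_set_butlastD list.set_sel(2)[rotated] simp del: upt_Suc)
  then show "y \<le> ?S" using y m_le o_le j_le by (auto simp del: upt_Suc)
qed

end

lemma O_pos: "is_ANN \<Phi> \<Longrightarrow> 0 < ann_O \<Phi>"
proof -
  assume w: "is_ANN \<Phi>"
  then have ne: "\<Phi> \<noteq> []" by (rule is_ANN_nonempty)
  have "length \<Phi> - 1 < length \<Phi>" using ne by simp
  then have "0 < dim_row (fst (\<Phi> ! (length \<Phi> - 1)))" using w unfolding is_ANN_def by blast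
  then show ?thesis using ne unfolding ann_O_def by (simp add: last_conv_nth)
qed

lemma I_pos: "is_ANN \<Phi> \<Longrightarrow> 0 < ann_I \<Phi>"
proof -
  assume w: "is_ANN \<Phi>"
  then have ne: "\<Phi> \<noteq> []" by (rule is_ANN_nonempty)
  then have "0 < length \<Phi>" by simp
  then have "0 < dim_col (fst (\<Phi> ! 0))" using w unfolding is_ANN_def by blast
  then show ?thesis using ne unfolding ann_I_def by (simp add: hd_conv_nth)
qed

lemma smult_one_index:
  fixes c :: real
  assumes "y \<in> carrier_vec p" "i < p"
  shows "((c \<cdot>\<^sub>m 1\<^sub>m p) *\<^sub>v y + 0\<^sub>v p) $ i = c * y $ i"
proof -
  have "((c \<cdot>\<^sub>m 1\<^sub>m p) *\<^sub>v y + 0\<^sub>v p) $ i = ((c \<cdot>\<^sub>m 1\<^sub>m p) *\<^sub>v y) $ i" using assms by simp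
  also have "\<dots> = (\<Sum>j\<in>{0..<p}. (c \<cdot>\<^sub>m 1\<^sub>m p) $$ (i,j) * y $ j)"
    using assms by (simp add: scalar_prod_def row_def)
  also have "\<dots> = (\<Sum>j\<in>{0..<p}. if j = i then c * y $ j else 0)"
    by (rule sum.cong) (use assms in \<open>auto simp: algebra_simps\<close>)
  also have "\<dots> = c * y $ i" using assms by (simp add: sum.delta')
  finally show ?thesis .
qed

lemma scal_props:
  assumes w: "is_ANN \<Phi>"
  shows "is_ANN (ann_scalar c \<Phi>) \<and> ann_I (ann_scalar c \<Phi>) = ann_I \<Phi> \<and> ann_O (ann_scalar c \<Phi>) = ann_O \<Phi>
    \<and> length (ann_scalar c \<Phi>) = length \<Phi> \<and> ann_D (ann_scalar c \<Phi>) = ann_D \<Phi>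
    \<and> (\<forall>x \<in> carrier_vec (ann_I \<Phi>). \<forall>i < ann_O \<Phi>. realize_aux a (ann_scalar c \<Phi>) x $ i = c * realize_aux a \<Phi> x $ i)"
proof -
  define p where "p = ann_O \<Phi>"
  have pp: "0 < p" unfolding p_def by (rule O_pos[OF w])
  define A where "A = ann_A (c \<cdot>\<^sub>m 1\<^sub>m p) (0\<^sub>v p)"
  have Ap: "is_ANN A \<and> ann_I A = p \<and> ann_O A = p \<and> length A = 1 \<and> ann_D A = [p, p]
   \<and> (\<forall>x. realize_aux a A x = (c \<cdot>\<^sub>m 1\<^sub>m p) *\<^sub>v x + 0\<^sub>v p)"
    unfolding A_def using annA_props[of "c \<cdot>\<^sub>m 1\<^sub>m p" "0\<^sub>v p" a] pp by simp
  have sc: "ann_scalar c \<Phi> = ann_comp A \<Phi>" unfolding ann_scalar_def A_def p_def by simp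
  have c: "is_ANN (ann_comp A \<Phi>) \<and> ann_I (ann_comp A \<Phi>) = ann_I \<Phi>
    \<and> ann_O (ann_comp A \<Phi>) = ann_O A \<and> length (ann_comp A \<Phi>) = length A + length \<Phi> - 1
    \<and> (\<forall>x \<in> carrier_vec (ann_I \<Phi>). realize_aux a (ann_comp A \<Phi>) x = realize_aux a A (realize_aux a \<Phi> x))"
    by (rule comp_props) (use Ap w p_def in auto)
  have D: "ann_D (ann_comp A \<Phi>) = ann_D \<Phi>"
  proof -
    have "ann_D (ann_comp A \<Phi>) = butlast (ann_D \<Phi>) @ tl (ann_D A)"
      using Ap w is_ANN_nonempty by (intro comp_D) auto
    also have "\<dots> = butlast (ann_D \<Phi>) @ [last (ann_D \<Phi>)]"
      using Ap D_O[OF is_ANN_nonempty[OF w]] p_def by simp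
    also have "\<dots> = ann_D \<Phi>" using D_ne by simp
    finally show ?thesis .
  qed
  have R: "realize_aux a (ann_comp A \<Phi>) x $ i = c * realize_aux a \<Phi> x $ i"
    if x: "x \<in> carrier_vec (ann_I \<Phi>)" and i: "i < ann_O \<Phi>" for x i
  proof -
    have y: "realize_aux a \<Phi> x \<in> carrier_vec p" unfolding p_def by (rule realize_carrier[OF w x])
    show ?thesis using c Ap x smult_one_index[OF y, of i c] i p_def by simp
  qed
  show ?thesis unfolding sc using c Ap D R p_def by simp
qed

locale Jctx =
  fixes J :: ann and dd :: nat and a :: "real \<Rightarrow> real"
  assumes Jwf: "is_ANN J" and JD: "ann_D J = [1, dd, 1]"
    and Jid: "\<forall>x \<in> carrier_vec 1. realize_aux a J x = x"
begin

lemma JI: "ann_I J = 1" using D_I[of J] JD by simp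
lemma JO: "ann_O J = 1" using D_O[of J] JD is_ANN_nonempty[OF Jwf] by simp
lemma ddpos: "1 \<le> dd"
proof -
  have "dd = dim_row (fst (J!0))" using JD unfolding ann_D_def by (cases J) auto
  moreover have "0 < length J" using Jwf is_ANN_nonempty by auto
  then have "0 < dim_row (fst (J!0))" using Jwf unfolding is_ANN_def by blast
  ultimately show ?thesis by simp
qed

lemma pow_props: "is_ANN (ann_pow J k) \<and> ann_I (ann_pow J k) = 1 \<and> ann_O (ann_pow J k) = 1
   \<and> length (ann_pow J k) = Suc k \<and> set (ann_D (ann_pow J k)) \<subseteq> {1, dd}
   \<and> (\<forall>x \<in> carrier_vec 1. realize_aux a (ann_pow J k) x = x)"
proof (induction k)
  case 0
  have e: "ann_pow J 0 = ann_A (1\<^sub>m 1) (0\<^sub>v 1)" by (simp add: ann_A_def JO)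
  have p: "is_ANN (ann_A (1\<^sub>m 1) (0\<^sub>v 1)) \<and> ann_I (ann_A (1\<^sub>m 1) (0\<^sub>v 1)) = 1 \<and> ann_O (ann_A (1\<^sub>m 1) (0\<^sub>v 1)) = 1
   \<and> length (ann_A (1\<^sub>m 1) (0\<^sub>v 1)) = 1 \<and> ann_D (ann_A (1\<^sub>m 1) (0\<^sub>v 1)) = [1, 1]
   \<and> (\<forall>x. realize_aux a (ann_A (1\<^sub>m 1) (0\<^sub>v (1::nat))) x = 1\<^sub>m 1 *\<^sub>v x + 0\<^sub>v 1)"
    using annA_props[of "1\<^sub>m 1" "0\<^sub>v 1" a] by simp
  have r: "\<forall>x \<in> carrier_vec 1. realize_aux a (ann_pow J 0) x = x"
  proof
    fix x :: "real vec" assume x: "x \<in> carrier_vec 1"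
    have "realize_aux a (ann_pow J 0) x = 1\<^sub>m 1 *\<^sub>v x + 0\<^sub>v 1" unfolding e using p by blast
    also have "\<dots> = x" using one_mult_mat_vec[OF x] right_zero_vec[OF x] by simp
    finally show "realize_aux a (ann_pow J 0) x = x" .
  qed
  have s: "set (ann_D (ann_pow J 0)) \<subseteq> {1, dd}" unfolding e using p by simp
  have q: "is_ANN (ann_pow J 0) \<and> ann_I (ann_pow J 0) = 1 \<and> ann_O (ann_pow J 0) = 1
   \<and> length (ann_pow J 0) = Suc 0" unfolding e using p by simp
  show ?case using q s r by blast
next
  case (Suc k)
  have c: "is_ANN (ann_comp J (ann_pow J k)) \<and> ann_I (ann_comp J (ann_pow J k)) = ann_I (ann_pow J k)
    \<and> ann_O (ann_comp J (ann_pow J k)) = ann_O J \<and> length (ann_comp J (ann_pow J k)) = length J + length (ann_pow J k) - 1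
    \<and> (\<forall>x \<in> carrier_vec (ann_I (ann_pow J k)). realize_aux a (ann_comp J (ann_pow J k)) x = realize_aux a J (realize_aux a (ann_pow J k) x))"
    by (rule comp_props[OF Jwf]) (use Suc.IH JI in simp_all)
  have lJ: "length J = 2" using D_len[of J] JD by simp
  have pw: "is_ANN (ann_pow J k)" using Suc.IH by blast
  have "ann_D (ann_comp J (ann_pow J k)) = butlast (ann_D (ann_pow J k)) @ tl (ann_D J)"
    by (rule comp_D[OF is_ANN_nonempty[OF Jwf] is_ANN_nonempty[OF pw]])
  then have "set (ann_D (ann_comp J (ann_pow J k))) \<subseteq> set (ann_D (ann_pow J k)) \<union> set (ann_D J)"
    using set_butlast_tl by metis
  then have s: "set (ann_D (ann_comp J (ann_pow J k))) \<subseteq> {1, dd}" using Suc.IH JD by auto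
  have r: "\<forall>x \<in> carrier_vec 1. realize_aux a (ann_pow J (Suc k)) x = x"
  proof
    fix x :: "real vec" assume x: "x \<in> carrier_vec 1"
    have x1: "realize_aux a (ann_pow J k) x = x" using Suc.IH x by blast
    have "realize_aux a (ann_pow J (Suc k)) x = realize_aux a J (realize_aux a (ann_pow J k) x)"
      using c x Suc.IH by simp
    also have "\<dots> = x" unfolding x1 using Jid x by blast
    finally show "realize_aux a (ann_pow J (Suc k)) x = x" .
  qed
  have q: "is_ANN (ann_pow J (Suc k)) \<and> ann_I (ann_pow J (Suc k)) = 1 \<and> ann_O (ann_pow J (Suc k)) = 1
   \<and> length (ann_pow J (Suc k)) = Suc (Suc k)" using c Suc.IH JO lJ by simp
  show ?case using q s r by simp
qed

lemma ext_props:
  assumes w: "is_ANN \<Phi>" and O1: "ann_O \<Phi> = 1" and Lm: "length \<Phi> \<le> Lm"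
  shows "is_ANN (ann_ext Lm J \<Phi>) \<and> ann_I (ann_ext Lm J \<Phi>) = ann_I \<Phi> \<and> ann_O (ann_ext Lm J \<Phi>) = 1
    \<and> length (ann_ext Lm J \<Phi>) = Lm
    \<and> ann_D (ann_ext Lm J \<Phi>) = butlast (ann_D \<Phi>) @ tl (ann_D (ann_pow J (Lm - length \<Phi>)))
    \<and> maxnorm (ann_D (ann_ext Lm J \<Phi>)) \<le> max (maxnorm (ann_D \<Phi>)) dd
    \<and> (\<forall>x \<in> carrier_vec (ann_I \<Phi>). realize_aux a (ann_ext Lm J \<Phi>) x = realize_aux a \<Phi> x)"
proof -
  let ?P = "ann_pow J (Lm - length \<Phi>)"
  have P: "is_ANN ?P \<and> ann_I ?P = 1 \<and> ann_O ?P = 1 \<and> length ?P = Suc (Lm - length \<Phi>) \<and> set (ann_D ?P) \<subseteq> {1, dd}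
   \<and> (\<forall>x \<in> carrier_vec 1. realize_aux a ?P x = x)" by (rule pow_props)
  have c: "is_ANN (ann_comp ?P \<Phi>) \<and> ann_I (ann_comp ?P \<Phi>) = ann_I \<Phi>
    \<and> ann_O (ann_comp ?P \<Phi>) = ann_O ?P \<and> length (ann_comp ?P \<Phi>) = length ?P + length \<Phi> - 1
    \<and> (\<forall>x \<in> carrier_vec (ann_I \<Phi>). realize_aux a (ann_comp ?P \<Phi>) x = realize_aux a ?P (realize_aux a \<Phi> x))"
    by (rule comp_props[OF _ w]) (use P O1 in simp_all)
  have D: "ann_D (ann_comp ?P \<Phi>) = butlast (ann_D \<Phi>) @ tl (ann_D ?P)"
    using P w is_ANN_nonempty by (intro comp_D) auto
  have mn: "maxnorm (ann_D (ann_comp ?P \<Phi>)) \<le> max (maxnorm (ann_D \<Phi>)) dd"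
  proof (rule mn_le[OF D_ne])
    fix y assume "y \<in> set (ann_D (ann_comp ?P \<Phi>))"
    then have "y \<in> set (butlast (ann_D \<Phi>) @ tl (ann_D ?P))" unfolding D .
    then have "y \<in> set (ann_D \<Phi>) \<union> set (ann_D ?P)" using set_butlast_tl[of "ann_D \<Phi>" "ann_D ?P"] by (rule subsetD[rotated])
    moreover have "set (ann_D ?P) \<subseteq> {1, dd}" using P by blast
    ultimately have "y \<in> set (ann_D \<Phi>) \<or> y \<in> {1, dd}" by blast
    moreover have "1 \<le> maxnorm (ann_D \<Phi>)" by (rule mn_pos[OF w])
    ultimately show "y \<le> max (maxnorm (ann_D \<Phi>)) dd"
    proof (elim disjE)
      assume "y \<in> set (ann_D \<Phi>)"
      then have "y \<le> maxnorm (ann_D \<Phi>)" by (rule mn_ge)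
      then show ?thesis by simp
    next
      assume "y \<in> {1, dd}" "1 \<le> maxnorm (ann_D \<Phi>)"
      then show ?thesis by (auto simp: max_def)
    qed
  qed
  have R: "\<forall>x \<in> carrier_vec (ann_I \<Phi>). realize_aux a (ann_comp ?P \<Phi>) x = realize_aux a \<Phi> x"
  proof
    fix x :: "real vec" assume x: "x \<in> carrier_vec (ann_I \<Phi>)"
    have y: "realize_aux a \<Phi> x \<in> carrier_vec 1" using realize_carrier[OF w x] O1 by simp
    have "realize_aux a (ann_comp ?P \<Phi>) x = realize_aux a ?P (realize_aux a \<Phi> x)" using c x by blast
    also have "\<dots> = realize_aux a \<Phi> x" using P y by blast
    finally show "realize_aux a (ann_comp ?P \<Phi>) x = realize_aux a \<Phi> x" .
  qed
  have e: "ann_ext Lm J \<Phi> = ann_comp ?P \<Phi>" unfolding ann_ext_def ann_L_def by simp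
  have l: "length (ann_comp ?P \<Phi>) = Lm" using c P Lm by simp
  have q: "is_ANN (ann_comp ?P \<Phi>) \<and> ann_I (ann_comp ?P \<Phi>) = ann_I \<Phi> \<and> ann_O (ann_comp ?P \<Phi>) = 1"
    using c P by simp
  show ?thesis unfolding e using q l D mn R by blast
qed

end

lemma leaf_props:
  assumes w: "is_ANN \<Phi>" and I: "ann_I \<Phi> = d" and d: "0 < d" and wv: "v \<in> carrier_vec d"
  shows "is_ANN (ann_comp \<Phi> (ann_A (1\<^sub>m d) v)) \<and> ann_I (ann_comp \<Phi> (ann_A (1\<^sub>m d) v)) = d
    \<and> ann_O (ann_comp \<Phi> (ann_A (1\<^sub>m d) v)) = ann_O \<Phi> \<and> length (ann_comp \<Phi> (ann_A (1\<^sub>m d) v)) = length \<Phi>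
    \<and> ann_D (ann_comp \<Phi> (ann_A (1\<^sub>m d) v)) = ann_D \<Phi>
    \<and> (\<forall>x \<in> carrier_vec d. realize_aux a (ann_comp \<Phi> (ann_A (1\<^sub>m d) v)) x = realize_aux a \<Phi> (x + v))"
proof -
  let ?A = "ann_A (1\<^sub>m d) v"
  have dv: "dim_vec v = d" using wv by simp
  have A: "is_ANN ?A \<and> ann_I ?A = d \<and> ann_O ?A = d \<and> length ?A = 1 \<and> ann_D ?A = [d, d]
   \<and> (\<forall>x. realize_aux a ?A x = 1\<^sub>m d *\<^sub>v x + v)"
    using annA_props[of "1\<^sub>m d" v a] d dv by simp
  have c: "is_ANN (ann_comp \<Phi> ?A) \<and> ann_I (ann_comp \<Phi> ?A) = ann_I ?A
    \<and> ann_O (ann_comp \<Phi> ?A) = ann_O \<Phi> \<and> length (ann_comp \<Phi> ?A) = length \<Phi> + length ?A - 1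
    \<and> (\<forall>x \<in> carrier_vec (ann_I ?A). realize_aux a (ann_comp \<Phi> ?A) x = realize_aux a \<Phi> (realize_aux a ?A x))"
    by (rule comp_props[OF w]) (use A I in simp_all)
  have D: "ann_D (ann_comp \<Phi> ?A) = ann_D \<Phi>"
  proof -
    have "ann_D (ann_comp \<Phi> ?A) = butlast (ann_D ?A) @ tl (ann_D \<Phi>)"
      by (rule comp_D[OF is_ANN_nonempty[OF w]]) (simp add: ann_A_def)
    also have "\<dots> = hd (ann_D \<Phi>) # tl (ann_D \<Phi>)" using A D_I[of \<Phi>] I by simp
    also have "\<dots> = ann_D \<Phi>" using D_ne by simp
    finally show ?thesis .
  qed
  have R: "\<forall>x \<in> carrier_vec d. realize_aux a (ann_comp \<Phi> ?A) x = realize_aux a \<Phi> (x + v)"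
  proof
    fix x :: "real vec" assume x: "x \<in> carrier_vec d"
    have "realize_aux a (ann_comp \<Phi> ?A) x = realize_aux a \<Phi> (realize_aux a ?A x)" using c A x by simp
    also have "realize_aux a ?A x = x + v" using A one_mult_mat_vec[OF x] by simp
    finally show "realize_aux a (ann_comp \<Phi> ?A) x = realize_aux a \<Phi> (x + v)" .
  qed
  show ?thesis using c A D R by simp
qed

context Jctx
begin

lemma bp_props:
  assumes ne: "\<Phi>s \<noteq> []" and w: "\<forall>q<length \<Phi>s. is_ANN (\<Phi>s!q) \<and> ann_I (\<Phi>s!q) = m \<and> ann_O (\<Phi>s!q) = 1"
  shows "is_ANN (ann_boxplus J \<Phi>s) \<and> ann_I (ann_boxplus J \<Phi>s) = m \<and> ann_O (ann_boxplus J \<Phi>s) = 1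
     \<and> length (ann_boxplus J \<Phi>s) = Max (set (map ann_L \<Phi>s))
     \<and> (\<forall>x \<in> carrier_vec m. realize_aux a (ann_boxplus J \<Phi>s) x $ 0 = (\<Sum>q<length \<Phi>s. realize_aux a (\<Phi>s!q) x $ 0))
     \<and> maxnorm (ann_D (ann_boxplus J \<Phi>s)) \<le> (\<Sum>q<length \<Phi>s. max (maxnorm (ann_D (\<Phi>s!q))) dd)"
proof -
  define Lm where "Lm = Max (set (map ann_L \<Phi>s))"
  define \<Psi>s where "\<Psi>s = map (ann_ext Lm J) \<Phi>s"
  have le: "\<And>q. q < length \<Phi>s \<Longrightarrow> length (\<Phi>s!q) \<le> Lm"
    unfolding Lm_def ann_L_def by (intro Max_ge) auto
  have E: "\<And>q. q < length \<Phi>s \<Longrightarrow> is_ANN (ann_ext Lm J (\<Phi>s!q)) \<and> ann_I (ann_ext Lm J (\<Phi>s!q)) = ann_I (\<Phi>s!q) \<and> ann_O (ann_ext Lm J (\<Phi>s!q)) = 1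
    \<and> length (ann_ext Lm J (\<Phi>s!q)) = Lm
    \<and> ann_D (ann_ext Lm J (\<Phi>s!q)) = butlast (ann_D (\<Phi>s!q)) @ tl (ann_D (ann_pow J (Lm - length (\<Phi>s!q))))
    \<and> maxnorm (ann_D (ann_ext Lm J (\<Phi>s!q))) \<le> max (maxnorm (ann_D (\<Phi>s!q))) dd
    \<and> (\<forall>x \<in> carrier_vec (ann_I (\<Phi>s!q)). realize_aux a (ann_ext Lm J (\<Phi>s!q)) x = realize_aux a (\<Phi>s!q) x)"
    using ext_props w le by blast
  interpret S: sumctx \<Psi>s Lm m 1
  proof
    show "\<Psi>s \<noteq> []" unfolding \<Psi>s_def using ne by simp
    fix q assume q: "q < length \<Psi>s"
    then have q': "q < length \<Phi>s" unfolding \<Psi>s_def by simp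
    show "is_ANN (\<Psi>s ! q)" unfolding \<Psi>s_def using E[OF q'] q' by simp
    show "length (\<Psi>s ! q) = Lm" unfolding \<Psi>s_def using E[OF q'] q' by simp
    show "ann_I (\<Psi>s ! q) = m" unfolding \<Psi>s_def using E[OF q'] w q' by simp
    show "ann_O (\<Psi>s ! q) = 1" unfolding \<Psi>s_def using E[OF q'] q' by simp
  qed
  have bp: "ann_boxplus J \<Phi>s = ann_sum \<Psi>s" unfolding ann_boxplus_def \<Psi>s_def Lm_def by simp
  have ln: "length \<Psi>s = length \<Phi>s" unfolding \<Psi>s_def by simp
  have sp: "is_ANN (ann_sum \<Psi>s) \<and> ann_I (ann_sum \<Psi>s) = m
    \<and> ann_O (ann_sum \<Psi>s) = 1 \<and> length (ann_sum \<Psi>s) = Lm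
    \<and> (\<forall>x \<in> carrier_vec m. \<forall>i<1. realize_aux a (ann_sum \<Psi>s) x $ i = (\<Sum>q<length \<Psi>s. realize_aux a (\<Psi>s!q) x $ i))"
    by (rule S.sum_props)
  have R: "\<forall>x \<in> carrier_vec m. realize_aux a (ann_boxplus J \<Phi>s) x $ 0 = (\<Sum>q<length \<Phi>s. realize_aux a (\<Phi>s!q) x $ 0)"
  proof
    fix x :: "real vec" assume x: "x \<in> carrier_vec m"
    have "realize_aux a (ann_boxplus J \<Phi>s) x $ 0 = (\<Sum>q<length \<Psi>s. realize_aux a (\<Psi>s!q) x $ 0)"
      unfolding bp using sp x by blast
    also have "\<dots> = (\<Sum>q<length \<Phi>s. realize_aux a (\<Phi>s!q) x $ 0)" unfolding ln
    proof (rule sum.cong[OF refl])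
      fix q assume "q \<in> {..<length \<Phi>s}"
      then have q: "q < length \<Phi>s" by simp
      have "x \<in> carrier_vec (ann_I (\<Phi>s!q))" using w q x by simp
      then show "realize_aux a (\<Psi>s!q) x $ 0 = realize_aux a (\<Phi>s!q) x $ 0"
        unfolding \<Psi>s_def using E[OF q] q by simp
    qed
    finally show "realize_aux a (ann_boxplus J \<Phi>s) x $ 0 = (\<Sum>q<length \<Phi>s. realize_aux a (\<Phi>s!q) x $ 0)" .
  qed
  have mn: "maxnorm (ann_D (ann_boxplus J \<Phi>s)) \<le> (\<Sum>q<length \<Phi>s. max (maxnorm (ann_D (\<Phi>s!q))) dd)"
  proof -
    have "maxnorm (ann_D (ann_boxplus J \<Phi>s)) \<le> (\<Sum>q<length \<Psi>s. maxnorm (ann_D (\<Psi>s!q)))"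
      unfolding bp by (rule S.sum_mn)
    also have "\<dots> \<le> (\<Sum>q<length \<Phi>s. max (maxnorm (ann_D (\<Phi>s!q))) dd)" unfolding ln
    proof (rule sum_mono)
      fix q assume "q \<in> {..<length \<Phi>s}"
      then have q: "q < length \<Phi>s" by simp
      have eq: "\<Psi>s!q = ann_ext Lm J (\<Phi>s!q)" unfolding \<Psi>s_def using q by simp
      have "maxnorm (ann_D (ann_ext Lm J (\<Phi>s!q))) \<le> max (maxnorm (ann_D (\<Phi>s!q))) dd" using E[OF q] by blast
      then show "maxnorm (ann_D (\<Psi>s!q)) \<le> max (maxnorm (ann_D (\<Phi>s!q))) dd" by (simp only: eq)
    qed
    finally show ?thesis .
  qed
  show ?thesis unfolding bp using sp R mn Lm_def unfolding bp by simp
qed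

lemma bp_D_cong:
  assumes ne: "\<Phi>s \<noteq> []" and w: "\<forall>q<length \<Phi>s. is_ANN (\<Phi>s!q) \<and> ann_I (\<Phi>s!q) = m \<and> ann_O (\<Phi>s!q) = 1"
    and w': "\<forall>q<length \<Phi>s'. is_ANN (\<Phi>s'!q) \<and> ann_I (\<Phi>s'!q) = m \<and> ann_O (\<Phi>s'!q) = 1"
    and l: "length \<Phi>s' = length \<Phi>s" and D: "\<forall>q<length \<Phi>s. ann_D (\<Phi>s!q) = ann_D (\<Phi>s'!q)"
  shows "ann_D (ann_boxplus J \<Phi>s) = ann_D (ann_boxplus J \<Phi>s')"
proof -
  have ne': "\<Phi>s' \<noteq> []" using ne l by auto
  have lenq: "\<And>q. q < length \<Phi>s \<Longrightarrow> length (\<Phi>s'!q) = length (\<Phi>s!q)"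
    using D D_len by (metis Suc_inject)
  have mL: "map ann_L \<Phi>s = map ann_L \<Phi>s'"
    by (rule nth_equalityI) (use l lenq in \<open>auto simp: ann_L_def\<close>)
  define Lm where "Lm = Max (set (map ann_L \<Phi>s))"
  have Lm': "Lm = Max (set (map ann_L \<Phi>s'))" unfolding Lm_def mL ..
  define \<Psi>s where "\<Psi>s = map (ann_ext Lm J) \<Phi>s"
  define \<Psi>s' where "\<Psi>s' = map (ann_ext Lm J) \<Phi>s'"
  have le: "\<And>q. q < length \<Phi>s \<Longrightarrow> length (\<Phi>s!q) \<le> Lm"
    unfolding Lm_def ann_L_def by (intro Max_ge) auto
  have le': "\<And>q. q < length \<Phi>s' \<Longrightarrow> length (\<Phi>s'!q) \<le> Lm"
    unfolding Lm' ann_L_def by (intro Max_ge) auto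
  have E: "\<And>q. q < length \<Phi>s \<Longrightarrow> is_ANN (ann_ext Lm J (\<Phi>s!q)) \<and> ann_I (ann_ext Lm J (\<Phi>s!q)) = ann_I (\<Phi>s!q) \<and> ann_O (ann_ext Lm J (\<Phi>s!q)) = 1
    \<and> length (ann_ext Lm J (\<Phi>s!q)) = Lm
    \<and> ann_D (ann_ext Lm J (\<Phi>s!q)) = butlast (ann_D (\<Phi>s!q)) @ tl (ann_D (ann_pow J (Lm - length (\<Phi>s!q))))
    \<and> maxnorm (ann_D (ann_ext Lm J (\<Phi>s!q))) \<le> max (maxnorm (ann_D (\<Phi>s!q))) dd
    \<and> (\<forall>x \<in> carrier_vec (ann_I (\<Phi>s!q)). realize_aux a (ann_ext Lm J (\<Phi>s!q)) x = realize_aux a (\<Phi>s!q) x)"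
    using ext_props w le by blast
  have E': "\<And>q. q < length \<Phi>s' \<Longrightarrow> is_ANN (ann_ext Lm J (\<Phi>s'!q)) \<and> ann_I (ann_ext Lm J (\<Phi>s'!q)) = ann_I (\<Phi>s'!q) \<and> ann_O (ann_ext Lm J (\<Phi>s'!q)) = 1
    \<and> length (ann_ext Lm J (\<Phi>s'!q)) = Lm
    \<and> ann_D (ann_ext Lm J (\<Phi>s'!q)) = butlast (ann_D (\<Phi>s'!q)) @ tl (ann_D (ann_pow J (Lm - length (\<Phi>s'!q))))
    \<and> maxnorm (ann_D (ann_ext Lm J (\<Phi>s'!q))) \<le> max (maxnorm (ann_D (\<Phi>s'!q))) dd
    \<and> (\<forall>x \<in> carrier_vec (ann_I (\<Phi>s'!q)). realize_aux a (ann_ext Lm J (\<Phi>s'!q)) x = realize_aux a (\<Phi>s'!q) x)"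
    using ext_props w' le' by blast
  interpret S: sumctx \<Psi>s Lm m 1
  proof
    show "\<Psi>s \<noteq> []" unfolding \<Psi>s_def using ne by simp
    fix q assume q: "q < length \<Psi>s"
    then have q': "q < length \<Phi>s" unfolding \<Psi>s_def by simp
    show "is_ANN (\<Psi>s ! q)" unfolding \<Psi>s_def using E[OF q'] q' by simp
    show "length (\<Psi>s ! q) = Lm" unfolding \<Psi>s_def using E[OF q'] q' by simp
    show "ann_I (\<Psi>s ! q) = m" unfolding \<Psi>s_def using E[OF q'] w q' by simp
    show "ann_O (\<Psi>s ! q) = 1" unfolding \<Psi>s_def using E[OF q'] q' by simp
  qed
  interpret S': sumctx \<Psi>s' Lm m 1
  proof
    show "\<Psi>s' \<noteq> []" unfolding \<Psi>s'_def using ne' by simp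
    fix q assume q: "q < length \<Psi>s'"
    then have q': "q < length \<Phi>s'" unfolding \<Psi>s'_def by simp
    show "is_ANN (\<Psi>s' ! q)" unfolding \<Psi>s'_def using E'[OF q'] q' by simp
    show "length (\<Psi>s' ! q) = Lm" unfolding \<Psi>s'_def using E'[OF q'] q' by simp
    show "ann_I (\<Psi>s' ! q) = m" unfolding \<Psi>s'_def using E'[OF q'] w' q' by simp
    show "ann_O (\<Psi>s' ! q) = 1" unfolding \<Psi>s'_def using E'[OF q'] q' by simp
  qed
  have bp: "ann_boxplus J \<Phi>s = ann_sum \<Psi>s" unfolding ann_boxplus_def \<Psi>s_def Lm_def by simp
  have bp': "ann_boxplus J \<Phi>s' = ann_sum \<Psi>s'" unfolding ann_boxplus_def \<Psi>s'_def Lm' by simp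
  have DD: "\<And>q. q < length \<Phi>s \<Longrightarrow> ann_D (\<Psi>s!q) = ann_D (\<Psi>s'!q)"
  proof -
    fix q assume q: "q < length \<Phi>s"
    have q': "q < length \<Phi>s'" using q l by simp
    show "ann_D (\<Psi>s!q) = ann_D (\<Psi>s'!q)" unfolding \<Psi>s_def \<Psi>s'_def
      using E[OF q] E'[OF q'] q q' D lenq[OF q] by simp
  qed
  have "ann_D (ann_sum \<Psi>s) = ann_D (ann_sum \<Psi>s')"
    unfolding S.sum_D S'.sum_D
    using DD l unfolding \<Psi>s_def \<Psi>s'_def by (simp cong: map_upt_cong)
  then show ?thesis unfolding bp bp' .
qed

end

lemma sum_D_cong:
  assumes "sumctx \<Phi>s L m p" "sumctx \<Phi>s' L m p" "length \<Phi>s' = length \<Phi>s"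
    "\<forall>q<length \<Phi>s. ann_D (\<Phi>s!q) = ann_D (\<Phi>s'!q)"
  shows "ann_D (ann_sum \<Phi>s) = ann_D (ann_sum \<Phi>s')"
proof -
  interpret S: sumctx \<Phi>s L m p by (rule assms(1))
  interpret S': sumctx \<Phi>s' L m p by (rule assms(2))
  show ?thesis unfolding S.sum_D S'.sum_D using assms(3,4) by (simp cong: map_upt_cong)
qed

lemma in_C_comp:
  assumes f: "in_C m n f" and g: "in_C n p g"
  shows "in_C m p (\<lambda>x. g (f x))"
  unfolding in_C_def
proof (intro conjI ballI allI impI)
  fix x :: "real vec" assume x: "x \<in> carrier_vec m"
  then have fx: "f x \<in> carrier_vec n" using f unfolding in_C_def by blast
  then show "g (f x) \<in> carrier_vec p" using g unfolding in_C_def by blast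
  fix e :: real assume e: "0 < e"
  obtain d1 where d1: "d1 > 0" "\<forall>z \<in> carrier_vec n. (\<forall>i<n. \<bar>z $ i - f x $ i\<bar> < d1) \<longrightarrow> (\<forall>j<p. \<bar>g z $ j - g (f x) $ j\<bar> < e)"
    using g fx e unfolding in_C_def by blast
  obtain d where d: "d > 0" "\<forall>y \<in> carrier_vec m. (\<forall>i<m. \<bar>y $ i - x $ i\<bar> < d) \<longrightarrow> (\<forall>j<n. \<bar>f y $ j - f x $ j\<bar> < d1)"
    using f x d1(1) unfolding in_C_def by blast
  show "\<exists>d>0. \<forall>y\<in>carrier_vec m. (\<forall>i<m. \<bar>y $ i - x $ i\<bar> < d) \<longrightarrow> (\<forall>j<p. \<bar>g (f y) $ j - g (f x) $ j\<bar> < e)"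
  proof (intro exI[of _ d] conjI ballI impI)
    show "0 < d" by (rule d(1))
    fix y :: "real vec" assume y: "y \<in> carrier_vec m" and yd: "\<forall>i<m. \<bar>y $ i - x $ i\<bar> < d"
    have fy: "f y \<in> carrier_vec n" using f y unfolding in_C_def by blast
    have "\<forall>j<n. \<bar>f y $ j - f x $ j\<bar> < d1" using d(2) y yd by blast
    then show "\<forall>j<p. \<bar>g (f y) $ j - g (f x) $ j\<bar> < e" using d1(2) fy by blast
  qed
qed

lemma in_C_map:
  assumes a: "continuous_on UNIV a"
  shows "in_C n n (map_vec a)"
  unfolding in_C_def
proof (intro conjI ballI allI impI)
  fix x :: "real vec" assume x: "x \<in> carrier_vec n"
  then show "map_vec a x \<in> carrier_vec n" by simp
  fix e :: real assume e: "0 < e"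
  have "\<forall>i\<in>{..<n}. \<exists>d. d > 0 \<and> (\<forall>z. \<bar>z - x $ i\<bar> < d \<longrightarrow> \<bar>a z - a (x $ i)\<bar> < e)"
    using cont_eps[OF a e] by blast
  then obtain df where df: "\<forall>i\<in>{..<n}. df i > 0 \<and> (\<forall>z. \<bar>z - x $ i\<bar> < df i \<longrightarrow> \<bar>a z - a (x $ i)\<bar> < e)"
    by (rule bchoice[THEN exE]) blast
  define d where "d = Min (insert 1 (df ` {..<n}))"
  have dpos: "0 < d" unfolding d_def using df by (subst Min_gr_iff) auto
  have dle: "\<And>i. i < n \<Longrightarrow> d \<le> df i" unfolding d_def by (intro Min_le) auto
  show "\<exists>d>0. \<forall>y\<in>carrier_vec n. (\<forall>i<n. \<bar>y $ i - x $ i\<bar> < d) \<longrightarrow> (\<forall>j<n. \<bar>map_vec a y $ j - map_vec a x $ j\<bar> < e)"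
  proof (intro exI[of _ d] conjI ballI impI allI)
    show "0 < d" by (rule dpos)
    fix y :: "real vec" and j assume y: "y \<in> carrier_vec n" and yd: "\<forall>i<n. \<bar>y $ i - x $ i\<bar> < d" and j: "j < n"
    have "\<bar>y $ j - x $ j\<bar> < df j" using yd j dle[OF j] by force
    then have "\<bar>a (y $ j) - a (x $ j)\<bar> < e" using df j by blast
    then show "\<bar>map_vec a y $ j - map_vec a x $ j\<bar> < e" using x y j by simp
  qed
qed

lemma in_C_affine:
  assumes W: "W \<in> carrier_mat n m" and B: "B \<in> carrier_vec n"
  shows "in_C m n (\<lambda>x. W *\<^sub>v x + B)"
  unfolding in_C_def
proof (intro conjI ballI allI impI)
  fix x :: "real vec" assume x: "x \<in> carrier_vec m"
  then show "W *\<^sub>v x + B \<in> carrier_vec n" using W B by simp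
  fix e :: real assume e: "0 < e"
  define C where "C = (\<Sum>j<n. \<Sum>i<m. \<bar>W $$ (j,i)\<bar>) + 1"
  have C0: "0 \<le> (\<Sum>j<n. \<Sum>i<m. \<bar>W $$ (j,i)\<bar>)" by (intro sum_nonneg) auto
  then have Cpos: "0 < C" unfolding C_def by simp
  define d where "d = e / C"
  have dpos: "0 < d" unfolding d_def using e Cpos by simp
  show "\<exists>d>0. \<forall>y\<in>carrier_vec m. (\<forall>i<m. \<bar>y $ i - x $ i\<bar> < d) \<longrightarrow> (\<forall>j<n. \<bar>(W *\<^sub>v y + B) $ j - (W *\<^sub>v x + B) $ j\<bar> < e)"
  proof (intro exI[of _ d] conjI ballI impI allI)
    show "0 < d" by (rule dpos)
    fix y :: "real vec" and j assume y: "y \<in> carrier_vec m" and yd: "\<forall>i<m. \<bar>y $ i - x $ i\<bar> < d" and j: "j < n"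
    have dW: "dim_row W = n" "dim_col W = m" using W by auto
    have dx: "dim_vec x = m" "dim_vec y = m" using x y by auto
    have eq: "(W *\<^sub>v y + B) $ j - (W *\<^sub>v x + B) $ j = (\<Sum>i<m. W $$ (j,i) * (y $ i - x $ i))"
      using j dW dx B by (simp add: scalar_prod_def row_def lessThan_atLeast0 sum_subtractf right_diff_distrib)
    have "\<bar>\<Sum>i<m. W $$ (j,i) * (y $ i - x $ i)\<bar> \<le> (\<Sum>i<m. \<bar>W $$ (j,i)\<bar> * \<bar>y $ i - x $ i\<bar>)"
      by (rule order_trans[OF sum_abs]) (simp add: abs_mult)
    also have "\<dots> \<le> (\<Sum>i<m. \<bar>W $$ (j,i)\<bar> * d)"
    proof (rule sum_mono)
      fix i assume "i \<in> {..<m}"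
      then have "\<bar>y $ i - x $ i\<bar> \<le> d" using yd by (simp add: less_imp_le)
      then show "\<bar>W $$ (j,i)\<bar> * \<bar>y $ i - x $ i\<bar> \<le> \<bar>W $$ (j,i)\<bar> * d" by (rule mult_left_mono) simp
    qed
    also have "\<dots> = (\<Sum>i<m. \<bar>W $$ (j,i)\<bar>) * d" by (simp add: sum_distrib_right)
    also have "\<dots> \<le> (C - 1) * d"
    proof (rule mult_right_mono)
      have "(\<Sum>i<m. \<bar>W $$ (j,i)\<bar>) \<le> (\<Sum>j<n. \<Sum>i<m. \<bar>W $$ (j,i)\<bar>)"
        using j by (intro member_le_sum) (auto intro: sum_nonneg)
      then show "(\<Sum>i<m. \<bar>W $$ (j,i)\<bar>) \<le> C - 1" unfolding C_def by simp
    qed (use dpos in simp)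
    also have "\<dots> < C * d" using dpos by simp
    also have "\<dots> = e" unfolding d_def using Cpos by simp
    finally show "\<bar>(W *\<^sub>v y + B) $ j - (W *\<^sub>v x + B) $ j\<bar> < e" unfolding eq .
  qed
qed

lemma realize_in_C:
  assumes a: "continuous_on UNIV a"
  shows "is_ANN \<Phi> \<Longrightarrow> in_C (ann_I \<Phi>) (ann_O \<Phi>) (realize_aux a \<Phi>)"
proof (induction \<Phi>)
  case Nil then show ?case by (simp add: is_ANN_def)
next
  case (Cons l \<Phi>)
  obtain W B where l: "l = (W,B)" by fastforce
  have h0: "dim_row W = dim_vec B \<and> 0 < dim_row W \<and> 0 < dim_col W
     \<and> (\<Phi> \<noteq> [] \<longrightarrow> is_ANN \<Phi> \<and> ann_I \<Phi> = dim_row W)"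
    using Cons.prems(1) is_ANN_cons[of W B \<Phi>] unfolding l by blast
  have Bc: "B \<in> carrier_vec (dim_row W)" using h0 by (intro carrier_vecI) simp
  have aff: "in_C (dim_col W) (dim_row W) (\<lambda>x. W *\<^sub>v x + B)" by (rule in_C_affine[OF carrier_mat_triv Bc])
  have I: "ann_I (l#\<Phi>) = dim_col W" unfolding l by (simp add: ann_I_def)
  show ?case
  proof (cases "\<Phi> = []")
    case True
    have e: "realize_aux a (l#\<Phi>) = (\<lambda>x. W *\<^sub>v x + B)" unfolding l True by (rule ext) simp
    have O: "ann_O (l#\<Phi>) = dim_row W" unfolding l True by (simp add: ann_O_def)
    show ?thesis unfolding e I O by (rule aff)
  next
    case False
    have h: "is_ANN \<Phi>" "ann_I \<Phi> = dim_row W" using h0 False by auto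
    have e: "realize_aux a (l#\<Phi>) = (\<lambda>x. realize_aux a \<Phi> (map_vec a (W *\<^sub>v x + B)))"
      unfolding l by (rule ext) (simp only: realize_aux_cons False if_False)
    have O: "ann_O (l#\<Phi>) = ann_O \<Phi>" using False by (simp add: ann_O_def)
    have c1: "in_C (dim_col W) (dim_row W) (\<lambda>x. map_vec a (W *\<^sub>v x + B))"
      using in_C_comp[OF aff in_C_map[OF a]] by simp
    have c2: "in_C (dim_row W) (ann_O \<Phi>) (realize_aux a \<Phi>)" using Cons.IH[OF h(1)] h(2) by simp
    show ?thesis unfolding e I O using in_C_comp[OF c1 c2] by simp
  qed
qed

lemma P_bound:
  assumes w: "is_ANN \<Phi>"
  shows "ann_P \<Phi> \<le> 2 * length \<Phi> * (maxnorm (ann_D \<Phi>))^2"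
proof -
  let ?w = "maxnorm (ann_D \<Phi>)"
  have w1: "1 \<le> ?w" by (rule mn_pos[OF w])
  have row: "dim_row (fst (\<Phi>!k)) \<le> ?w" if k: "k < length \<Phi>" for k
  proof -
    have "ann_D \<Phi> ! Suc k = dim_row (fst (\<Phi>!k))" unfolding ann_D_def using k by simp
    moreover have "ann_D \<Phi> ! Suc k \<in> set (ann_D \<Phi>)" using k D_len[of \<Phi>] by simp
    ultimately show ?thesis using mn_ge by metis
  qed
  have col: "dim_col (fst (\<Phi>!k)) \<le> ?w" if k: "k < length \<Phi>" for k
  proof (cases k)
    case 0
    have "dim_col (fst (\<Phi>!k)) = ann_I \<Phi>" unfolding ann_I_def 0 using is_ANN_nonempty[OF w] by (simp add: hd_conv_nth)
    then show ?thesis using I_le_mn by simp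
  next
    case (Suc k')
    have "dim_col (fst (\<Phi>!Suc k')) = dim_row (fst (\<Phi>!k'))" using w k Suc unfolding is_ANN_def by blast
    then show ?thesis using row[of k'] k Suc by simp
  qed
  have "ann_P \<Phi> \<le> (\<Sum>k<length \<Phi>. ?w * (?w + 1))"
    unfolding ann_P_def
  proof (rule sum_mono)
    fix k assume "k \<in> {..<length \<Phi>}"
    then have k: "k < length \<Phi>" by simp
    have "dim_col (fst (\<Phi>!k)) + 1 \<le> ?w + 1" using col[OF k] by simp
    then show "dim_row (fst (\<Phi>!k)) * (dim_col (fst (\<Phi>!k)) + 1) \<le> ?w * (?w + 1)"
      by (rule mult_le_mono[OF row[OF k]])
  qed
  also have "\<dots> = length \<Phi> * (?w * (?w + 1))" by simp
  also have "\<dots> \<le> length \<Phi> * (2 * ?w^2)"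
  proof (rule mult_le_mono2)
    have "?w + 1 \<le> 2 * ?w" using w1 by simp
    then have "?w * (?w + 1) \<le> ?w * (2 * ?w)" by (rule mult_le_mono2)
    then show "?w * (?w + 1) \<le> 2 * ?w^2" by (simp add: power2_eq_square)
  qed
  also have "\<dots> = 2 * length \<Phi> * ?w^2" by simp
  finally show ?thesis .
qed

locale MT =
  fixes d M dd :: nat and T :: real and a :: "real \<Rightarrow> real"
    and J F G :: ann
    and Uc :: "int list \<Rightarrow> real \<Rightarrow> real"
    and W :: "int list \<Rightarrow> real \<Rightarrow> real vec"
    and U :: "int list \<Rightarrow> nat \<Rightarrow> real \<Rightarrow> real vec \<Rightarrow> real"
    and UU :: "int list \<Rightarrow> nat \<Rightarrow> real \<Rightarrow> ann"
  assumes d: "1 \<le> d" and M: "1 \<le> M" and dd: "1 \<le> dd" and T: "0 < T"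
    and a: "continuous_on UNIV a"
    and J1: "is_ANN J" and J2: "ann_D J = [1, dd, 1]" and J3: "\<forall>x \<in> carrier_vec 1. realize a J x = x"
    and F1: "is_ANN F" and F2: "realization_in_C a F 1 1"
    and G1: "is_ANN G" and G2: "realization_in_C a G d 1"
    and Ucal: "\<forall>\<theta> \<in> Theta. \<forall>t \<in> {0..T}. Uc \<theta> t \<in> {0..T}"
    and Wdef: "\<forall>\<theta> \<in> Theta. \<forall>s \<in> {-T..T}. W \<theta> s \<in> carrier_vec d"
    and Urec: "\<forall>\<theta> \<in> Theta. \<forall>n. \<forall>t \<in> {0..T}. \<forall>x \<in> carrier_vec d.
        U \<theta> n t x =
          indN n / real M ^ n *
            (\<Sum>k = 1..M ^ n. realize a G (x + W (\<theta> @ [0, - int k]) (T - t)) $ 0)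
          + (\<Sum>i<n. (T - t) / real M ^ (n - i) *
              (\<Sum>k = 1..M ^ (n - i).
                 realize a F (vec 1 (\<lambda>_. U (\<theta> @ [int i, int k]) i (Uc (\<theta> @ [int i, int k]) t)
                    (x + W (\<theta> @ [int i, int k]) (Uc (\<theta> @ [int i, int k]) t - t)))) $ 0
                 - indN i *
                   realize a F (vec 1 (\<lambda>_. U (\<theta> @ [- int i, int k]) (max (i - 1) 0)
                    (Uc (\<theta> @ [int i, int k]) t)
                    (x + W (\<theta> @ [int i, int k]) (Uc (\<theta> @ [int i, int k]) t - t)))) $ 0))"
    and UUann: "\<forall>\<theta> \<in> Theta. \<forall>n. \<forall>t \<in> {0..T}. is_ANN (UU \<theta> n t)"
    and UU0: "\<forall>\<theta> \<in> Theta. \<forall>t \<in> {0..T}. UU \<theta> 0 t = ann_A (0\<^sub>m 1 d) (0\<^sub>v 1)"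
    and UUrec: "\<forall>\<theta> \<in> Theta. \<forall>n \<ge> 1. \<forall>t \<in> {0..T}.
        UU \<theta> n t = ann_boxplus J
          [ ann_sum (map (\<lambda>k. ann_scalar (1 / real M ^ n)
                (ann_comp G (ann_A (1\<^sub>m d) (W (\<theta> @ [0, - int k]) (T - t)))))
              [1..<M ^ n + 1]),
            ann_boxplus J (map (\<lambda>i. ann_scalar ((T - t) / real M ^ (n - i))
                (ann_boxplus J (map (\<lambda>k.
                   ann_comp (ann_comp F (UU (\<theta> @ [int i, int k]) i (Uc (\<theta> @ [int i, int k]) t)))
                     (ann_A (1\<^sub>m d) (W (\<theta> @ [int i, int k]) (Uc (\<theta> @ [int i, int k]) t - t))))
                 [1..<M ^ (n - i) + 1])))
              [0..<n]),
            ann_boxplus J (map (\<lambda>i. ann_scalar ((t - T) * indN i / real M ^ (n - i))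
                (ann_boxplus J (map (\<lambda>k.
                   ann_comp (ann_comp F (UU (\<theta> @ [- int i, int k]) (max (i - 1) 0)
                               (Uc (\<theta> @ [int i, int k]) t)))
                     (ann_A (1\<^sub>m d) (W (\<theta> @ [int i, int k]) (Uc (\<theta> @ [int i, int k]) t - t))))
                 [1..<M ^ (n - i) + 1])))
              [0..<n]) ]"
begin

lemma FI: "ann_I F = 1" and FO: "ann_O F = 1" using F2 unfolding realization_in_C_def by auto
lemma GI: "ann_I G = d" and GO: "ann_O G = 1" using G2 unfolding realization_in_C_def by auto

lemma Jc: "Jctx J dd a"
  by (unfold_locales) (use J1 J2 J3 in \<open>simp_all add: realize_def\<close>)

interpretation JJ: Jctx J dd a by (rule Jc)

definition "m0 = max dd (max (maxnorm (ann_D F)) (maxnorm (ann_D G)))"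
definition "Lb n = max dd (ann_L G) + n * ann_H F"

lemma d_m0: "d \<le> m0" unfolding m0_def using I_le_mn[of G] GI by simp
lemma dd_m0: "dd \<le> m0" unfolding m0_def by simp
lemma F_m0: "maxnorm (ann_D F) \<le> m0" unfolding m0_def by simp
lemma G_m0: "maxnorm (ann_D G) \<le> m0" unfolding m0_def by simp
lemma m0pos: "1 \<le> m0" using dd dd_m0 by simp

lemma Theta_app: "\<theta> \<in> Theta \<Longrightarrow> \<theta> @ xs \<in> Theta" unfolding Theta_def by simp

lemma Uc_in: "\<theta> \<in> Theta \<Longrightarrow> t \<in> {0..T} \<Longrightarrow> Uc \<theta> t \<in> {0..T}" using Ucal by blast

lemma W_in: "\<theta> \<in> Theta \<Longrightarrow> s \<in> {-T..T} \<Longrightarrow> W \<theta> s \<in> carrier_vec d" using Wdef by blast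

lemma W_in1: "\<theta> \<in> Theta \<Longrightarrow> t \<in> {0..T} \<Longrightarrow> W (\<theta> @ xs) (T - t) \<in> carrier_vec d"
  by (rule W_in[OF Theta_app]) auto

lemma W_in2: "\<theta> \<in> Theta \<Longrightarrow> t \<in> {0..T} \<Longrightarrow> W (\<theta> @ xs) (Uc (\<theta> @ ys) t - t) \<in> carrier_vec d"
proof -
  assume th: "\<theta> \<in> Theta" and t: "t \<in> {0..T}"
  have "Uc (\<theta> @ ys) t \<in> {0..T}" by (rule Uc_in[OF Theta_app[OF th] t])
  then have "Uc (\<theta> @ ys) t - t \<in> {-T..T}" using t by auto
  then show ?thesis by (rule W_in[OF Theta_app[OF th]])
qed

definition Props :: "nat \<Rightarrow> int list \<Rightarrow> real \<Rightarrow> bool" where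
  "Props n \<theta> t \<longleftrightarrow> ann_I (UU \<theta> n t) = d \<and> ann_O (UU \<theta> n t) = 1 \<and> length (UU \<theta> n t) \<le> Lb n
     \<and> maxnorm (ann_D (UU \<theta> n t)) \<le> m0 * (3 * M) ^ n
     \<and> (\<forall>x \<in> carrier_vec d. U \<theta> n t x = realize_aux a (UU \<theta> n t) x $ 0)"

lemma vec1_eq: "y \<in> carrier_vec 1 \<Longrightarrow> vec 1 (\<lambda>_. y $ 0) = y"
  by (rule eq_vecI) auto

lemma X_props:
  assumes th: "\<theta> \<in> Theta" and s: "s \<in> {0..T}" and v: "v \<in> carrier_vec d" and P: "Props j \<theta> s"
  shows "is_ANN (ann_comp (ann_comp F (UU \<theta> j s)) (ann_A (1\<^sub>m d) v))
    \<and> ann_I (ann_comp (ann_comp F (UU \<theta> j s)) (ann_A (1\<^sub>m d) v)) = d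
    \<and> ann_O (ann_comp (ann_comp F (UU \<theta> j s)) (ann_A (1\<^sub>m d) v)) = 1
    \<and> length (ann_comp (ann_comp F (UU \<theta> j s)) (ann_A (1\<^sub>m d) v)) \<le> Lb j + ann_H F
    \<and> maxnorm (ann_D (ann_comp (ann_comp F (UU \<theta> j s)) (ann_A (1\<^sub>m d) v))) \<le> m0 * (3 * M) ^ j
    \<and> ann_D (ann_comp (ann_comp F (UU \<theta> j s)) (ann_A (1\<^sub>m d) v)) = butlast (ann_D (UU \<theta> j s)) @ tl (ann_D F)
    \<and> (\<forall>x \<in> carrier_vec d. realize_aux a (ann_comp (ann_comp F (UU \<theta> j s)) (ann_A (1\<^sub>m d) v)) x $ 0
          = realize a F (vec 1 (\<lambda>_. U \<theta> j s (x + v))) $ 0)"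
proof -
  let ?V = "UU \<theta> j s"
  have Vw: "is_ANN ?V" using UUann th s by blast
  have PV: "ann_I ?V = d" "ann_O ?V = 1" "length ?V \<le> Lb j" "maxnorm (ann_D ?V) \<le> m0 * (3 * M) ^ j"
    "\<forall>x \<in> carrier_vec d. U \<theta> j s x = realize_aux a ?V x $ 0" using P unfolding Props_def by auto
  have c: "is_ANN (ann_comp F ?V) \<and> ann_I (ann_comp F ?V) = ann_I ?V
    \<and> ann_O (ann_comp F ?V) = ann_O F \<and> length (ann_comp F ?V) = length F + length ?V - 1
    \<and> (\<forall>x \<in> carrier_vec (ann_I ?V). realize_aux a (ann_comp F ?V) x = realize_aux a F (realize_aux a ?V x))"
    by (rule comp_props[OF F1 Vw]) (simp add: FI PV)
  have DFV: "ann_D (ann_comp F ?V) = butlast (ann_D ?V) @ tl (ann_D F)"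
    by (rule comp_D[OF is_ANN_nonempty[OF F1] is_ANN_nonempty[OF Vw]])
  have d0: "0 < d" using d by simp
  have FVw: "is_ANN (ann_comp F ?V)" and FVI: "ann_I (ann_comp F ?V) = d" using c PV by auto
  have l: "is_ANN (ann_comp (ann_comp F ?V) (ann_A (1\<^sub>m d) v)) \<and> ann_I (ann_comp (ann_comp F ?V) (ann_A (1\<^sub>m d) v)) = d
    \<and> ann_O (ann_comp (ann_comp F ?V) (ann_A (1\<^sub>m d) v)) = ann_O (ann_comp F ?V) \<and> length (ann_comp (ann_comp F ?V) (ann_A (1\<^sub>m d) v)) = length (ann_comp F ?V)
    \<and> ann_D (ann_comp (ann_comp F ?V) (ann_A (1\<^sub>m d) v)) = ann_D (ann_comp F ?V)
    \<and> (\<forall>x \<in> carrier_vec d. realize_aux a (ann_comp (ann_comp F ?V) (ann_A (1\<^sub>m d) v)) x = realize_aux a (ann_comp F ?V) (x + v))"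
    by (rule leaf_props[OF FVw FVI d0 v])
  have len: "length (ann_comp F ?V) \<le> Lb j + ann_H F"
  proof -
    have "0 < length F" using is_ANN_nonempty[OF F1] by simp
    then show ?thesis using c PV(3) unfolding ann_H_def by simp
  qed
  have mn: "maxnorm (ann_D (ann_comp F ?V)) \<le> m0 * (3 * M) ^ j"
  proof (rule mn_le[OF D_ne])
    fix y assume "y \<in> set (ann_D (ann_comp F ?V))"
    then have "y \<in> set (butlast (ann_D ?V) @ tl (ann_D F))" unfolding DFV .
    then have "y \<in> set (ann_D ?V) \<union> set (ann_D F)"
      using set_butlast_tl[of "ann_D ?V" "ann_D F"] by (rule subsetD[rotated])
    then show "y \<le> m0 * (3 * M) ^ j"
    proof
      assume "y \<in> set (ann_D ?V)"
      then have "y \<le> maxnorm (ann_D ?V)" by (rule mn_ge)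
      then show ?thesis using PV(4) by simp
    next
      assume "y \<in> set (ann_D F)"
      then have "y \<le> maxnorm (ann_D F)" by (rule mn_ge)
      moreover have "m0 \<le> m0 * (3 * M) ^ j" using M by simp
      ultimately show ?thesis using F_m0 by linarith
    qed
  qed
  have R: "\<forall>x \<in> carrier_vec d. realize_aux a (ann_comp (ann_comp F ?V) (ann_A (1\<^sub>m d) v)) x $ 0
          = realize a F (vec 1 (\<lambda>_. U \<theta> j s (x + v))) $ 0"
  proof
    fix x :: "real vec" assume x: "x \<in> carrier_vec d"
    have xv: "x + v \<in> carrier_vec d" using x v by simp
    have r1: "realize_aux a ?V (x + v) \<in> carrier_vec 1" using realize_carrier[OF Vw, of "x + v" a] xv PV by simp
    have "realize_aux a (ann_comp (ann_comp F ?V) (ann_A (1\<^sub>m d) v)) x = realize_aux a (ann_comp F ?V) (x + v)"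
      using l x by blast
    also have "\<dots> = realize_aux a F (realize_aux a ?V (x + v))" using c xv PV by simp
    also have "realize_aux a ?V (x + v) = vec 1 (\<lambda>_. U \<theta> j s (x + v))"
      using vec1_eq[OF r1] PV(5) xv by simp
    finally show "realize_aux a (ann_comp (ann_comp F ?V) (ann_A (1\<^sub>m d) v)) x $ 0
          = realize a F (vec 1 (\<lambda>_. U \<theta> j s (x + v))) $ 0" unfolding realize_def by simp
  qed
  show ?thesis using l c len mn DFV R FO by simp
qed

end

declare upt_Suc[simp del]

context MT
begin

interpretation JJ: Jctx J dd a by (rule Jc)

lemma Mpow: "1 \<le> M ^ n" using M by (simp add: one_le_power)

lemma len_upt1: "length [1..<N+1] = N" by simp

lemma upt1_ne: "1 \<le> N \<Longrightarrow> [1..<N+1] \<noteq> []" by simp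

lemma nth_upt1: "q < N \<Longrightarrow> [1..<N+1] ! q = Suc q" by (simp del: upt_Suc add: nth_upt)

lemma nth_map_upt1: "q < N \<Longrightarrow> map f [1..<N+1] ! q = f (Suc q)"
  by (simp del: upt_Suc add: nth_upt)

lemma bp_gen:
  assumes ne: "\<Phi>s \<noteq> []"
    and w: "\<forall>q<length \<Phi>s. is_ANN (\<Phi>s!q) \<and> ann_I (\<Phi>s!q) = d \<and> ann_O (\<Phi>s!q) = 1 \<and> length (\<Phi>s!q) \<le> lb
              \<and> maxnorm (ann_D (\<Phi>s!q)) \<le> mb q \<and> dd \<le> mb q"
  shows "is_ANN (ann_boxplus J \<Phi>s) \<and> ann_I (ann_boxplus J \<Phi>s) = d \<and> ann_O (ann_boxplus J \<Phi>s) = 1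
     \<and> length (ann_boxplus J \<Phi>s) \<le> lb
     \<and> maxnorm (ann_D (ann_boxplus J \<Phi>s)) \<le> (\<Sum>q<length \<Phi>s. mb q)
     \<and> (\<forall>x \<in> carrier_vec d. realize_aux a (ann_boxplus J \<Phi>s) x $ 0 = (\<Sum>q<length \<Phi>s. realize_aux a (\<Phi>s!q) x $ 0))"
proof -
  have w': "\<forall>q<length \<Phi>s. is_ANN (\<Phi>s!q) \<and> ann_I (\<Phi>s!q) = d \<and> ann_O (\<Phi>s!q) = 1" using w by blast
  have bp: "is_ANN (ann_boxplus J \<Phi>s) \<and> ann_I (ann_boxplus J \<Phi>s) = d \<and> ann_O (ann_boxplus J \<Phi>s) = 1
     \<and> length (ann_boxplus J \<Phi>s) = Max (set (map ann_L \<Phi>s))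
     \<and> (\<forall>x \<in> carrier_vec d. realize_aux a (ann_boxplus J \<Phi>s) x $ 0 = (\<Sum>q<length \<Phi>s. realize_aux a (\<Phi>s!q) x $ 0))
     \<and> maxnorm (ann_D (ann_boxplus J \<Phi>s)) \<le> (\<Sum>q<length \<Phi>s. max (maxnorm (ann_D (\<Phi>s!q))) dd)"
    by (rule JJ.bp_props[OF ne w'])
  have L: "Max (set (map ann_L \<Phi>s)) \<le> lb"
  proof (subst Max_le_iff)
    show "finite (set (map ann_L \<Phi>s))" by simp
    show "set (map ann_L \<Phi>s) \<noteq> {}" using ne by simp
    show "\<forall>a\<in>set (map ann_L \<Phi>s). a \<le> lb" using w by (auto simp: ann_L_def in_set_conv_nth)
  qed
  have S: "(\<Sum>q<length \<Phi>s. max (maxnorm (ann_D (\<Phi>s!q))) dd) \<le> (\<Sum>q<length \<Phi>s. mb q)"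
    by (rule sum_mono) (use w in auto)
  show ?thesis using bp L S by simp
qed

definition "Bk \<theta> t i k = ann_comp (ann_comp F (UU (\<theta> @ [int i, int k]) i (Uc (\<theta> @ [int i, int k]) t)))
                     (ann_A (1\<^sub>m d) (W (\<theta> @ [int i, int k]) (Uc (\<theta> @ [int i, int k]) t - t)))"
definition "Ck \<theta> t i k = ann_comp (ann_comp F (UU (\<theta> @ [- int i, int k]) (max (i - 1) 0)
                               (Uc (\<theta> @ [int i, int k]) t)))
                     (ann_A (1\<^sub>m d) (W (\<theta> @ [int i, int k]) (Uc (\<theta> @ [int i, int k]) t - t)))"
definition "Ak \<theta> t n k = ann_scalar (1 / real M ^ n)
                (ann_comp G (ann_A (1\<^sub>m d) (W (\<theta> @ [0, - int k]) (T - t))))"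
definition "Bi \<theta> t n i = ann_scalar ((T - t) / real M ^ (n - i))
                (ann_boxplus J (map (Bk \<theta> t i) [1..<M ^ (n - i) + 1]))"
definition "Ci \<theta> t n i = ann_scalar ((t - T) * indN i / real M ^ (n - i))
                (ann_boxplus J (map (Ck \<theta> t i) [1..<M ^ (n - i) + 1]))"
definition "AA \<theta> t n = ann_sum (map (Ak \<theta> t n) [1..<M ^ n + 1])"
definition "BB \<theta> t n = ann_boxplus J (map (Bi \<theta> t n) [0..<n])"
definition "CC \<theta> t n = ann_boxplus J (map (Ci \<theta> t n) [0..<n])"

lemma UU_split: "\<theta> \<in> Theta \<Longrightarrow> 1 \<le> n \<Longrightarrow> t \<in> {0..T} \<Longrightarrow> UU \<theta> n t = ann_boxplus J [AA \<theta> t n, BB \<theta> t n, CC \<theta> t n]"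
  using UUrec unfolding AA_def BB_def CC_def Ak_def Bi_def Ci_def Bk_def Ck_def by blast

lemma Ak_props:
  assumes th: "\<theta> \<in> Theta" and t: "t \<in> {0..T}"
  shows "is_ANN (Ak \<theta> t n k) \<and> ann_I (Ak \<theta> t n k) = d \<and> ann_O (Ak \<theta> t n k) = 1
    \<and> length (Ak \<theta> t n k) = length G \<and> ann_D (Ak \<theta> t n k) = ann_D G
    \<and> (\<forall>x \<in> carrier_vec d. realize_aux a (Ak \<theta> t n k) x $ 0 = 1 / real M ^ n * realize a G (x + W (\<theta> @ [0, - int k]) (T - t)) $ 0)"
proof -
  let ?w = "W (\<theta> @ [0, - int k]) (T - t)"
  have wv: "?w \<in> carrier_vec d" by (rule W_in1[OF th t])
  have d0: "0 < d" using d by simp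
  let ?X = "ann_comp G (ann_A (1\<^sub>m d) ?w)"
  have l: "is_ANN ?X \<and> ann_I ?X = d \<and> ann_O ?X = ann_O G \<and> length ?X = length G \<and> ann_D ?X = ann_D G
    \<and> (\<forall>x \<in> carrier_vec d. realize_aux a ?X x = realize_aux a G (x + ?w))"
    by (rule leaf_props[OF G1 GI d0 wv])
  have Xw: "is_ANN ?X" using l by blast
  have s: "is_ANN (ann_scalar (1 / real M ^ n) ?X) \<and> ann_I (ann_scalar (1 / real M ^ n) ?X) = ann_I ?X \<and> ann_O (ann_scalar (1 / real M ^ n) ?X) = ann_O ?X
    \<and> length (ann_scalar (1 / real M ^ n) ?X) = length ?X \<and> ann_D (ann_scalar (1 / real M ^ n) ?X) = ann_D ?X
    \<and> (\<forall>x \<in> carrier_vec (ann_I ?X). \<forall>i < ann_O ?X. realize_aux a (ann_scalar (1 / real M ^ n) ?X) x $ i = 1 / real M ^ n * realize_aux a ?X x $ i)"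
    by (rule scal_props[OF Xw])
  show ?thesis unfolding Ak_def using l s GO by (simp add: realize_def)
qed

lemma AA_props:
  assumes th: "\<theta> \<in> Theta" and t: "t \<in> {0..T}"
  shows "is_ANN (AA \<theta> t n) \<and> ann_I (AA \<theta> t n) = d \<and> ann_O (AA \<theta> t n) = 1
    \<and> length (AA \<theta> t n) = length G \<and> maxnorm (ann_D (AA \<theta> t n)) \<le> M ^ n * m0
    \<and> (\<forall>x \<in> carrier_vec d. realize_aux a (AA \<theta> t n) x $ 0
         = (\<Sum>q<M ^ n. 1 / real M ^ n * realize a G (x + W (\<theta> @ [0, - int (Suc q)]) (T - t)) $ 0))"
proof -
  let ?Ps = "map (Ak \<theta> t n) [1..<M ^ n + 1]"
  have lP: "length ?Ps = M ^ n" by (simp only: length_map len_upt1)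
  have nth: "\<And>q. q < M ^ n \<Longrightarrow> ?Ps ! q = Ak \<theta> t n (Suc q)" by (rule nth_map_upt1)
  have Mn: "[1..<M ^ n + 1] \<noteq> []" using Mpow upt1_ne by blast
  interpret S: sumctx ?Ps "length G" d 1
  proof
    show "?Ps \<noteq> []" using Mn by simp
    fix q assume "q < length ?Ps"
    then have q: "q < M ^ n" using lP by simp
    show "is_ANN (?Ps ! q)" "length (?Ps ! q) = length G" "ann_I (?Ps ! q) = d" "ann_O (?Ps ! q) = 1"
      unfolding nth[OF q] using Ak_props[OF th t] by blast+
  qed
  have sp: "is_ANN (ann_sum ?Ps) \<and> ann_I (ann_sum ?Ps) = d
    \<and> ann_O (ann_sum ?Ps) = 1 \<and> length (ann_sum ?Ps) = length G
    \<and> (\<forall>x \<in> carrier_vec d. \<forall>i<1. realize_aux a (ann_sum ?Ps) x $ i = (\<Sum>q<length ?Ps. realize_aux a (?Ps!q) x $ i))"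
    by (rule S.sum_props)
  have mn: "maxnorm (ann_D (ann_sum ?Ps)) \<le> M ^ n * m0"
  proof -
    have "maxnorm (ann_D (ann_sum ?Ps)) \<le> (\<Sum>q<length ?Ps. maxnorm (ann_D (?Ps!q)))" by (rule S.sum_mn)
    also have "\<dots> = (\<Sum>q<M ^ n. maxnorm (ann_D G))" unfolding lP
      by (rule sum.cong[OF refl]) (use nth Ak_props[OF th t] in simp)
    also have "\<dots> \<le> M ^ n * m0" using G_m0 by simp
    finally show ?thesis .
  qed
  have R: "\<forall>x \<in> carrier_vec d. realize_aux a (ann_sum ?Ps) x $ 0
         = (\<Sum>q<M ^ n. 1 / real M ^ n * realize a G (x + W (\<theta> @ [0, - int (Suc q)]) (T - t)) $ 0)"
  proof
    fix x :: "real vec" assume x: "x \<in> carrier_vec d"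
    have "realize_aux a (ann_sum ?Ps) x $ 0 = (\<Sum>q<length ?Ps. realize_aux a (?Ps!q) x $ 0)" using sp x by blast
    also have "\<dots> = (\<Sum>q<M ^ n. 1 / real M ^ n * realize a G (x + W (\<theta> @ [0, - int (Suc q)]) (T - t)) $ 0)"
      unfolding lP by (rule sum.cong[OF refl]) (use nth Ak_props[OF th t] x in simp)
    finally show "realize_aux a (ann_sum ?Ps) x $ 0 = (\<Sum>q<M ^ n. 1 / real M ^ n * realize a G (x + W (\<theta> @ [0, - int (Suc q)]) (T - t)) $ 0)" .
  qed
  show ?thesis unfolding AA_def using sp mn R by simp
qed

lemma AA_D:
  assumes "\<theta>1 \<in> Theta" "t1 \<in> {0..T}" "\<theta>2 \<in> Theta" "t2 \<in> {0..T}"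
  shows "ann_D (AA \<theta>1 t1 n) = ann_D (AA \<theta>2 t2 n)"
proof -
  have Mn: "[1..<M ^ n + 1] \<noteq> []" using Mpow upt1_ne by blast
  have lP: "\<And>\<theta> t. length (map (Ak \<theta> t n) [1..<M ^ n + 1]) = M ^ n" by (simp only: length_map len_upt1)
  have ctx: "sumctx (map (Ak \<theta> t n) [1..<M ^ n + 1]) (length G) d 1" if th: "\<theta> \<in> Theta" and t: "t \<in> {0..T}" for \<theta> t
  proof
    show "map (Ak \<theta> t n) [1..<M ^ n + 1] \<noteq> []" using Mn by simp
    fix q assume "q < length (map (Ak \<theta> t n) [1..<M ^ n + 1])"
    then have q: "q < M ^ n" using lP by simp
    then have e: "map (Ak \<theta> t n) [1..<M ^ n + 1] ! q = Ak \<theta> t n (Suc q)" by (rule nth_map_upt1)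
    show "is_ANN (map (Ak \<theta> t n) [1..<M ^ n + 1] ! q)" "length (map (Ak \<theta> t n) [1..<M ^ n + 1] ! q) = length G"
      "ann_I (map (Ak \<theta> t n) [1..<M ^ n + 1] ! q) = d" "ann_O (map (Ak \<theta> t n) [1..<M ^ n + 1] ! q) = 1"
      unfolding e using Ak_props[OF th t] by blast+
  qed
  show ?thesis unfolding AA_def
  proof (rule sum_D_cong[OF ctx[OF assms(1,2)] ctx[OF assms(3,4)]])
    show "length (map (Ak \<theta>2 t2 n) [1..<M ^ n + 1]) = length (map (Ak \<theta>1 t1 n) [1..<M ^ n + 1])" by simp
    show "\<forall>q<length (map (Ak \<theta>1 t1 n) [1..<M ^ n + 1]). ann_D (map (Ak \<theta>1 t1 n) [1..<M ^ n + 1] ! q) = ann_D (map (Ak \<theta>2 t2 n) [1..<M ^ n + 1] ! q)"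
      using Ak_props[OF assms(1,2)] Ak_props[OF assms(3,4)] lP nth_map_upt1 by simp
  qed
qed

end

context MT
begin

interpretation JJ: Jctx J dd a by (rule Jc)

definition "IHP i \<longleftrightarrow> (\<forall>\<theta>\<in>Theta. \<forall>t\<in>{0..T}. Props i \<theta> t)"
definition "IHD i \<longleftrightarrow> (\<forall>\<theta>1\<in>Theta. \<forall>\<theta>2\<in>Theta. \<forall>t1\<in>{0..T}. \<forall>t2\<in>{0..T}. ann_D (UU \<theta>1 i t1) = ann_D (UU \<theta>2 i t2))"

lemma Bk_props:
  assumes th: "\<theta> \<in> Theta" and t: "t \<in> {0..T}" and P: "IHP i"
  shows "is_ANN (Bk \<theta> t i k) \<and> ann_I (Bk \<theta> t i k) = d \<and> ann_O (Bk \<theta> t i k) = 1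
    \<and> length (Bk \<theta> t i k) \<le> Lb i + ann_H F
    \<and> maxnorm (ann_D (Bk \<theta> t i k)) \<le> m0 * (3 * M) ^ i
    \<and> ann_D (Bk \<theta> t i k) = butlast (ann_D (UU (\<theta> @ [int i, int k]) i (Uc (\<theta> @ [int i, int k]) t))) @ tl (ann_D F)
    \<and> (\<forall>x \<in> carrier_vec d. realize_aux a (Bk \<theta> t i k) x $ 0
          = realize a F (vec 1 (\<lambda>_. U (\<theta> @ [int i, int k]) i (Uc (\<theta> @ [int i, int k]) t)
                (x + W (\<theta> @ [int i, int k]) (Uc (\<theta> @ [int i, int k]) t - t)))) $ 0)"
proof -
  have th': "\<theta> @ [int i, int k] \<in> Theta" by (rule Theta_app[OF th])
  have s: "Uc (\<theta> @ [int i, int k]) t \<in> {0..T}" by (rule Uc_in[OF th' t])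
  have v: "W (\<theta> @ [int i, int k]) (Uc (\<theta> @ [int i, int k]) t - t) \<in> carrier_vec d" by (rule W_in2[OF th t])
  have Pr: "Props i (\<theta> @ [int i, int k]) (Uc (\<theta> @ [int i, int k]) t)" using P th' s unfolding IHP_def by blast
  show ?thesis unfolding Bk_def by (rule X_props[OF th' s v Pr])
qed

lemma Ck_props:
  assumes th: "\<theta> \<in> Theta" and t: "t \<in> {0..T}" and P: "IHP (max (i - 1) 0)"
  shows "is_ANN (Ck \<theta> t i k) \<and> ann_I (Ck \<theta> t i k) = d \<and> ann_O (Ck \<theta> t i k) = 1
    \<and> length (Ck \<theta> t i k) \<le> Lb (max (i - 1) 0) + ann_H F
    \<and> maxnorm (ann_D (Ck \<theta> t i k)) \<le> m0 * (3 * M) ^ (max (i - 1) 0)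
    \<and> ann_D (Ck \<theta> t i k) = butlast (ann_D (UU (\<theta> @ [- int i, int k]) (max (i - 1) 0) (Uc (\<theta> @ [int i, int k]) t))) @ tl (ann_D F)
    \<and> (\<forall>x \<in> carrier_vec d. realize_aux a (Ck \<theta> t i k) x $ 0
          = realize a F (vec 1 (\<lambda>_. U (\<theta> @ [- int i, int k]) (max (i - 1) 0) (Uc (\<theta> @ [int i, int k]) t)
                (x + W (\<theta> @ [int i, int k]) (Uc (\<theta> @ [int i, int k]) t - t)))) $ 0)"
proof -
  have th': "\<theta> @ [- int i, int k] \<in> Theta" by (rule Theta_app[OF th])
  have th2: "\<theta> @ [int i, int k] \<in> Theta" by (rule Theta_app[OF th])
  have s: "Uc (\<theta> @ [int i, int k]) t \<in> {0..T}" by (rule Uc_in[OF th2 t])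
  have v: "W (\<theta> @ [int i, int k]) (Uc (\<theta> @ [int i, int k]) t - t) \<in> carrier_vec d" by (rule W_in2[OF th t])
  have Pr: "Props (max (i - 1) 0) (\<theta> @ [- int i, int k]) (Uc (\<theta> @ [int i, int k]) t)" using P th' s unfolding IHP_def by blast
  show ?thesis unfolding Ck_def by (rule X_props[OF th' s v Pr])
qed

lemma pow_mono3: "i \<le> j \<Longrightarrow> m0 * (3 * M) ^ i \<le> m0 * (3 * M) ^ j"
  using M by (intro mult_le_mono2 power_increasing) auto

lemma m0_le_pow: "m0 \<le> m0 * (3 * M) ^ i"
proof -
  have "m0 * (3 * M) ^ 0 \<le> m0 * (3 * M) ^ i" by (rule pow_mono3) simp
  then show ?thesis by (simp only: power_0 mult_1_right)
qed

lemma dd_le_pow: "dd \<le> m0 * (3 * M) ^ i"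
  by (rule order_trans[OF dd_m0 m0_le_pow])

lemma Lb_mono: "i \<le> j \<Longrightarrow> Lb i \<le> Lb j" unfolding Lb_def by (simp add: mult_le_mono1)

lemma Bi_props:
  assumes th: "\<theta> \<in> Theta" and t: "t \<in> {0..T}" and P: "IHP i"
  shows "is_ANN (Bi \<theta> t n i) \<and> ann_I (Bi \<theta> t n i) = d \<and> ann_O (Bi \<theta> t n i) = 1
    \<and> length (Bi \<theta> t n i) \<le> Lb i + ann_H F
    \<and> maxnorm (ann_D (Bi \<theta> t n i)) \<le> M ^ (n - i) * (m0 * (3 * M) ^ i)
    \<and> (\<forall>x \<in> carrier_vec d. realize_aux a (Bi \<theta> t n i) x $ 0
          = (T - t) / real M ^ (n - i) * (\<Sum>q<M ^ (n - i). realize a F (vec 1 (\<lambda>_. U (\<theta> @ [int i, int (Suc q)]) i (Uc (\<theta> @ [int i, int (Suc q)]) t)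
                (x + W (\<theta> @ [int i, int (Suc q)]) (Uc (\<theta> @ [int i, int (Suc q)]) t - t)))) $ 0))"
proof -
  let ?N = "M ^ (n - i)"
  let ?Ps = "map (Bk \<theta> t i) [1..<?N + 1]"
  have lP: "length ?Ps = ?N" by (simp only: length_map len_upt1)
  have nth: "\<And>q. q < ?N \<Longrightarrow> ?Ps ! q = Bk \<theta> t i (Suc q)" by (rule nth_map_upt1)
  have ne: "?Ps \<noteq> []" using upt1_ne[OF Mpow[of "n - i"]] map_is_Nil_conv by blast
  have bp: "is_ANN (ann_boxplus J ?Ps) \<and> ann_I (ann_boxplus J ?Ps) = d \<and> ann_O (ann_boxplus J ?Ps) = 1
     \<and> length (ann_boxplus J ?Ps) \<le> Lb i + ann_H F
     \<and> maxnorm (ann_D (ann_boxplus J ?Ps)) \<le> (\<Sum>q<length ?Ps. m0 * (3 * M) ^ i)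
     \<and> (\<forall>x \<in> carrier_vec d. realize_aux a (ann_boxplus J ?Ps) x $ 0 = (\<Sum>q<length ?Ps. realize_aux a (?Ps!q) x $ 0))"
  proof (rule bp_gen[OF ne])
    show "\<forall>q<length ?Ps. is_ANN (?Ps!q) \<and> ann_I (?Ps!q) = d \<and> ann_O (?Ps!q) = 1 \<and> length (?Ps!q) \<le> Lb i + ann_H F
              \<and> maxnorm (ann_D (?Ps!q)) \<le> m0 * (3 * M) ^ i \<and> dd \<le> m0 * (3 * M) ^ i"
    proof (intro allI impI)
      fix q assume "q < length ?Ps"
      then have q: "q < ?N" using lP by simp
      have Bw: "is_ANN (Bk \<theta> t i (Suc q)) \<and> ann_I (Bk \<theta> t i (Suc q)) = d \<and> ann_O (Bk \<theta> t i (Suc q)) = 1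
        \<and> length (Bk \<theta> t i (Suc q)) \<le> Lb i + ann_H F \<and> maxnorm (ann_D (Bk \<theta> t i (Suc q))) \<le> m0 * (3 * M) ^ i"
        using Bk_props[OF th t P] by blast
      show "is_ANN (?Ps!q) \<and> ann_I (?Ps!q) = d \<and> ann_O (?Ps!q) = 1 \<and> length (?Ps!q) \<le> Lb i + ann_H F
              \<and> maxnorm (ann_D (?Ps!q)) \<le> m0 * (3 * M) ^ i \<and> dd \<le> m0 * (3 * M) ^ i"
        unfolding nth[OF q] using Bw dd_le_pow by blast
    qed
  qed
  have bw: "is_ANN (ann_boxplus J ?Ps)" using bp by blast
  have sc: "is_ANN (ann_scalar ((T - t) / real ?N) (ann_boxplus J ?Ps)) \<and> ann_I (ann_scalar ((T - t) / real ?N) (ann_boxplus J ?Ps)) = ann_I (ann_boxplus J ?Ps)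
    \<and> ann_O (ann_scalar ((T - t) / real ?N) (ann_boxplus J ?Ps)) = ann_O (ann_boxplus J ?Ps)
    \<and> length (ann_scalar ((T - t) / real ?N) (ann_boxplus J ?Ps)) = length (ann_boxplus J ?Ps)
    \<and> ann_D (ann_scalar ((T - t) / real ?N) (ann_boxplus J ?Ps)) = ann_D (ann_boxplus J ?Ps)
    \<and> (\<forall>x \<in> carrier_vec (ann_I (ann_boxplus J ?Ps)). \<forall>j < ann_O (ann_boxplus J ?Ps).
        realize_aux a (ann_scalar ((T - t) / real ?N) (ann_boxplus J ?Ps)) x $ j = (T - t) / real ?N * realize_aux a (ann_boxplus J ?Ps) x $ j)"
    by (rule scal_props[OF bw])
  have e: "Bi \<theta> t n i = ann_scalar ((T - t) / real ?N) (ann_boxplus J ?Ps)" unfolding Bi_def by simp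
  have R: "\<forall>x \<in> carrier_vec d. realize_aux a (Bi \<theta> t n i) x $ 0
          = (T - t) / real M ^ (n - i) * (\<Sum>q<?N. realize a F (vec 1 (\<lambda>_. U (\<theta> @ [int i, int (Suc q)]) i (Uc (\<theta> @ [int i, int (Suc q)]) t)
                (x + W (\<theta> @ [int i, int (Suc q)]) (Uc (\<theta> @ [int i, int (Suc q)]) t - t)))) $ 0)"
  proof
    fix x :: "real vec" assume x: "x \<in> carrier_vec d"
    have "realize_aux a (Bi \<theta> t n i) x $ 0 = (T - t) / real ?N * realize_aux a (ann_boxplus J ?Ps) x $ 0"
      unfolding e using sc bp x by simp
    also have "realize_aux a (ann_boxplus J ?Ps) x $ 0 = (\<Sum>q<?N. realize_aux a (?Ps!q) x $ 0)" using bp x lP by simp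
    also have "\<dots> = (\<Sum>q<?N. realize a F (vec 1 (\<lambda>_. U (\<theta> @ [int i, int (Suc q)]) i (Uc (\<theta> @ [int i, int (Suc q)]) t)
                (x + W (\<theta> @ [int i, int (Suc q)]) (Uc (\<theta> @ [int i, int (Suc q)]) t - t)))) $ 0)"
      by (rule sum.cong[OF refl]) (use nth Bk_props[OF th t P] x in simp)
    finally show "realize_aux a (Bi \<theta> t n i) x $ 0 = (T - t) / real M ^ (n - i) * (\<Sum>q<?N. realize a F (vec 1 (\<lambda>_. U (\<theta> @ [int i, int (Suc q)]) i (Uc (\<theta> @ [int i, int (Suc q)]) t)
                (x + W (\<theta> @ [int i, int (Suc q)]) (Uc (\<theta> @ [int i, int (Suc q)]) t - t)))) $ 0)" by simp
  qed
  have mn: "maxnorm (ann_D (Bi \<theta> t n i)) \<le> M ^ (n - i) * (m0 * (3 * M) ^ i)" unfolding e using sc bp lP by simp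
  show ?thesis using R mn unfolding e using sc bp by simp
qed

end

context MT
begin

interpretation JJ: Jctx J dd a by (rule Jc)

lemma Ci_props:
  assumes th: "\<theta> \<in> Theta" and t: "t \<in> {0..T}" and P: "IHP (max (i - 1) 0)"
  shows "is_ANN (Ci \<theta> t n i) \<and> ann_I (Ci \<theta> t n i) = d \<and> ann_O (Ci \<theta> t n i) = 1
    \<and> length (Ci \<theta> t n i) \<le> Lb (max (i - 1) 0) + ann_H F
    \<and> maxnorm (ann_D (Ci \<theta> t n i)) \<le> M ^ (n - i) * (m0 * (3 * M) ^ (max (i - 1) 0))
    \<and> (\<forall>x \<in> carrier_vec d. realize_aux a (Ci \<theta> t n i) x $ 0
          = (t - T) * indN i / real M ^ (n - i) * (\<Sum>q<M ^ (n - i). realize a F (vec 1 (\<lambda>_. U (\<theta> @ [- int i, int (Suc q)]) (max (i - 1) 0) (Uc (\<theta> @ [int i, int (Suc q)]) t)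
                (x + W (\<theta> @ [int i, int (Suc q)]) (Uc (\<theta> @ [int i, int (Suc q)]) t - t)))) $ 0))"
proof -
  let ?N = "M ^ (n - i)"
  let ?Ps = "map (Ck \<theta> t i) [1..<?N + 1]"
  have lP: "length ?Ps = ?N" by (simp only: length_map len_upt1)
  have nth: "\<And>q. q < ?N \<Longrightarrow> ?Ps ! q = Ck \<theta> t i (Suc q)" by (rule nth_map_upt1)
  have ne: "?Ps \<noteq> []" using upt1_ne[OF Mpow[of "n - i"]] map_is_Nil_conv by blast
  have bp: "is_ANN (ann_boxplus J ?Ps) \<and> ann_I (ann_boxplus J ?Ps) = d \<and> ann_O (ann_boxplus J ?Ps) = 1
     \<and> length (ann_boxplus J ?Ps) \<le> Lb (max (i - 1) 0) + ann_H F
     \<and> maxnorm (ann_D (ann_boxplus J ?Ps)) \<le> (\<Sum>q<length ?Ps. m0 * (3 * M) ^ (max (i - 1) 0))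
     \<and> (\<forall>x \<in> carrier_vec d. realize_aux a (ann_boxplus J ?Ps) x $ 0 = (\<Sum>q<length ?Ps. realize_aux a (?Ps!q) x $ 0))"
  proof (rule bp_gen[OF ne])
    show "\<forall>q<length ?Ps. is_ANN (?Ps!q) \<and> ann_I (?Ps!q) = d \<and> ann_O (?Ps!q) = 1 \<and> length (?Ps!q) \<le> Lb (max (i - 1) 0) + ann_H F
              \<and> maxnorm (ann_D (?Ps!q)) \<le> m0 * (3 * M) ^ (max (i - 1) 0) \<and> dd \<le> m0 * (3 * M) ^ (max (i - 1) 0)"
    proof (intro allI impI)
      fix q assume "q < length ?Ps"
      then have q: "q < ?N" using lP by simp
      have Bw: "is_ANN (Ck \<theta> t i (Suc q)) \<and> ann_I (Ck \<theta> t i (Suc q)) = d \<and> ann_O (Ck \<theta> t i (Suc q)) = 1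
        \<and> length (Ck \<theta> t i (Suc q)) \<le> Lb (max (i - 1) 0) + ann_H F \<and> maxnorm (ann_D (Ck \<theta> t i (Suc q))) \<le> m0 * (3 * M) ^ (max (i - 1) 0)"
        using Ck_props[OF th t P] by blast
      show "is_ANN (?Ps!q) \<and> ann_I (?Ps!q) = d \<and> ann_O (?Ps!q) = 1 \<and> length (?Ps!q) \<le> Lb (max (i - 1) 0) + ann_H F
              \<and> maxnorm (ann_D (?Ps!q)) \<le> m0 * (3 * M) ^ (max (i - 1) 0) \<and> dd \<le> m0 * (3 * M) ^ (max (i - 1) 0)"
        unfolding nth[OF q] using Bw dd_le_pow by blast
    qed
  qed
  have bw: "is_ANN (ann_boxplus J ?Ps)" using bp by blast
  have sc: "is_ANN (ann_scalar ((t - T) * indN i / real ?N) (ann_boxplus J ?Ps)) \<and> ann_I (ann_scalar ((t - T) * indN i / real ?N) (ann_boxplus J ?Ps)) = ann_I (ann_boxplus J ?Ps)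
    \<and> ann_O (ann_scalar ((t - T) * indN i / real ?N) (ann_boxplus J ?Ps)) = ann_O (ann_boxplus J ?Ps)
    \<and> length (ann_scalar ((t - T) * indN i / real ?N) (ann_boxplus J ?Ps)) = length (ann_boxplus J ?Ps)
    \<and> ann_D (ann_scalar ((t - T) * indN i / real ?N) (ann_boxplus J ?Ps)) = ann_D (ann_boxplus J ?Ps)
    \<and> (\<forall>x \<in> carrier_vec (ann_I (ann_boxplus J ?Ps)). \<forall>j < ann_O (ann_boxplus J ?Ps).
        realize_aux a (ann_scalar ((t - T) * indN i / real ?N) (ann_boxplus J ?Ps)) x $ j = (t - T) * indN i / real ?N * realize_aux a (ann_boxplus J ?Ps) x $ j)"
    by (rule scal_props[OF bw])
  have e: "Ci \<theta> t n i = ann_scalar ((t - T) * indN i / real ?N) (ann_boxplus J ?Ps)" unfolding Ci_def by simp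
  have R: "\<forall>x \<in> carrier_vec d. realize_aux a (Ci \<theta> t n i) x $ 0
          = (t - T) * indN i / real M ^ (n - i) * (\<Sum>q<?N. realize a F (vec 1 (\<lambda>_. U (\<theta> @ [- int i, int (Suc q)]) (max (i - 1) 0) (Uc (\<theta> @ [int i, int (Suc q)]) t)
                (x + W (\<theta> @ [int i, int (Suc q)]) (Uc (\<theta> @ [int i, int (Suc q)]) t - t)))) $ 0)"
  proof
    fix x :: "real vec" assume x: "x \<in> carrier_vec d"
    have "realize_aux a (Ci \<theta> t n i) x $ 0 = (t - T) * indN i / real ?N * realize_aux a (ann_boxplus J ?Ps) x $ 0"
      unfolding e using sc bp x by simp
    also have "realize_aux a (ann_boxplus J ?Ps) x $ 0 = (\<Sum>q<?N. realize_aux a (?Ps!q) x $ 0)" using bp x lP by simp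
    also have "\<dots> = (\<Sum>q<?N. realize a F (vec 1 (\<lambda>_. U (\<theta> @ [- int i, int (Suc q)]) (max (i - 1) 0) (Uc (\<theta> @ [int i, int (Suc q)]) t)
                (x + W (\<theta> @ [int i, int (Suc q)]) (Uc (\<theta> @ [int i, int (Suc q)]) t - t)))) $ 0)"
      by (rule sum.cong[OF refl]) (use nth Ck_props[OF th t P] x in simp)
    finally show "realize_aux a (Ci \<theta> t n i) x $ 0 = (t - T) * indN i / real M ^ (n - i) * (\<Sum>q<?N. realize a F (vec 1 (\<lambda>_. U (\<theta> @ [- int i, int (Suc q)]) (max (i - 1) 0) (Uc (\<theta> @ [int i, int (Suc q)]) t)
                (x + W (\<theta> @ [int i, int (Suc q)]) (Uc (\<theta> @ [int i, int (Suc q)]) t - t)))) $ 0)" by simp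
  qed
  have mn: "maxnorm (ann_D (Ci \<theta> t n i)) \<le> M ^ (n - i) * (m0 * (3 * M) ^ (max (i - 1) 0))" unfolding e using sc bp lP by simp
  show ?thesis using R mn unfolding e using sc bp by simp
qed

end

context MT
begin

interpretation JJ: Jctx J dd a by (rule Jc)

lemma Lb_Suc: "Lb i + ann_H F = Lb (Suc i)" unfolding Lb_def by simp

lemma nth_map_upt0: "q < n \<Longrightarrow> map f [0..<n] ! q = f q" by simp

lemma mb_ge: "q < n \<Longrightarrow> m0 * (3 * M) ^ q \<le> M ^ (n - q) * (m0 * (3 * M) ^ q)"
  using Mpow[of "n - q"] by simp

lemma BB_props:
  assumes th: "\<theta> \<in> Theta" and t: "t \<in> {0..T}" and n: "1 \<le> n" and IH: "\<forall>i<n. IHP i"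
  shows "is_ANN (BB \<theta> t n) \<and> ann_I (BB \<theta> t n) = d \<and> ann_O (BB \<theta> t n) = 1 \<and> length (BB \<theta> t n) \<le> Lb n
    \<and> maxnorm (ann_D (BB \<theta> t n)) \<le> (\<Sum>q<n. M ^ (n - q) * (m0 * (3 * M) ^ q))
    \<and> (\<forall>x \<in> carrier_vec d. realize_aux a (BB \<theta> t n) x $ 0 = (\<Sum>q<n.
          (T - t) / real M ^ (n - q) * (\<Sum>r<M ^ (n - q). realize a F (vec 1 (\<lambda>_. U (\<theta> @ [int q, int (Suc r)]) q (Uc (\<theta> @ [int q, int (Suc r)]) t)
                (x + W (\<theta> @ [int q, int (Suc r)]) (Uc (\<theta> @ [int q, int (Suc r)]) t - t)))) $ 0)))"
proof -
  let ?Ps = "map (Bi \<theta> t n) [0..<n]"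
  have lP: "length ?Ps = n" by simp
  have ne: "?Ps \<noteq> []" using n by simp
  have bp: "is_ANN (ann_boxplus J ?Ps) \<and> ann_I (ann_boxplus J ?Ps) = d \<and> ann_O (ann_boxplus J ?Ps) = 1
     \<and> length (ann_boxplus J ?Ps) \<le> Lb n
     \<and> maxnorm (ann_D (ann_boxplus J ?Ps)) \<le> (\<Sum>q<length ?Ps. M ^ (n - q) * (m0 * (3 * M) ^ q))
     \<and> (\<forall>x \<in> carrier_vec d. realize_aux a (ann_boxplus J ?Ps) x $ 0 = (\<Sum>q<length ?Ps. realize_aux a (?Ps!q) x $ 0))"
  proof (rule bp_gen[OF ne], intro allI impI)
    fix q assume "q < length ?Ps"
    then have q: "q < n" by simp
    have Bw: "is_ANN (Bi \<theta> t n q) \<and> ann_I (Bi \<theta> t n q) = d \<and> ann_O (Bi \<theta> t n q) = 1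
      \<and> length (Bi \<theta> t n q) \<le> Lb q + ann_H F \<and> maxnorm (ann_D (Bi \<theta> t n q)) \<le> M ^ (n - q) * (m0 * (3 * M) ^ q)"
      using Bi_props[OF th t IH[rule_format, OF q]] by blast
    have l: "Lb q + ann_H F \<le> Lb n" unfolding Lb_Suc using q by (intro Lb_mono) simp
    have dl: "dd \<le> M ^ (n - q) * (m0 * (3 * M) ^ q)" using dd_le_pow[of q] mb_ge[OF q] by linarith
    show "is_ANN (?Ps!q) \<and> ann_I (?Ps!q) = d \<and> ann_O (?Ps!q) = 1 \<and> length (?Ps!q) \<le> Lb n
              \<and> maxnorm (ann_D (?Ps!q)) \<le> M ^ (n - q) * (m0 * (3 * M) ^ q) \<and> dd \<le> M ^ (n - q) * (m0 * (3 * M) ^ q)"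
      unfolding nth_map_upt0[OF q] using Bw l dl by linarith
  qed
  have R: "\<forall>x \<in> carrier_vec d. realize_aux a (BB \<theta> t n) x $ 0 = (\<Sum>q<n.
          (T - t) / real M ^ (n - q) * (\<Sum>r<M ^ (n - q). realize a F (vec 1 (\<lambda>_. U (\<theta> @ [int q, int (Suc r)]) q (Uc (\<theta> @ [int q, int (Suc r)]) t)
                (x + W (\<theta> @ [int q, int (Suc r)]) (Uc (\<theta> @ [int q, int (Suc r)]) t - t)))) $ 0))"
  proof
    fix x :: "real vec" assume x: "x \<in> carrier_vec d"
    have "realize_aux a (BB \<theta> t n) x $ 0 = (\<Sum>q<n. realize_aux a (Bi \<theta> t n q) x $ 0)"
      unfolding BB_def using bp x by simp
    also have "\<dots> = (\<Sum>q<n.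
          (T - t) / real M ^ (n - q) * (\<Sum>r<M ^ (n - q). realize a F (vec 1 (\<lambda>_. U (\<theta> @ [int q, int (Suc r)]) q (Uc (\<theta> @ [int q, int (Suc r)]) t)
                (x + W (\<theta> @ [int q, int (Suc r)]) (Uc (\<theta> @ [int q, int (Suc r)]) t - t)))) $ 0))"
    proof (rule sum.cong[OF refl])
      fix q assume "q \<in> {..<n}"
      then have q: "q < n" by simp
      show "realize_aux a (Bi \<theta> t n q) x $ 0 = (T - t) / real M ^ (n - q) * (\<Sum>r<M ^ (n - q). realize a F (vec 1 (\<lambda>_. U (\<theta> @ [int q, int (Suc r)]) q (Uc (\<theta> @ [int q, int (Suc r)]) t)
                (x + W (\<theta> @ [int q, int (Suc r)]) (Uc (\<theta> @ [int q, int (Suc r)]) t - t)))) $ 0)"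
        using Bi_props[OF th t IH[rule_format, OF q]] x by blast
    qed
    finally show "realize_aux a (BB \<theta> t n) x $ 0 = (\<Sum>q<n.
          (T - t) / real M ^ (n - q) * (\<Sum>r<M ^ (n - q). realize a F (vec 1 (\<lambda>_. U (\<theta> @ [int q, int (Suc r)]) q (Uc (\<theta> @ [int q, int (Suc r)]) t)
                (x + W (\<theta> @ [int q, int (Suc r)]) (Uc (\<theta> @ [int q, int (Suc r)]) t - t)))) $ 0))" .
  qed
  show ?thesis using bp R unfolding BB_def lP by blast
qed

lemma CC_props:
  assumes th: "\<theta> \<in> Theta" and t: "t \<in> {0..T}" and n: "1 \<le> n" and IH: "\<forall>i<n. IHP i"
  shows "is_ANN (CC \<theta> t n) \<and> ann_I (CC \<theta> t n) = d \<and> ann_O (CC \<theta> t n) = 1 \<and> length (CC \<theta> t n) \<le> Lb n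
    \<and> maxnorm (ann_D (CC \<theta> t n)) \<le> (\<Sum>q<n. M ^ (n - q) * (m0 * (3 * M) ^ q))
    \<and> (\<forall>x \<in> carrier_vec d. realize_aux a (CC \<theta> t n) x $ 0 = (\<Sum>q<n.
          (t - T) * indN q / real M ^ (n - q) * (\<Sum>r<M ^ (n - q). realize a F (vec 1 (\<lambda>_. U (\<theta> @ [- int q, int (Suc r)]) (max (q - 1) 0) (Uc (\<theta> @ [int q, int (Suc r)]) t)
                (x + W (\<theta> @ [int q, int (Suc r)]) (Uc (\<theta> @ [int q, int (Suc r)]) t - t)))) $ 0)))"
proof -
  let ?Ps = "map (Ci \<theta> t n) [0..<n]"
  have lP: "length ?Ps = n" by simp
  have ne: "?Ps \<noteq> []" using n by simp
  have IHq: "\<And>q. q < n \<Longrightarrow> IHP (max (q - 1) 0)" using IH by simp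
  have bp: "is_ANN (ann_boxplus J ?Ps) \<and> ann_I (ann_boxplus J ?Ps) = d \<and> ann_O (ann_boxplus J ?Ps) = 1
     \<and> length (ann_boxplus J ?Ps) \<le> Lb n
     \<and> maxnorm (ann_D (ann_boxplus J ?Ps)) \<le> (\<Sum>q<length ?Ps. M ^ (n - q) * (m0 * (3 * M) ^ q))
     \<and> (\<forall>x \<in> carrier_vec d. realize_aux a (ann_boxplus J ?Ps) x $ 0 = (\<Sum>q<length ?Ps. realize_aux a (?Ps!q) x $ 0))"
  proof (rule bp_gen[OF ne], intro allI impI)
    fix q assume "q < length ?Ps"
    then have q: "q < n" by simp
    have Bw: "is_ANN (Ci \<theta> t n q) \<and> ann_I (Ci \<theta> t n q) = d \<and> ann_O (Ci \<theta> t n q) = 1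
      \<and> length (Ci \<theta> t n q) \<le> Lb (max (q - 1) 0) + ann_H F \<and> maxnorm (ann_D (Ci \<theta> t n q)) \<le> M ^ (n - q) * (m0 * (3 * M) ^ (max (q - 1) 0))"
      using Ci_props[OF th t IHq[OF q]] by blast
    have l: "Lb (max (q - 1) 0) + ann_H F \<le> Lb n" unfolding Lb_Suc using q by (intro Lb_mono) simp
    have m: "M ^ (n - q) * (m0 * (3 * M) ^ (max (q - 1) 0)) \<le> M ^ (n - q) * (m0 * (3 * M) ^ q)"
      by (intro mult_le_mono2 pow_mono3) simp
    have dl: "dd \<le> M ^ (n - q) * (m0 * (3 * M) ^ q)" using dd_le_pow[of q] mb_ge[OF q] by linarith
    show "is_ANN (?Ps!q) \<and> ann_I (?Ps!q) = d \<and> ann_O (?Ps!q) = 1 \<and> length (?Ps!q) \<le> Lb n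
              \<and> maxnorm (ann_D (?Ps!q)) \<le> M ^ (n - q) * (m0 * (3 * M) ^ q) \<and> dd \<le> M ^ (n - q) * (m0 * (3 * M) ^ q)"
      unfolding nth_map_upt0[OF q] using Bw l m dl by linarith
  qed
  have R: "\<forall>x \<in> carrier_vec d. realize_aux a (CC \<theta> t n) x $ 0 = (\<Sum>q<n.
          (t - T) * indN q / real M ^ (n - q) * (\<Sum>r<M ^ (n - q). realize a F (vec 1 (\<lambda>_. U (\<theta> @ [- int q, int (Suc r)]) (max (q - 1) 0) (Uc (\<theta> @ [int q, int (Suc r)]) t)
                (x + W (\<theta> @ [int q, int (Suc r)]) (Uc (\<theta> @ [int q, int (Suc r)]) t - t)))) $ 0))"
  proof
    fix x :: "real vec" assume x: "x \<in> carrier_vec d"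
    have "realize_aux a (CC \<theta> t n) x $ 0 = (\<Sum>q<n. realize_aux a (Ci \<theta> t n q) x $ 0)"
      unfolding CC_def using bp x by simp
    also have "\<dots> = (\<Sum>q<n.
          (t - T) * indN q / real M ^ (n - q) * (\<Sum>r<M ^ (n - q). realize a F (vec 1 (\<lambda>_. U (\<theta> @ [- int q, int (Suc r)]) (max (q - 1) 0) (Uc (\<theta> @ [int q, int (Suc r)]) t)
                (x + W (\<theta> @ [int q, int (Suc r)]) (Uc (\<theta> @ [int q, int (Suc r)]) t - t)))) $ 0))"
    proof (rule sum.cong[OF refl])
      fix q assume "q \<in> {..<n}"
      then have q: "q < n" by simp
      show "realize_aux a (Ci \<theta> t n q) x $ 0 = (t - T) * indN q / real M ^ (n - q) * (\<Sum>r<M ^ (n - q). realize a F (vec 1 (\<lambda>_. U (\<theta> @ [- int q, int (Suc r)]) (max (q - 1) 0) (Uc (\<theta> @ [int q, int (Suc r)]) t)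
                (x + W (\<theta> @ [int q, int (Suc r)]) (Uc (\<theta> @ [int q, int (Suc r)]) t - t)))) $ 0)"
        using Ci_props[OF th t IHq[OF q]] x by blast
    qed
    finally show "realize_aux a (CC \<theta> t n) x $ 0 = (\<Sum>q<n.
          (t - T) * indN q / real M ^ (n - q) * (\<Sum>r<M ^ (n - q). realize a F (vec 1 (\<lambda>_. U (\<theta> @ [- int q, int (Suc r)]) (max (q - 1) 0) (Uc (\<theta> @ [int q, int (Suc r)]) t)
                (x + W (\<theta> @ [int q, int (Suc r)]) (Uc (\<theta> @ [int q, int (Suc r)]) t - t)))) $ 0))" .
  qed
  show ?thesis using bp R unfolding CC_def lP by blast
qed

end

context MT
begin

interpretation JJ: Jctx J dd a by (rule Jc)

lemma Bi_D:
  assumes th1: "\<theta>1 \<in> Theta" and t1: "t1 \<in> {0..T}" and th2: "\<theta>2 \<in> Theta" and t2: "t2 \<in> {0..T}"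
    and P: "IHP i" and DI: "IHD i"
  shows "ann_D (Bi \<theta>1 t1 n i) = ann_D (Bi \<theta>2 t2 n i)"
proof -
  let ?N = "M ^ (n - i)"
  define Ps where "Ps \<theta> t = map (Bk \<theta> t i) [1..<?N + 1]" for \<theta> t
  have lP: "\<And>\<theta> t. length (Ps \<theta> t) = ?N" unfolding Ps_def by (simp only: length_map len_upt1)
  have nth: "\<And>\<theta> t q. q < ?N \<Longrightarrow> Ps \<theta> t ! q = Bk \<theta> t i (Suc q)" unfolding Ps_def by (rule nth_map_upt1)
  have ne: "\<And>\<theta> t. Ps \<theta> t \<noteq> []" unfolding Ps_def using upt1_ne[OF Mpow[of "n - i"]] map_is_Nil_conv by blast
  have w: "\<forall>q<length (Ps \<theta> t). is_ANN (Ps \<theta> t!q) \<and> ann_I (Ps \<theta> t!q) = d \<and> ann_O (Ps \<theta> t!q) = 1"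
    if th: "\<theta> \<in> Theta" and t: "t \<in> {0..T}" for \<theta> t
  proof (intro allI impI)
    fix q assume "q < length (Ps \<theta> t)"
    then have q: "q < ?N" using lP by simp
    show "is_ANN (Ps \<theta> t!q) \<and> ann_I (Ps \<theta> t!q) = d \<and> ann_O (Ps \<theta> t!q) = 1"
      unfolding nth[OF q] using Bk_props[OF th t P] by blast
  qed
  have bpw: "is_ANN (ann_boxplus J (Ps \<theta> t))" if th: "\<theta> \<in> Theta" and t: "t \<in> {0..T}" for \<theta> t
    using JJ.bp_props[OF ne w[OF th t]] by blast
  have eD: "ann_D (Bi \<theta> t n i) = ann_D (ann_boxplus J (Ps \<theta> t))" if th: "\<theta> \<in> Theta" and t: "t \<in> {0..T}" for \<theta> t
  proof -
    have "Bi \<theta> t n i = ann_scalar ((T - t) / real ?N) (ann_boxplus J (Ps \<theta> t))" unfolding Bi_def Ps_def by simp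
    then show ?thesis using scal_props[OF bpw[OF th t], of "(T - t) / real ?N" a] by simp
  qed
  have "ann_D (ann_boxplus J (Ps \<theta>1 t1)) = ann_D (ann_boxplus J (Ps \<theta>2 t2))"
  proof (rule JJ.bp_D_cong[OF ne w[OF th1 t1] w[OF th2 t2]])
    show "length (Ps \<theta>2 t2) = length (Ps \<theta>1 t1)" using lP by simp
    show "\<forall>q<length (Ps \<theta>1 t1). ann_D (Ps \<theta>1 t1 ! q) = ann_D (Ps \<theta>2 t2 ! q)"
    proof (intro allI impI)
      fix q assume "q < length (Ps \<theta>1 t1)"
      then have q: "q < ?N" using lP by simp
      have a1: "ann_D (Bk \<theta>1 t1 i (Suc q)) = butlast (ann_D (UU (\<theta>1 @ [int i, int (Suc q)]) i (Uc (\<theta>1 @ [int i, int (Suc q)]) t1))) @ tl (ann_D F)"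
        using Bk_props[OF th1 t1 P] by blast
      have a2: "ann_D (Bk \<theta>2 t2 i (Suc q)) = butlast (ann_D (UU (\<theta>2 @ [int i, int (Suc q)]) i (Uc (\<theta>2 @ [int i, int (Suc q)]) t2))) @ tl (ann_D F)"
        using Bk_props[OF th2 t2 P] by blast
      have "ann_D (UU (\<theta>1 @ [int i, int (Suc q)]) i (Uc (\<theta>1 @ [int i, int (Suc q)]) t1))
          = ann_D (UU (\<theta>2 @ [int i, int (Suc q)]) i (Uc (\<theta>2 @ [int i, int (Suc q)]) t2))"
        using DI Theta_app[OF th1] Theta_app[OF th2] Uc_in[OF Theta_app[OF th1] t1] Uc_in[OF Theta_app[OF th2] t2]
        unfolding IHD_def by blast
      then show "ann_D (Ps \<theta>1 t1 ! q) = ann_D (Ps \<theta>2 t2 ! q)" unfolding nth[OF q] a1 a2 by simp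
    qed
  qed
  then show ?thesis using eD[OF th1 t1] eD[OF th2 t2] by simp
qed

lemma Ci_D:
  assumes th1: "\<theta>1 \<in> Theta" and t1: "t1 \<in> {0..T}" and th2: "\<theta>2 \<in> Theta" and t2: "t2 \<in> {0..T}"
    and P: "IHP (max (i - 1) 0)" and DI: "IHD (max (i - 1) 0)"
  shows "ann_D (Ci \<theta>1 t1 n i) = ann_D (Ci \<theta>2 t2 n i)"
proof -
  let ?N = "M ^ (n - i)"
  define Ps where "Ps \<theta> t = map (Ck \<theta> t i) [1..<?N + 1]" for \<theta> t
  have lP: "\<And>\<theta> t. length (Ps \<theta> t) = ?N" unfolding Ps_def by (simp only: length_map len_upt1)
  have nth: "\<And>\<theta> t q. q < ?N \<Longrightarrow> Ps \<theta> t ! q = Ck \<theta> t i (Suc q)" unfolding Ps_def by (rule nth_map_upt1)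
  have ne: "\<And>\<theta> t. Ps \<theta> t \<noteq> []" unfolding Ps_def using upt1_ne[OF Mpow[of "n - i"]] map_is_Nil_conv by blast
  have w: "\<forall>q<length (Ps \<theta> t). is_ANN (Ps \<theta> t!q) \<and> ann_I (Ps \<theta> t!q) = d \<and> ann_O (Ps \<theta> t!q) = 1"
    if th: "\<theta> \<in> Theta" and t: "t \<in> {0..T}" for \<theta> t
  proof (intro allI impI)
    fix q assume "q < length (Ps \<theta> t)"
    then have q: "q < ?N" using lP by simp
    show "is_ANN (Ps \<theta> t!q) \<and> ann_I (Ps \<theta> t!q) = d \<and> ann_O (Ps \<theta> t!q) = 1"
      unfolding nth[OF q] using Ck_props[OF th t P] by blast
  qed
  have bpw: "is_ANN (ann_boxplus J (Ps \<theta> t))" if th: "\<theta> \<in> Theta" and t: "t \<in> {0..T}" for \<theta> t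
    using JJ.bp_props[OF ne w[OF th t]] by blast
  have eD: "ann_D (Ci \<theta> t n i) = ann_D (ann_boxplus J (Ps \<theta> t))" if th: "\<theta> \<in> Theta" and t: "t \<in> {0..T}" for \<theta> t
  proof -
    have "Ci \<theta> t n i = ann_scalar ((t - T) * indN i / real ?N) (ann_boxplus J (Ps \<theta> t))" unfolding Ci_def Ps_def by simp
    then show ?thesis using scal_props[OF bpw[OF th t], of "(t - T) * indN i / real ?N" a] by simp
  qed
  have "ann_D (ann_boxplus J (Ps \<theta>1 t1)) = ann_D (ann_boxplus J (Ps \<theta>2 t2))"
  proof (rule JJ.bp_D_cong[OF ne w[OF th1 t1] w[OF th2 t2]])
    show "length (Ps \<theta>2 t2) = length (Ps \<theta>1 t1)" using lP by simp
    show "\<forall>q<length (Ps \<theta>1 t1). ann_D (Ps \<theta>1 t1 ! q) = ann_D (Ps \<theta>2 t2 ! q)"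
    proof (intro allI impI)
      fix q assume "q < length (Ps \<theta>1 t1)"
      then have q: "q < ?N" using lP by simp
      have a1: "ann_D (Ck \<theta>1 t1 i (Suc q)) = butlast (ann_D (UU (\<theta>1 @ [- int i, int (Suc q)]) (max (i - 1) 0) (Uc (\<theta>1 @ [int i, int (Suc q)]) t1))) @ tl (ann_D F)"
        using Ck_props[OF th1 t1 P] by blast
      have a2: "ann_D (Ck \<theta>2 t2 i (Suc q)) = butlast (ann_D (UU (\<theta>2 @ [- int i, int (Suc q)]) (max (i - 1) 0) (Uc (\<theta>2 @ [int i, int (Suc q)]) t2))) @ tl (ann_D F)"
        using Ck_props[OF th2 t2 P] by blast
      have "ann_D (UU (\<theta>1 @ [- int i, int (Suc q)]) (max (i - 1) 0) (Uc (\<theta>1 @ [int i, int (Suc q)]) t1))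
          = ann_D (UU (\<theta>2 @ [- int i, int (Suc q)]) (max (i - 1) 0) (Uc (\<theta>2 @ [int i, int (Suc q)]) t2))"
        using DI Theta_app[OF th1] Theta_app[OF th2] Uc_in[OF Theta_app[OF th1] t1] Uc_in[OF Theta_app[OF th2] t2]
        unfolding IHD_def by blast
      then show "ann_D (Ps \<theta>1 t1 ! q) = ann_D (Ps \<theta>2 t2 ! q)" unfolding nth[OF q] a1 a2 by simp
    qed
  qed
  then show ?thesis using eD[OF th1 t1] eD[OF th2 t2] by simp
qed

end

lemma sum1N: "(\<Sum>k = 1..N. h k) = (\<Sum>r<N. h (Suc r))"
  by (induction N) auto

lemma alg_small:
  fixes T t k A e B :: real
  shows "(T - t) / k * (A - e * B) = (T - t) / k * A + (t - T) * e / k * B"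
proof -
  have "(T - t) * (A - e * B) = (T - t) * A + (t - T) * e * B" by (simp add: algebra_simps)
  then have "(T - t) * (A - e * B) / k = ((T - t) * A + (t - T) * e * B) / k" by simp
  then show ?thesis by (simp add: add_divide_distrib)
qed

lemma alg_main:
  fixes g :: "nat \<Rightarrow> real" and f1 f2 :: "nat \<Rightarrow> nat \<Rightarrow> real" and K :: real and c :: "nat \<Rightarrow> real"
  assumes n: "1 \<le> n"
  shows "indN n / K ^ n * (\<Sum>k = 1..N0. g k) + (\<Sum>i<n. (T - t) / K ^ (n - i) * (\<Sum>k = 1..Nf i. f1 i k - indN i * f2 i k))
    = (\<Sum>q<N0. 1 / K ^ n * g (Suc q)) + (\<Sum>q<n. (T - t) / K ^ (n - q) * (\<Sum>r<Nf q. f1 q (Suc r)))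
      + (\<Sum>q<n. (t - T) * indN q / K ^ (n - q) * (\<Sum>r<Nf q. f2 q (Suc r)))"
proof -
  have i1: "indN n = 1" using n unfolding indN_def by simp
  have A: "indN n / K ^ n * (\<Sum>k = 1..N0. g k) = (\<Sum>q<N0. 1 / K ^ n * g (Suc q))"
    unfolding i1 sum1N by (simp add: sum_distrib_left)
  have B: "(T - t) / K ^ (n - i) * (\<Sum>k = 1..Nf i. f1 i k - indN i * f2 i k)
      = (T - t) / K ^ (n - i) * (\<Sum>r<Nf i. f1 i (Suc r)) + (t - T) * indN i / K ^ (n - i) * (\<Sum>r<Nf i. f2 i (Suc r))" for i
  proof -
    have "(\<Sum>k = 1..Nf i. f1 i k - indN i * f2 i k) = (\<Sum>r<Nf i. f1 i (Suc r)) - indN i * (\<Sum>r<Nf i. f2 i (Suc r))"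
      unfolding sum1N by (simp add: sum_subtractf sum_distrib_left)
    then show ?thesis by (simp only: alg_small)
  qed
  show ?thesis unfolding A B sum.distrib by simp
qed

lemma geo3: "1 + 2 * (\<Sum>q<n. 3 ^ q) = (3::nat) ^ n"
  by (induction n) auto

context MT
begin

interpretation JJ: Jctx J dd a by (rule Jc)

lemma S_eq: "(\<Sum>q<n. M ^ (n - q) * (m0 * (3 * M) ^ q)) = m0 * M ^ n * (\<Sum>q<n. 3 ^ q)"
proof -
  have "(\<Sum>q<n. M ^ (n - q) * (m0 * (3 * M) ^ q)) = (\<Sum>q<n. m0 * M ^ n * 3 ^ q)"
  proof (rule sum.cong[OF refl])
    fix q assume "q \<in> {..<n}"
    then have q: "n - q + q = n" by simp
    have "M ^ (n - q) * M ^ q = M ^ n" using q by (metis power_add)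
    then show "M ^ (n - q) * (m0 * (3 * M) ^ q) = m0 * M ^ n * 3 ^ q"
      by (simp add: power_mult_distrib algebra_simps)
  qed
  then show ?thesis by (simp add: sum_distrib_left)
qed

lemma total_bound: "M ^ n * m0 + ((\<Sum>q<n. M ^ (n - q) * (m0 * (3 * M) ^ q)) + (\<Sum>q<n. M ^ (n - q) * (m0 * (3 * M) ^ q)))
   = m0 * (3 * M) ^ n"
proof -
  have "M ^ n * m0 + (m0 * M ^ n * (\<Sum>q<n. 3 ^ q) + m0 * M ^ n * (\<Sum>q<n. 3 ^ q)) = m0 * M ^ n * (1 + 2 * (\<Sum>q<n. 3 ^ q))"
    by (simp add: algebra_simps)
  also have "\<dots> = m0 * (3 * M) ^ n" unfolding geo3 by (simp add: power_mult_distrib)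
  finally show ?thesis unfolding S_eq .
qed

lemma three: "P A \<Longrightarrow> P B \<Longrightarrow> P C \<Longrightarrow> \<forall>q<length [A, B, C]. P ([A, B, C] ! q)"
  by (auto simp: less_Suc_eq)

lemma three2: "R A A' \<Longrightarrow> R B B' \<Longrightarrow> R C C' \<Longrightarrow> \<forall>q<length [A, B, C]. R ([A, B, C] ! q) ([A', B', C'] ! q)"
  by (auto simp: less_Suc_eq)

lemma BB_D:
  assumes th1: "\<theta>1 \<in> Theta" and t1: "t1 \<in> {0..T}" and th2: "\<theta>2 \<in> Theta" and t2: "t2 \<in> {0..T}"
    and n: "1 \<le> n" and IH: "\<forall>i<n. IHP i \<and> IHD i"
  shows "ann_D (BB \<theta>1 t1 n) = ann_D (BB \<theta>2 t2 n)"
proof -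
  have w: "\<forall>q<length (map (Bi \<theta> t n) [0..<n]). is_ANN (map (Bi \<theta> t n) [0..<n]!q) \<and> ann_I (map (Bi \<theta> t n) [0..<n]!q) = d \<and> ann_O (map (Bi \<theta> t n) [0..<n]!q) = 1"
    if th: "\<theta> \<in> Theta" and t: "t \<in> {0..T}" for \<theta> t
  proof (intro allI impI)
    fix q assume "q < length (map (Bi \<theta> t n) [0..<n])"
    then have q: "q < n" by simp
    show "is_ANN (map (Bi \<theta> t n) [0..<n]!q) \<and> ann_I (map (Bi \<theta> t n) [0..<n]!q) = d \<and> ann_O (map (Bi \<theta> t n) [0..<n]!q) = 1"
      unfolding nth_map_upt0[OF q] using Bi_props[OF th t, of q n] IH q by blast
  qed
  have ne: "map (Bi \<theta>1 t1 n) [0..<n] \<noteq> []" using n by simp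
  show ?thesis unfolding BB_def
  proof (rule JJ.bp_D_cong[OF ne w[OF th1 t1] w[OF th2 t2]])
    show "length (map (Bi \<theta>2 t2 n) [0..<n]) = length (map (Bi \<theta>1 t1 n) [0..<n])" by simp
    show "\<forall>q<length (map (Bi \<theta>1 t1 n) [0..<n]). ann_D (map (Bi \<theta>1 t1 n) [0..<n] ! q) = ann_D (map (Bi \<theta>2 t2 n) [0..<n] ! q)"
    proof (intro allI impI)
      fix q assume "q < length (map (Bi \<theta>1 t1 n) [0..<n])"
      then have q: "q < n" by simp
      show "ann_D (map (Bi \<theta>1 t1 n) [0..<n] ! q) = ann_D (map (Bi \<theta>2 t2 n) [0..<n] ! q)"
        unfolding nth_map_upt0[OF q] using Bi_D[OF th1 t1 th2 t2] IH q by blast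
    qed
  qed
qed

lemma CC_D:
  assumes th1: "\<theta>1 \<in> Theta" and t1: "t1 \<in> {0..T}" and th2: "\<theta>2 \<in> Theta" and t2: "t2 \<in> {0..T}"
    and n: "1 \<le> n" and IH: "\<forall>i<n. IHP i \<and> IHD i"
  shows "ann_D (CC \<theta>1 t1 n) = ann_D (CC \<theta>2 t2 n)"
proof -
  have IHq: "\<And>q. q < n \<Longrightarrow> IHP (max (q - 1) 0) \<and> IHD (max (q - 1) 0)" using IH by simp
  have w: "\<forall>q<length (map (Ci \<theta> t n) [0..<n]). is_ANN (map (Ci \<theta> t n) [0..<n]!q) \<and> ann_I (map (Ci \<theta> t n) [0..<n]!q) = d \<and> ann_O (map (Ci \<theta> t n) [0..<n]!q) = 1"
    if th: "\<theta> \<in> Theta" and t: "t \<in> {0..T}" for \<theta> t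
  proof (intro allI impI)
    fix q assume "q < length (map (Ci \<theta> t n) [0..<n])"
    then have q: "q < n" by simp
    show "is_ANN (map (Ci \<theta> t n) [0..<n]!q) \<and> ann_I (map (Ci \<theta> t n) [0..<n]!q) = d \<and> ann_O (map (Ci \<theta> t n) [0..<n]!q) = 1"
      unfolding nth_map_upt0[OF q] using Ci_props[OF th t, of q n] IHq[OF q] by blast
  qed
  have ne: "map (Ci \<theta>1 t1 n) [0..<n] \<noteq> []" using n by simp
  show ?thesis unfolding CC_def
  proof (rule JJ.bp_D_cong[OF ne w[OF th1 t1] w[OF th2 t2]])
    show "length (map (Ci \<theta>2 t2 n) [0..<n]) = length (map (Ci \<theta>1 t1 n) [0..<n])" by simp
    show "\<forall>q<length (map (Ci \<theta>1 t1 n) [0..<n]). ann_D (map (Ci \<theta>1 t1 n) [0..<n] ! q) = ann_D (map (Ci \<theta>2 t2 n) [0..<n] ! q)"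
    proof (intro allI impI)
      fix q assume "q < length (map (Ci \<theta>1 t1 n) [0..<n])"
      then have q: "q < n" by simp
      show "ann_D (map (Ci \<theta>1 t1 n) [0..<n] ! q) = ann_D (map (Ci \<theta>2 t2 n) [0..<n] ! q)"
        unfolding nth_map_upt0[OF q] using Ci_D[OF th1 t1 th2 t2] IHq[OF q] by blast
    qed
  qed
qed

end

lemma sum3: "(\<Sum>q<length [A, B, C]. f ([A, B, C] ! q)) = f A + f B + (f C :: 'a :: comm_monoid_add)"
  by (simp add: numeral_3_eq_3 add.assoc)

context MT
begin

interpretation JJ: Jctx J dd a by (rule Jc)

lemma step_props:
  assumes th: "\<theta> \<in> Theta" and t: "t \<in> {0..T}" and n: "1 \<le> n" and IH: "\<forall>i<n. IHP i \<and> IHD i"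
  shows "Props n \<theta> t"
proof -
  have IHP': "\<forall>i<n. IHP i" using IH by blast
  have AAp: "is_ANN (AA \<theta> t n) \<and> ann_I (AA \<theta> t n) = d \<and> ann_O (AA \<theta> t n) = 1
    \<and> length (AA \<theta> t n) = length G \<and> maxnorm (ann_D (AA \<theta> t n)) \<le> M ^ n * m0
    \<and> (\<forall>x \<in> carrier_vec d. realize_aux a (AA \<theta> t n) x $ 0
         = (\<Sum>q<M ^ n. 1 / real M ^ n * realize a G (x + W (\<theta> @ [0, - int (Suc q)]) (T - t)) $ 0))"
    by (rule AA_props[OF th t])
  note BBp = BB_props[OF th t n IHP']
  note CCp = CC_props[OF th t n IHP']
  define S where "S = (\<Sum>q<n. M ^ (n - q) * (m0 * (3 * M) ^ q))"
  define mb where "mb q = (if q = 0 then M ^ n * m0 else S)" for q :: nat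
  let ?P3 = "[AA \<theta> t n, BB \<theta> t n, CC \<theta> t n]"
  have ddA: "dd \<le> M ^ n * m0" using dd_m0 Mpow[of n] by (metis dual_order.trans mult_le_mono1 mult_1)
  have SA: "M ^ n * m0 \<le> S"
  proof -
    have "M ^ (n - 0) * (m0 * (3 * M) ^ 0) \<le> S" unfolding S_def
      by (rule member_le_sum[where f = "\<lambda>q. M ^ (n - q) * (m0 * (3 * M) ^ q)"]) (use n in auto)
    then show ?thesis by simp
  qed
  have LG: "length G \<le> Lb n" unfolding Lb_def ann_L_def by simp
  have bp: "is_ANN (ann_boxplus J ?P3) \<and> ann_I (ann_boxplus J ?P3) = d \<and> ann_O (ann_boxplus J ?P3) = 1
     \<and> length (ann_boxplus J ?P3) \<le> Lb n
     \<and> maxnorm (ann_D (ann_boxplus J ?P3)) \<le> (\<Sum>q<length ?P3. mb q)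
     \<and> (\<forall>x \<in> carrier_vec d. realize_aux a (ann_boxplus J ?P3) x $ 0 = (\<Sum>q<length ?P3. realize_aux a (?P3!q) x $ 0))"
  proof (rule bp_gen, simp, intro allI impI)
    fix q assume "q < length ?P3"
    then have "q = 0 \<or> q = 1 \<or> q = 2" by auto
    then show "is_ANN (?P3!q) \<and> ann_I (?P3!q) = d \<and> ann_O (?P3!q) = 1 \<and> length (?P3!q) \<le> Lb n
              \<and> maxnorm (ann_D (?P3!q)) \<le> mb q \<and> dd \<le> mb q"
    proof (elim disjE)
      assume q: "q = 0"
      show ?thesis unfolding q mb_def using AAp LG ddA by simp
    next
      assume q: "q = 1"
      show ?thesis unfolding q mb_def using BBp ddA SA unfolding S_def[symmetric] by simp
    next
      assume q: "q = 2"
      show ?thesis unfolding q mb_def using CCp ddA SA unfolding S_def[symmetric] by simp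
    qed
  qed
  have e: "UU \<theta> n t = ann_boxplus J ?P3" by (rule UU_split[OF th n t])
  have mn: "maxnorm (ann_D (UU \<theta> n t)) \<le> m0 * (3 * M) ^ n"
  proof -
    have "(\<Sum>q<length ?P3. mb q) = M ^ n * m0 + (S + S)" by (simp add: numeral_3_eq_3 mb_def)
    also have "\<dots> = m0 * (3 * M) ^ n" unfolding S_def by (rule total_bound)
    finally show ?thesis unfolding e using bp by simp
  qed
  have R: "\<forall>x \<in> carrier_vec d. U \<theta> n t x = realize_aux a (UU \<theta> n t) x $ 0"
  proof
    fix x :: "real vec" assume x: "x \<in> carrier_vec d"
    have "U \<theta> n t x = indN n / real M ^ n *
            (\<Sum>k = 1..M ^ n. realize a G (x + W (\<theta> @ [0, - int k]) (T - t)) $ 0)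
          + (\<Sum>i<n. (T - t) / real M ^ (n - i) *
              (\<Sum>k = 1..M ^ (n - i).
                 realize a F (vec 1 (\<lambda>_. U (\<theta> @ [int i, int k]) i (Uc (\<theta> @ [int i, int k]) t)
                    (x + W (\<theta> @ [int i, int k]) (Uc (\<theta> @ [int i, int k]) t - t)))) $ 0
                 - indN i *
                   realize a F (vec 1 (\<lambda>_. U (\<theta> @ [- int i, int k]) (max (i - 1) 0)
                    (Uc (\<theta> @ [int i, int k]) t)
                    (x + W (\<theta> @ [int i, int k]) (Uc (\<theta> @ [int i, int k]) t - t)))) $ 0))"
      using Urec th t x by blast
    also have "\<dots> = (\<Sum>q<M ^ n. 1 / real M ^ n * realize a G (x + W (\<theta> @ [0, - int (Suc q)]) (T - t)) $ 0)
      + (\<Sum>q<n. (T - t) / real M ^ (n - q) * (\<Sum>r<M ^ (n - q). realize a F (vec 1 (\<lambda>_. U (\<theta> @ [int q, int (Suc r)]) q (Uc (\<theta> @ [int q, int (Suc r)]) t)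
                (x + W (\<theta> @ [int q, int (Suc r)]) (Uc (\<theta> @ [int q, int (Suc r)]) t - t)))) $ 0))
      + (\<Sum>q<n. (t - T) * indN q / real M ^ (n - q) * (\<Sum>r<M ^ (n - q). realize a F (vec 1 (\<lambda>_. U (\<theta> @ [- int q, int (Suc r)]) (max (q - 1) 0) (Uc (\<theta> @ [int q, int (Suc r)]) t)
                (x + W (\<theta> @ [int q, int (Suc r)]) (Uc (\<theta> @ [int q, int (Suc r)]) t - t)))) $ 0))"
      by (rule alg_main[OF n])
    also have "\<dots> = realize_aux a (AA \<theta> t n) x $ 0 + realize_aux a (BB \<theta> t n) x $ 0 + realize_aux a (CC \<theta> t n) x $ 0"
      using AAp BBp CCp x by simp
    also have "\<dots> = realize_aux a (UU \<theta> n t) x $ 0" unfolding e using bp x sum3 by simp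
    finally show "U \<theta> n t x = realize_aux a (UU \<theta> n t) x $ 0" .
  qed
  show ?thesis unfolding Props_def using bp mn R unfolding e by simp
qed

lemma step_D:
  assumes th1: "\<theta>1 \<in> Theta" and t1: "t1 \<in> {0..T}" and th2: "\<theta>2 \<in> Theta" and t2: "t2 \<in> {0..T}"
    and n: "1 \<le> n" and IH: "\<forall>i<n. IHP i \<and> IHD i"
  shows "ann_D (UU \<theta>1 n t1) = ann_D (UU \<theta>2 n t2)"
proof -
  have IHP': "\<forall>i<n. IHP i" using IH by blast
  have w: "\<forall>q<length [AA \<theta> t n, BB \<theta> t n, CC \<theta> t n]. is_ANN ([AA \<theta> t n, BB \<theta> t n, CC \<theta> t n]!q)
      \<and> ann_I ([AA \<theta> t n, BB \<theta> t n, CC \<theta> t n]!q) = d \<and> ann_O ([AA \<theta> t n, BB \<theta> t n, CC \<theta> t n]!q) = 1"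
    if th: "\<theta> \<in> Theta" and t: "t \<in> {0..T}" for \<theta> t
  proof (rule three[where P = "\<lambda>X. is_ANN X \<and> ann_I X = d \<and> ann_O X = 1"])
    show "is_ANN (AA \<theta> t n) \<and> ann_I (AA \<theta> t n) = d \<and> ann_O (AA \<theta> t n) = 1" using AA_props[OF th t] by blast
    show "is_ANN (BB \<theta> t n) \<and> ann_I (BB \<theta> t n) = d \<and> ann_O (BB \<theta> t n) = 1" using BB_props[OF th t n IHP'] by blast
    show "is_ANN (CC \<theta> t n) \<and> ann_I (CC \<theta> t n) = d \<and> ann_O (CC \<theta> t n) = 1" using CC_props[OF th t n IHP'] by blast
  qed
  have "ann_D (ann_boxplus J [AA \<theta>1 t1 n, BB \<theta>1 t1 n, CC \<theta>1 t1 n]) = ann_D (ann_boxplus J [AA \<theta>2 t2 n, BB \<theta>2 t2 n, CC \<theta>2 t2 n])"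
  proof (rule JJ.bp_D_cong[OF _ w[OF th1 t1] w[OF th2 t2]])
    show "[AA \<theta>1 t1 n, BB \<theta>1 t1 n, CC \<theta>1 t1 n] \<noteq> []" by simp
    show "length [AA \<theta>2 t2 n, BB \<theta>2 t2 n, CC \<theta>2 t2 n] = length [AA \<theta>1 t1 n, BB \<theta>1 t1 n, CC \<theta>1 t1 n]" by simp
    show "\<forall>q<length [AA \<theta>1 t1 n, BB \<theta>1 t1 n, CC \<theta>1 t1 n].
       ann_D ([AA \<theta>1 t1 n, BB \<theta>1 t1 n, CC \<theta>1 t1 n] ! q) = ann_D ([AA \<theta>2 t2 n, BB \<theta>2 t2 n, CC \<theta>2 t2 n] ! q)"
      by (rule three2[where R = "\<lambda>X Y. ann_D X = ann_D Y"])
        (use AA_D[OF th1 t1 th2 t2] BB_D[OF th1 t1 th2 t2 n IH] CC_D[OF th1 t1 th2 t2 n IH] in auto)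
  qed
  then show ?thesis using UU_split[OF th1 n t1] UU_split[OF th2 n t2] by simp
qed

lemma base_props: "IHP 0 \<and> IHD 0"
proof -
  have d0: "0 < d" using d by simp
  have A: "is_ANN (ann_A (0\<^sub>m 1 d) (0\<^sub>v 1)) \<and> ann_I (ann_A (0\<^sub>m 1 d) (0\<^sub>v 1)) = d \<and> ann_O (ann_A (0\<^sub>m 1 d) (0\<^sub>v 1)) = 1
   \<and> length (ann_A (0\<^sub>m 1 d) (0\<^sub>v 1)) = 1 \<and> ann_D (ann_A (0\<^sub>m 1 d) (0\<^sub>v 1)) = [d, 1]
   \<and> (\<forall>x. realize_aux a (ann_A (0\<^sub>m 1 d) (0\<^sub>v (1::nat))) x = 0\<^sub>m 1 d *\<^sub>v x + 0\<^sub>v 1)"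
    using annA_props[of "0\<^sub>m 1 d" "0\<^sub>v 1" a] d0 by simp
  have P: "Props 0 \<theta> t" if th: "\<theta> \<in> Theta" and t: "t \<in> {0..T}" for \<theta> t
  proof -
    have e: "UU \<theta> 0 t = ann_A (0\<^sub>m 1 d) (0\<^sub>v 1)" using UU0 th t by blast
    have L: "1 \<le> Lb 0" unfolding Lb_def using dd by simp
    have mn: "maxnorm [d, 1] \<le> m0 * (3 * M) ^ 0" using d_m0 m0pos by (intro mn_le) auto
    have R: "U \<theta> 0 t x = realize_aux a (UU \<theta> 0 t) x $ 0" if x: "x \<in> carrier_vec d" for x
    proof -
      have "U \<theta> 0 t x = 0" using Urec th t x by (simp add: indN_def)
      moreover have "realize_aux a (UU \<theta> 0 t) x $ 0 = 0" unfolding e using A zero_mat_mult_vec[OF x, of 1] by simp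
      ultimately show ?thesis by simp
    qed
    show ?thesis unfolding Props_def e using A L mn R unfolding e by simp
  qed
  have D: "ann_D (UU \<theta>1 0 t1) = ann_D (UU \<theta>2 0 t2)" if "\<theta>1 \<in> Theta" "t1 \<in> {0..T}" "\<theta>2 \<in> Theta" "t2 \<in> {0..T}" for \<theta>1 t1 \<theta>2 t2
    using UU0 that by simp
  show ?thesis unfolding IHP_def IHD_def using P D by blast
qed

lemma all_props: "IHP n \<and> IHD n"
proof (induction n rule: less_induct)
  case (less n)
  show ?case
  proof (cases "n = 0")
    case True then show ?thesis using base_props by simp
  next
    case False
    then have n: "1 \<le> n" by simp
    have IH: "\<forall>i<n. IHP i \<and> IHD i" using less.IH by blast
    show ?thesis unfolding IHP_def IHD_def using step_props[OF _ _ n IH] step_D[OF _ _ _ _ n IH] by blast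
  qed
qed

end

context MT
begin

lemma final:
  "\<forall>\<theta> \<in> Theta. \<forall>\<theta>1 \<in> Theta. \<forall>\<theta>2 \<in> Theta. \<forall>n. \<forall>t \<in> {0..T}. \<forall>t1 \<in> {0..T}. \<forall>t2 \<in> {0..T}.
     \<forall>x \<in> carrier_vec d.
       ann_D (UU \<theta>1 n t1) = ann_D (UU \<theta>2 n t2)
     \<and> realization_in_C a (UU \<theta> n t) d 1
     \<and> ann_L (UU \<theta> n t) \<le> max dd (ann_L G) + n * ann_H F
     \<and> real (maxnorm (ann_D (UU \<theta> n t)))
         \<le> real (max dd (max (maxnorm (ann_D F)) (maxnorm (ann_D G)))) * (3 * real M) ^ n
     \<and> U \<theta> n t x = realize a (UU \<theta> n t) x $ 0
     \<and> real (ann_P (UU \<theta> n t))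
         \<le> 2 * real (max dd (ann_L G) + n * ann_H F)
           * real (max dd (max (maxnorm (ann_D F)) (maxnorm (ann_D G)))) ^ 2 * (3 * real M) ^ (2 * n)"
proof (intro ballI allI)
  fix \<theta> \<theta>1 \<theta>2 n t t1 t2 and x :: "real vec"
  assume th: "\<theta> \<in> Theta" and th1: "\<theta>1 \<in> Theta" and th2: "\<theta>2 \<in> Theta"
    and t: "t \<in> {0..T}" and t1: "t1 \<in> {0..T}" and t2: "t2 \<in> {0..T}" and x: "x \<in> carrier_vec d"
  have P: "Props n \<theta> t" using all_props th t unfolding IHP_def by blast
  have Dq: "ann_D (UU \<theta>1 n t1) = ann_D (UU \<theta>2 n t2)" using all_props th1 t1 th2 t2 unfolding IHD_def by blast
  have w: "is_ANN (UU \<theta> n t)" using UUann th t by blast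
  have I: "ann_I (UU \<theta> n t) = d" and O: "ann_O (UU \<theta> n t) = 1" and L: "length (UU \<theta> n t) \<le> Lb n"
    and mn: "maxnorm (ann_D (UU \<theta> n t)) \<le> m0 * (3 * M) ^ n"
    and R: "\<forall>x \<in> carrier_vec d. U \<theta> n t x = realize_aux a (UU \<theta> n t) x $ 0"
    using P unfolding Props_def by auto
  have C: "realization_in_C a (UU \<theta> n t) d 1"
    unfolding realization_in_C_def realize_def using realize_in_C[OF a w] I O by simp
  have L2: "ann_L (UU \<theta> n t) \<le> max dd (ann_L G) + n * ann_H F" using L unfolding ann_L_def Lb_def .
  have M2: "real (maxnorm (ann_D (UU \<theta> n t))) \<le> real m0 * (3 * real M) ^ n"
  proof -
    have "real (maxnorm (ann_D (UU \<theta> n t))) \<le> real (m0 * (3 * M) ^ n)" using mn by (simp only: of_nat_le_iff)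
    then show ?thesis by simp
  qed
  have Pb: "real (ann_P (UU \<theta> n t)) \<le> 2 * real (Lb n) * real m0 ^ 2 * (3 * real M) ^ (2 * n)"
  proof -
    have "ann_P (UU \<theta> n t) \<le> 2 * length (UU \<theta> n t) * (maxnorm (ann_D (UU \<theta> n t)))^2" by (rule P_bound[OF w])
    also have "\<dots> \<le> 2 * Lb n * (m0 * (3 * M) ^ n)^2"
      by (intro mult_le_mono mult_le_mono2 power_mono L mn) simp_all
    finally have "real (ann_P (UU \<theta> n t)) \<le> real (2 * Lb n * (m0 * (3 * M) ^ n)^2)" by (simp only: of_nat_le_iff)
    also have "real (2 * Lb n * (m0 * (3 * M) ^ n)^2) = 2 * real (Lb n) * real m0 ^ 2 * (3 * real M) ^ (2 * n)"
      by (simp add: power_mult_distrib power_mult[symmetric] mult.commute)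
    finally show ?thesis .
  qed
  show "ann_D (UU \<theta>1 n t1) = ann_D (UU \<theta>2 n t2)
     \<and> realization_in_C a (UU \<theta> n t) d 1
     \<and> ann_L (UU \<theta> n t) \<le> max dd (ann_L G) + n * ann_H F
     \<and> real (maxnorm (ann_D (UU \<theta> n t)))
         \<le> real (max dd (max (maxnorm (ann_D F)) (maxnorm (ann_D G)))) * (3 * real M) ^ n
     \<and> U \<theta> n t x = realize a (UU \<theta> n t) x $ 0
     \<and> real (ann_P (UU \<theta> n t))
         \<le> 2 * real (max dd (ann_L G) + n * ann_H F)
           * real (max dd (max (maxnorm (ann_D F)) (maxnorm (ann_D G)))) ^ 2 * (3 * real M) ^ (2 * n)"
    using Dq C L2 M2 Pb R x unfolding m0_def Lb_def realize_def by simp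
qed

end

theorem mainTheorem4:
  fixes d M \<dd> :: nat and T :: real and a :: "real \<Rightarrow> real"
    and \<J> F G :: ann
    and \<U> :: "int list \<Rightarrow> real \<Rightarrow> real"
    and W :: "int list \<Rightarrow> real \<Rightarrow> real vec"
    and U :: "int list \<Rightarrow> nat \<Rightarrow> real \<Rightarrow> real vec \<Rightarrow> real"
    and UU :: "int list \<Rightarrow> nat \<Rightarrow> real \<Rightarrow> ann"
  assumes d: "1 \<le> d" and M: "1 \<le> M" and dd: "1 \<le> \<dd>" and T: "0 < T"
    and a: "continuous_on UNIV a"
    and J: "is_ANN \<J>" "ann_D \<J> = [1, \<dd>, 1]" "\<forall>x \<in> carrier_vec 1. realize a \<J> x = x"
    and F: "is_ANN F" "realization_in_C a F 1 1"
    and G: "is_ANN G" "realization_in_C a G d 1"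
    and Ucal: "\<forall>\<theta> \<in> Theta. \<forall>t \<in> {0..T}. \<U> \<theta> t \<in> {0..T}"
    and Wdef: "\<forall>\<theta> \<in> Theta. \<forall>s \<in> {-T..T}. W \<theta> s \<in> carrier_vec d"
    and Urec: "\<forall>\<theta> \<in> Theta. \<forall>n. \<forall>t \<in> {0..T}. \<forall>x \<in> carrier_vec d.
        U \<theta> n t x =
          indN n / real M ^ n *
            (\<Sum>k = 1..M ^ n. realize a G (x + W (\<theta> @ [0, - int k]) (T - t)) $ 0)
          + (\<Sum>i<n. (T - t) / real M ^ (n - i) *
              (\<Sum>k = 1..M ^ (n - i).
                 realize a F (vec 1 (\<lambda>_. U (\<theta> @ [int i, int k]) i (\<U> (\<theta> @ [int i, int k]) t)
                    (x + W (\<theta> @ [int i, int k]) (\<U> (\<theta> @ [int i, int k]) t - t)))) $ 0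
                 - indN i *
                   realize a F (vec 1 (\<lambda>_. U (\<theta> @ [- int i, int k]) (max (i - 1) 0)
                    (\<U> (\<theta> @ [int i, int k]) t)
                    (x + W (\<theta> @ [int i, int k]) (\<U> (\<theta> @ [int i, int k]) t - t)))) $ 0))"
    and UUann: "\<forall>\<theta> \<in> Theta. \<forall>n. \<forall>t \<in> {0..T}. is_ANN (UU \<theta> n t)"
    and UU0: "\<forall>\<theta> \<in> Theta. \<forall>t \<in> {0..T}. UU \<theta> 0 t = ann_A (0\<^sub>m 1 d) (0\<^sub>v 1)"
    and UUrec: "\<forall>\<theta> \<in> Theta. \<forall>n \<ge> 1. \<forall>t \<in> {0..T}.
        UU \<theta> n t = ann_boxplus \<J>
          [ ann_sum (map (\<lambda>k. ann_scalar (1 / real M ^ n)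
                (ann_comp G (ann_A (1\<^sub>m d) (W (\<theta> @ [0, - int k]) (T - t)))))
              [1..<M ^ n + 1]),
            ann_boxplus \<J> (map (\<lambda>i. ann_scalar ((T - t) / real M ^ (n - i))
                (ann_boxplus \<J> (map (\<lambda>k.
                   ann_comp (ann_comp F (UU (\<theta> @ [int i, int k]) i (\<U> (\<theta> @ [int i, int k]) t)))
                     (ann_A (1\<^sub>m d) (W (\<theta> @ [int i, int k]) (\<U> (\<theta> @ [int i, int k]) t - t))))
                 [1..<M ^ (n - i) + 1])))
              [0..<n]),
            ann_boxplus \<J> (map (\<lambda>i. ann_scalar ((t - T) * indN i / real M ^ (n - i))
                (ann_boxplus \<J> (map (\<lambda>k.
                   ann_comp (ann_comp F (UU (\<theta> @ [- int i, int k]) (max (i - 1) 0)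
                               (\<U> (\<theta> @ [int i, int k]) t)))
                     (ann_A (1\<^sub>m d) (W (\<theta> @ [int i, int k]) (\<U> (\<theta> @ [int i, int k]) t - t))))
                 [1..<M ^ (n - i) + 1])))
              [0..<n]) ]"
  shows "\<forall>\<theta> \<in> Theta. \<forall>\<theta>1 \<in> Theta. \<forall>\<theta>2 \<in> Theta. \<forall>n. \<forall>t \<in> {0..T}. \<forall>t1 \<in> {0..T}. \<forall>t2 \<in> {0..T}.
     \<forall>x \<in> carrier_vec d.
       ann_D (UU \<theta>1 n t1) = ann_D (UU \<theta>2 n t2)
     \<and> realization_in_C a (UU \<theta> n t) d 1
     \<and> ann_L (UU \<theta> n t) \<le> max \<dd> (ann_L G) + n * ann_H F
     \<and> real (maxnorm (ann_D (UU \<theta> n t)))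
         \<le> real (max \<dd> (max (maxnorm (ann_D F)) (maxnorm (ann_D G)))) * (3 * real M) ^ n
     \<and> U \<theta> n t x = realize a (UU \<theta> n t) x $ 0
     \<and> real (ann_P (UU \<theta> n t))
         \<le> 2 * real (max \<dd> (ann_L G) + n * ann_H F)
           * real (max \<dd> (max (maxnorm (ann_D F)) (maxnorm (ann_D G)))) ^ 2 * (3 * real M) ^ (2 * n)"
proof -
  interpret MT d M \<dd> T a \<J> F G \<U> W U UU
    by (rule MT.intro[OF assms])
  show ?thesis by (rule final)
qed

end
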